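(* For every parsummable category $\mathcal C$, the tensor product $\otimes$ and the transformation $\tau$ described below are well-defined (independent of all choices) and make $\Sigma(\mathcal C)$ into a permutative category with unit the empty sequence $\epsilon$. If $F\colon\mathcal C\to\mathcal D$ is a morphism of parsummable categories, then $\Sigma(F)$ is a strict symmetric monoidal functor with respect to these permutative structures. In this way $\Sigma$ lifts to a functor $\mathbf{ParSumCat}\to\mathbf{PermCat}$.
   Context: Let $\omega=\{1,2,\dots\}$, $\mathbf m=\{1,\dots,m\}$, $\mathcal M$ the monoid of injections $\omega\to\omega$, $E\mathcal M$ the category with objects $\mathcal M$ and a unique morphism between any two objects. An $E\mathcal M$-category is a small category with a strict $E\mathcal M$-action; $u_*$ denotes the action of $u$, $[v,u]\colon u_*\Rightarrow v_*$ the natural isomorphism from the morphism $u\to v$. $X$ is supported on finite $A\subset\omega$ if $u_*X=X$ whenever $u$ fixes $A$ pointwise; $\mathrm{supp}(X)$ is the intersection of such finite $A$; tame means all objects finitely supported. A parsummable category is a tame $E\mathcal M$-category with an object $0$ of empty support and a functor $+$ on the full subcategory of disjointly supported pairs in $\mathcal C\times\mathcal C$, strictly unital, associative, commutative and $E\mathcal M$-equivariant; morphisms of parsummable categories ($\mathbf{ParSumCat}$) are strictly equivariant functors preserving $0$ and $+$. $\mathbf{PermCat}$ is the category of small permutative categories (symmetric monoidal categories with identity associativity and unit isomorphisms) and strict symmetric monoidal functors. For an injection $\phi\colon\mathbf m\times\omega\to\omega$, $\phi_*(X_1,\dots,X_m)=\sum_i\phi(i,-)_*(X_i)$ and $[\phi',\phi]_{X_\bullet}=\sum_i[\phi'(i,-),\phi(i,-)]_{X_i}$.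 $\Sigma(\mathcal C)$ is the category whose objects are finite sequences $(X_1,\dots,X_m)$, $m\ge0$, of objects of $\mathcal C$ (the empty one is $\epsilon$), whose morphisms $(X_1,\dots,X_m)\to(Y_1,\dots,Y_n)$ are classes $[\psi,f,\phi]$ of triples (injections $\phi\colon\mathbf m\times\omega\to\omega$, $\psi\colon\mathbf n\times\omega\to\omega$, $f\colon\phi_*(X_\bullet)\to\psi_*(Y_\bullet)$) modulo $(\psi,f,\phi)\sim(\psi',[\psi',\psi]\circ f\circ[\phi,\phi'],\phi')$, with composition $[\rho,g,\theta]\circ[\psi,f,\phi]=[\rho,g\circ[\theta,\psi]\circ f,\phi]$. For $F$ a morphism of parsummable categories, $\Sigma(F)$ applies $F$ entrywise on objects and sends $[\psi,f,\phi]$ to $[\psi,F f,\phi]$. Tensor product: on objects, concatenation of sequences; for morphisms $\alpha\colon X_\bullet\to Y_\bullet$, $\beta\colon X'_\bullet\to Y'_\bullet$ choose representatives $(\psi,f,\phi)$ of $\alpha$ and $(\rho,g,\theta)$ of $\beta$ with $\mathrm{im}\,\phi\cap\mathrm{im}\,\theta=\varnothing$, $\mathrm{im}\,\psi\cap\mathrm{im}\,\rho=\varnothing$, and set $\alpha\otimes\beta=[\psi+\rho,f+g,\phi+\theta]$, where $(\phi+\theta)(i,x)=\phi(i,x)$ for $i\le m$ and $\theta(i-m,x)$ otherwise ($m$ the length of $X_\bullet$), similarly for $\psi+\rho$. Symmetry: for $X_\bullet$ of length $m$ and $Y_\bullet$ of length $n$, $\tau_{X_\bullet,Y_\bullet}=[\bar\phi,\mathrm{id},\phi]\colon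 X_\bullet\otimes Y_\bullet\to Y_\bullet\otimes X_\bullet$ for any injection $\phi\colon(\mathbf{m+n})\times\omega\to\omega$, where $\bar\phi(i,x)=\phi(i+m,x)$ for $i\le n$ and $\phi(i-n,x)$ otherwise. *)

theory Defs
  imports Main "HOL-Library.Nat_Bijection"
begin

record ('o,'m) cat =
  ob  :: "'o set"
  ar  :: "'m set"
  dm  :: "'m \<Rightarrow> 'o"
  cd  :: "'m \<Rightarrow> 'o"
  idn :: "'o \<Rightarrow> 'm"
  cmp :: "'m \<Rightarrow> 'm \<Rightarrow> 'm"   (* cmp C g f = g \<circ> f *)

definition hom :: "('o,'m,'z) cat_scheme \<Rightarrow> 'o \<Rightarrow> 'o \<Rightarrow> 'm set" where
  "hom C X Y = {f \<in> ar C. dm C f = X \<and> cd C f = Y}"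

definition is_cat :: "('o,'m,'z) cat_scheme \<Rightarrow> bool" where
  "is_cat C \<longleftrightarrow>
     (\<forall>f\<in>ar C. dm C f \<in> ob C \<and> cd C f \<in> ob C) \<and>
     (\<forall>X\<in>ob C. idn C X \<in> hom C X X) \<and>
     (\<forall>f\<in>ar C. \<forall>g\<in>ar C. dm C g = cd C f \<longrightarrow> cmp C g f \<in> hom C (dm C f) (cd C g)) \<and>
     (\<forall>f\<in>ar C. cmp C f (idn C (dm C f)) = f \<and> cmp C (idn C (cd C f)) f = f) \<and>
     (\<forall>f\<in>ar C. \<forall>g\<in>ar C. \<forall>h\<in>ar C. dm C g = cd C f \<longrightarrow> dm C h = cd C g \<longrightarrow>
        cmp C h (cmp C g f) = cmp C (cmp C h g) f)"

definition is_functor ::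
  "('o,'m,'z) cat_scheme \<Rightarrow> ('p,'n,'y) cat_scheme \<Rightarrow> ('o \<Rightarrow> 'p) \<Rightarrow> ('m \<Rightarrow> 'n) \<Rightarrow> bool" where
  "is_functor C D Fo Fm \<longleftrightarrow>
     (\<forall>X\<in>ob C. Fo X \<in> ob D) \<and>
     (\<forall>f\<in>ar C. Fm f \<in> hom D (Fo (dm C f)) (Fo (cd C f))) \<and>
     (\<forall>X\<in>ob C. Fm (idn C X) = idn D (Fo X)) \<and>
     (\<forall>f\<in>ar C. \<forall>g\<in>ar C. dm C g = cd C f \<longrightarrow> Fm (cmp C g f) = cmp D (Fm g) (Fm f))"

text \<open>omega is modelled by the type nat (a relabelling of 1,2,...); M = injections nat \<Rightarrow> nat.\<close>

definition injs :: "(nat \<Rightarrow> nat) set" where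
  "injs = {u. inj u}"

record ('o,'m) psc = "('o,'m) cat" +
  act  :: "(nat \<Rightarrow> nat) \<Rightarrow> 'o \<Rightarrow> 'o"
  actm :: "(nat \<Rightarrow> nat) \<Rightarrow> 'm \<Rightarrow> 'm"
  trn  :: "(nat \<Rightarrow> nat) \<Rightarrow> (nat \<Rightarrow> nat) \<Rightarrow> 'o \<Rightarrow> 'm"   (* trn C v u X = [v,u]_X *)
  zer  :: "'o"
  pls  :: "'o \<Rightarrow> 'o \<Rightarrow> 'o"
  plsm :: "'m \<Rightarrow> 'm \<Rightarrow> 'm"

definition is_EMcat :: "('o,'m,'z) psc_scheme \<Rightarrow> bool" where
  "is_EMcat C \<longleftrightarrow> is_cat C \<and>
     (\<forall>u\<in>injs. is_functor C C (act C u) (actm C u)) \<and>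
     (\<forall>X\<in>ob C. act C id X = X) \<and> (\<forall>f\<in>ar C. actm C id f = f) \<and>
     (\<forall>u\<in>injs. \<forall>v\<in>injs. (\<forall>X\<in>ob C. act C (u \<circ> v) X = act C u (act C v X)) \<and>
                          (\<forall>f\<in>ar C. actm C (u \<circ> v) f = actm C u (actm C v f))) \<and>
     (\<forall>u\<in>injs. \<forall>v\<in>injs. \<forall>X\<in>ob C. trn C v u X \<in> hom C (act C u X) (act C v X)) \<and>
     (\<forall>u\<in>injs. \<forall>v\<in>injs. \<forall>f\<in>ar C.
        cmp C (trn C v u (cd C f)) (actm C u f) = cmp C (actm C v f) (trn C v u (dm C f))) \<and>
     (\<forall>u\<in>injs. \<forall>X\<in>ob C. trn C u u X = idn C (act C u X)) \<and>
     (\<forall>u\<in>injs. \<forall>v\<in>injs. \<forall>w\<in>injs. \<forall>X\<in>ob C.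
        cmp C (trn C w v X) (trn C v u X) = trn C w u X) \<and>
     (\<forall>u\<in>injs. \<forall>u'\<in>injs. \<forall>v\<in>injs. \<forall>v'\<in>injs. \<forall>X\<in>ob C.
        cmp C (trn C v' v (act C u' X)) (actm C v (trn C u' u X)) = trn C (v' \<circ> u') (v \<circ> u) X)"

definition supported_on :: "('o,'m,'z) psc_scheme \<Rightarrow> 'o \<Rightarrow> nat set \<Rightarrow> bool" where
  "supported_on C X A \<longleftrightarrow> (\<forall>u\<in>injs. (\<forall>a\<in>A. u a = a) \<longrightarrow> act C u X = X)"

definition supp :: "('o,'m,'z) psc_scheme \<Rightarrow> 'o \<Rightarrow> nat set" where
  "supp C X = \<Inter>{A. finite A \<and> supported_on C X A}"

definition tame :: "('o,'m,'z) psc_scheme \<Rightarrow> bool" where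
  "tame C \<longleftrightarrow> (\<forall>X\<in>ob C. \<exists>A. finite A \<and> supported_on C X A)"

definition dsj :: "('o,'m,'z) psc_scheme \<Rightarrow> 'o \<Rightarrow> 'o \<Rightarrow> bool" where
  "dsj C X Y \<longleftrightarrow> supp C X \<inter> supp C Y = {}"

definition dsjm :: "('o,'m,'z) psc_scheme \<Rightarrow> 'm \<Rightarrow> 'm \<Rightarrow> bool" where
  "dsjm C f g \<longleftrightarrow> dsj C (dm C f) (dm C g) \<and> dsj C (cd C f) (cd C g)"

definition is_parsum :: "('o,'m,'z) psc_scheme \<Rightarrow> bool" where
  "is_parsum C \<longleftrightarrow> is_EMcat C \<and> tame C \<and>
     zer C \<in> ob C \<and> supp C (zer C) = {} \<and>
     \<comment> \<open>+ is a functor on the full subcategory of disjointly supported pairs\<close>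
     (\<forall>X\<in>ob C. \<forall>Y\<in>ob C. dsj C X Y \<longrightarrow> pls C X Y \<in> ob C) \<and>
     (\<forall>f\<in>ar C. \<forall>g\<in>ar C. dsjm C f g \<longrightarrow>
        plsm C f g \<in> hom C (pls C (dm C f) (dm C g)) (pls C (cd C f) (cd C g))) \<and>
     (\<forall>X\<in>ob C. \<forall>Y\<in>ob C. dsj C X Y \<longrightarrow> plsm C (idn C X) (idn C Y) = idn C (pls C X Y)) \<and>
     (\<forall>f\<in>ar C. \<forall>g\<in>ar C. \<forall>f'\<in>ar C. \<forall>g'\<in>ar C.
        dm C f' = cd C f \<longrightarrow> dm C g' = cd C g \<longrightarrow> dsjm C f g \<longrightarrow> dsjm C f' g' \<longrightarrow>
        plsm C (cmp C f' f) (cmp C g' g) = cmp C (plsm C f' g') (plsm C f g)) \<and>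
     \<comment> \<open>strictly unital\<close>
     (\<forall>X\<in>ob C. pls C X (zer C) = X \<and> pls C (zer C) X = X) \<and>
     (\<forall>f\<in>ar C. plsm C f (idn C (zer C)) = f \<and> plsm C (idn C (zer C)) f = f) \<and>
     \<comment> \<open>associative\<close>
     (\<forall>X\<in>ob C. \<forall>Y\<in>ob C. \<forall>Z\<in>ob C. dsj C X Y \<longrightarrow> dsj C X Z \<longrightarrow> dsj C Y Z \<longrightarrow>
        pls C (pls C X Y) Z = pls C X (pls C Y Z)) \<and>
     (\<forall>f\<in>ar C. \<forall>g\<in>ar C. \<forall>h\<in>ar C. dsjm C f g \<longrightarrow> dsjm C f h \<longrightarrow> dsjm C g h \<longrightarrow>
        plsm C (plsm C f g) h = plsm C f (plsm C g h)) \<and>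
     \<comment> \<open>commutative\<close>
     (\<forall>X\<in>ob C. \<forall>Y\<in>ob C. dsj C X Y \<longrightarrow> pls C X Y = pls C Y X) \<and>
     (\<forall>f\<in>ar C. \<forall>g\<in>ar C. dsjm C f g \<longrightarrow> plsm C f g = plsm C g f) \<and>
     \<comment> \<open>EM-equivariant\<close>
     (\<forall>u\<in>injs. \<forall>X\<in>ob C. \<forall>Y\<in>ob C. dsj C X Y \<longrightarrow>
        act C u (pls C X Y) = pls C (act C u X) (act C u Y)) \<and>
     (\<forall>u\<in>injs. \<forall>f\<in>ar C. \<forall>g\<in>ar C. dsjm C f g \<longrightarrow>
        actm C u (plsm C f g) = plsm C (actm C u f) (actm C u g)) \<and>
     (\<forall>u\<in>injs. \<forall>v\<in>injs. \<forall>X\<in>ob C. \<forall>Y\<in>ob C. dsj C X Y \<longrightarrow>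
        trn C v u (pls C X Y) = plsm C (trn C v u X) (trn C v u Y))"

definition is_psmor ::
  "('o,'m,'z) psc_scheme \<Rightarrow> ('p,'n,'y) psc_scheme \<Rightarrow> ('o \<Rightarrow> 'p) \<Rightarrow> ('m \<Rightarrow> 'n) \<Rightarrow> bool" where
  "is_psmor C D Fo Fm \<longleftrightarrow> is_functor C D Fo Fm \<and>
     (\<forall>u\<in>injs. \<forall>X\<in>ob C. Fo (act C u X) = act D u (Fo X)) \<and>
     (\<forall>u\<in>injs. \<forall>f\<in>ar C. Fm (actm C u f) = actm D u (Fm f)) \<and>
     (\<forall>u\<in>injs. \<forall>v\<in>injs. \<forall>X\<in>ob C. Fm (trn C v u X) = trn D v u (Fo X)) \<and>
     Fo (zer C) = zer D \<and>
     (\<forall>X\<in>ob C. \<forall>Y\<in>ob C. dsj C X Y \<longrightarrow> Fo (pls C X Y) = pls D (Fo X) (Fo Y)) \<and>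
     (\<forall>f\<in>ar C. \<forall>g\<in>ar C. dsjm C f g \<longrightarrow> Fm (plsm C f g) = plsm D (Fm f) (Fm g))"

definition is_permutative ::
  "('o,'m,'z) cat_scheme \<Rightarrow> ('o \<Rightarrow> 'o \<Rightarrow> 'o) \<Rightarrow> ('m \<Rightarrow> 'm \<Rightarrow> 'm) \<Rightarrow> 'o \<Rightarrow> ('o \<Rightarrow> 'o \<Rightarrow> 'm) \<Rightarrow> bool" where
  "is_permutative C tob tar U S \<longleftrightarrow> is_cat C \<and>
     (\<forall>X\<in>ob C. \<forall>Y\<in>ob C. tob X Y \<in> ob C) \<and>
     (\<forall>f\<in>ar C. \<forall>g\<in>ar C. tar f g \<in> hom C (tob (dm C f) (dm C g)) (tob (cd C f) (cd C g))) \<and>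
     (\<forall>X\<in>ob C. \<forall>Y\<in>ob C. tar (idn C X) (idn C Y) = idn C (tob X Y)) \<and>
     (\<forall>f\<in>ar C. \<forall>g\<in>ar C. \<forall>f'\<in>ar C. \<forall>g'\<in>ar C. dm C f' = cd C f \<longrightarrow> dm C g' = cd C g \<longrightarrow>
        tar (cmp C f' f) (cmp C g' g) = cmp C (tar f' g') (tar f g)) \<and>
     U \<in> ob C \<and>
     (\<forall>X\<in>ob C. tob U X = X \<and> tob X U = X) \<and>
     (\<forall>f\<in>ar C. tar (idn C U) f = f \<and> tar f (idn C U) = f) \<and>
     (\<forall>X\<in>ob C. \<forall>Y\<in>ob C. \<forall>Z\<in>ob C. tob (tob X Y) Z = tob X (tob Y Z)) \<and>
     (\<forall>f\<in>ar C. \<forall>g\<in>ar C. \<forall>h\<in>ar C. tar (tar f g) h = tar f (tar g h)) \<and>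
     (\<forall>X\<in>ob C. \<forall>Y\<in>ob C. S X Y \<in> hom C (tob X Y) (tob Y X)) \<and>
     (\<forall>f\<in>ar C. \<forall>g\<in>ar C.
        cmp C (S (cd C f) (cd C g)) (tar f g) = cmp C (tar g f) (S (dm C f) (dm C g))) \<and>
     (\<forall>X\<in>ob C. \<forall>Y\<in>ob C. cmp C (S Y X) (S X Y) = idn C (tob X Y)) \<and>
     (\<forall>X\<in>ob C. \<forall>Y\<in>ob C. \<forall>Z\<in>ob C.
        S X (tob Y Z) = cmp C (tar (idn C Y) (S X Z)) (tar (S X Y) (idn C Z))) \<and>
     (\<forall>X\<in>ob C. S X U = idn C X)"

definition is_strict_sym_monoidal ::
  "('o,'m,'z) cat_scheme \<Rightarrow> ('o \<Rightarrow> 'o \<Rightarrow> 'o) \<Rightarrow> ('m \<Rightarrow> 'm \<Rightarrow> 'm) \<Rightarrow> 'o \<Rightarrow> ('o \<Rightarrow> 'o \<Rightarrow> 'm) \<Rightarrow>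
   ('p,'n,'y) cat_scheme \<Rightarrow> ('p \<Rightarrow> 'p \<Rightarrow> 'p) \<Rightarrow> ('n \<Rightarrow> 'n \<Rightarrow> 'n) \<Rightarrow> 'p \<Rightarrow> ('p \<Rightarrow> 'p \<Rightarrow> 'n) \<Rightarrow>
   ('o \<Rightarrow> 'p) \<Rightarrow> ('m \<Rightarrow> 'n) \<Rightarrow> bool" where
  "is_strict_sym_monoidal C tob tar U S D tob' tar' U' S' Fo Fm \<longleftrightarrow>
     is_functor C D Fo Fm \<and>
     (\<forall>X\<in>ob C. \<forall>Y\<in>ob C. Fo (tob X Y) = tob' (Fo X) (Fo Y)) \<and>
     (\<forall>f\<in>ar C. \<forall>g\<in>ar C. Fm (tar f g) = tar' (Fm f) (Fm g)) \<and>
     Fo U = U' \<and>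
     (\<forall>X\<in>ob C. \<forall>Y\<in>ob C. Fm (S X Y) = S' (Fo X) (Fo Y))"

text \<open>Sequences are lists, indexed from 0; an injection phi : m x omega \<rightarrow> omega is a
  function nat \<Rightarrow> nat \<Rightarrow> nat injective on {..<m} x UNIV.\<close>

type_synonym ('m) triple = "(nat \<Rightarrow> nat \<Rightarrow> nat) \<times> 'm \<times> (nat \<Rightarrow> nat \<Rightarrow> nat)"
type_synonym ('o,'m) sarr = "'o list \<times> 'o list \<times> 'm triple set"

definition injm :: "nat \<Rightarrow> (nat \<Rightarrow> nat \<Rightarrow> nat) \<Rightarrow> bool" where
  "injm m \<phi> \<longleftrightarrow> inj_on (\<lambda>(i,x). \<phi> i x) ({..<m} \<times> UNIV)"

definition imm :: "nat \<Rightarrow> (nat \<Rightarrow> nat \<Rightarrow> nat) \<Rightarrow> nat set" where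
  "imm m \<phi> = (\<lambda>(i,x). \<phi> i x) ` ({..<m} \<times> UNIV)"

definition push :: "('o,'m,'z) psc_scheme \<Rightarrow> (nat \<Rightarrow> nat \<Rightarrow> nat) \<Rightarrow> 'o list \<Rightarrow> 'o" where
  "push C \<phi> Xs = foldr (\<lambda>i acc. pls C (act C (\<phi> i) (Xs ! i)) acc) [0..<length Xs] (zer C)"

definition pushm :: "('o,'m,'z) psc_scheme \<Rightarrow> (nat \<Rightarrow> nat \<Rightarrow> nat) \<Rightarrow> (nat \<Rightarrow> nat \<Rightarrow> nat) \<Rightarrow> 'o list \<Rightarrow> 'm" where
  "pushm C \<phi>' \<phi> Xs =
     foldr (\<lambda>i acc. plsm C (trn C (\<phi>' i) (\<phi> i) (Xs ! i)) acc) [0..<length Xs] (idn C (zer C))"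

definition valid :: "('o,'m,'z) psc_scheme \<Rightarrow> 'o list \<Rightarrow> 'o list \<Rightarrow> 'm triple \<Rightarrow> bool" where
  "valid C Xs Ys t = (case t of (\<psi>, f, \<phi>) \<Rightarrow>
     injm (length Xs) \<phi> \<and> injm (length Ys) \<psi> \<and> f \<in> hom C (push C \<phi> Xs) (push C \<psi> Ys))"

definition srel :: "('o,'m,'z) psc_scheme \<Rightarrow> 'o list \<Rightarrow> 'o list \<Rightarrow> 'm triple \<Rightarrow> 'm triple \<Rightarrow> bool" where
  "srel C Xs Ys t t' = (case t of (\<psi>, f, \<phi>) \<Rightarrow> case t' of (\<psi>', f', \<phi>') \<Rightarrow>
     f' = cmp C (pushm C \<psi>' \<psi> Ys) (cmp C f (pushm C \<phi> \<phi>' Xs)))"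

definition cls :: "('o,'m,'z) psc_scheme \<Rightarrow> 'o list \<Rightarrow> 'o list \<Rightarrow> 'm triple \<Rightarrow> 'm triple set" where
  "cls C Xs Ys t = {t'. valid C Xs Ys t' \<and> srel C Xs Ys t t'}"

definition rep :: "('o,'m) sarr \<Rightarrow> 'm triple" where
  "rep a = (SOME t. t \<in> snd (snd a))"

definition phi0 :: "nat \<Rightarrow> nat \<Rightarrow> nat" where
  "phi0 i x = prod_encode (i, x)"

definition sigma_cat :: "('o,'m,'z) psc_scheme \<Rightarrow> ('o list, ('o,'m) sarr) cat" where
  "sigma_cat C = \<lparr>
     ob = lists (ob C),
     ar = {(Xs, Ys, cls C Xs Ys t) | Xs Ys t.
             Xs \<in> lists (ob C) \<and> Ys \<in> lists (ob C) \<and> valid C Xs Ys t},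
     dm = (\<lambda>a. fst a),
     cd = (\<lambda>a. fst (snd a)),
     idn = (\<lambda>Xs. (Xs, Xs, cls C Xs Xs (phi0, idn C (push C phi0 Xs), phi0))),
     cmp = (\<lambda>b a. case rep b of (\<rho>, g, \<theta>) \<Rightarrow> case rep a of (\<psi>, f, \<phi>) \<Rightarrow>
              (fst a, fst (snd b),
               cls C (fst a) (fst (snd b))
                 (\<rho>, cmp C g (cmp C (pushm C \<theta> \<psi> (fst (snd a))) f), \<phi>))) \<rparr>"

definition psum :: "nat \<Rightarrow> (nat \<Rightarrow> nat \<Rightarrow> nat) \<Rightarrow> (nat \<Rightarrow> nat \<Rightarrow> nat) \<Rightarrow> nat \<Rightarrow> nat \<Rightarrow> nat" where
  "psum m \<phi> \<theta> = (\<lambda>i x. if i < m then \<phi> i x else \<theta> (i - m) x)"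

definition tens_reps :: "('o,'m) sarr \<Rightarrow> ('o,'m) sarr \<Rightarrow> ('m triple \<times> 'm triple) set" where
  "tens_reps a b = {(t, s). t \<in> snd (snd a) \<and> s \<in> snd (snd b) \<and>
     (case t of (\<psi>, f, \<phi>) \<Rightarrow> case s of (\<rho>, g, \<theta>) \<Rightarrow>
        imm (length (fst a)) \<phi> \<inter> imm (length (fst b)) \<theta> = {} \<and>
        imm (length (fst (snd a))) \<psi> \<inter> imm (length (fst (snd b))) \<rho> = {})}"

definition tens_of :: "('o,'m,'z) psc_scheme \<Rightarrow> ('o,'m) sarr \<Rightarrow> ('o,'m) sarr \<Rightarrow>
    'm triple \<times> 'm triple \<Rightarrow> ('o,'m) sarr" where
  "tens_of C a b p = (case p of ((\<psi>, f, \<phi>), (\<rho>, g, \<theta>)) \<Rightarrow>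
     (fst a @ fst b, fst (snd a) @ fst (snd b),
      cls C (fst a @ fst b) (fst (snd a) @ fst (snd b))
        (psum (length (fst (snd a))) \<psi> \<rho>, plsm C f g, psum (length (fst a)) \<phi> \<theta>)))"

definition sigma_tens :: "('o,'m,'z) psc_scheme \<Rightarrow> ('o,'m) sarr \<Rightarrow> ('o,'m) sarr \<Rightarrow> ('o,'m) sarr" where
  "sigma_tens C a b = tens_of C a b (SOME p. p \<in> tens_reps a b)"

definition phibar :: "nat \<Rightarrow> nat \<Rightarrow> (nat \<Rightarrow> nat \<Rightarrow> nat) \<Rightarrow> nat \<Rightarrow> nat \<Rightarrow> nat" where
  "phibar m n \<phi> = (\<lambda>i x. if i < n then \<phi> (i + m) x else \<phi> (i - n) x)"

definition tau_of :: "('o,'m,'z) psc_scheme \<Rightarrow> 'o list \<Rightarrow> 'o list \<Rightarrow> (nat \<Rightarrow> nat \<Rightarrow> nat) \<Rightarrow> ('o,'m) sarr" where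
  "tau_of C Xs Ys \<phi> =
     (Xs @ Ys, Ys @ Xs,
      cls C (Xs @ Ys) (Ys @ Xs) (phibar (length Xs) (length Ys) \<phi>, idn C (push C \<phi> (Xs @ Ys)), \<phi>))"

definition sigma_tau :: "('o,'m,'z) psc_scheme \<Rightarrow> 'o list \<Rightarrow> 'o list \<Rightarrow> ('o,'m) sarr" where
  "sigma_tau C Xs Ys = tau_of C Xs Ys phi0"

definition sigma_fun :: "('p,'n,'y) psc_scheme \<Rightarrow> ('o \<Rightarrow> 'p) \<Rightarrow> ('m \<Rightarrow> 'n) \<Rightarrow> ('o,'m) sarr \<Rightarrow> ('p,'n) sarr" where
  "sigma_fun D Fo Fm a = (case rep a of (\<psi>, f, \<phi>) \<Rightarrow>
     (map Fo (fst a), map Fo (fst (snd a)),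
      cls D (map Fo (fst a)) (map Fo (fst (snd a))) (\<psi>, Fm f, \<phi>)))"

end

theory Submission
  imports Defs "HOL-Library.Infinite_Set"
begin

lemma bij_extend:
  fixes A :: "nat set" and u :: "nat \<Rightarrow> nat"
  assumes "finite A" "inj_on u A"
  shows "\<exists>s. bij s \<and> (\<forall>a\<in>A. s a = u a)"
proof -
  have iA: "infinite (- A)" using assms(1) infinite_UNIV_nat by (simp add: Compl_eq_Diff_UNIV Diff_infinite_finite)
  have iB: "infinite (- (u ` A))" using assms(1) infinite_UNIV_nat by (simp add: Compl_eq_Diff_UNIV Diff_infinite_finite)
  have eA: "bij_betw (Infinite_Set.enumerate (- A)) UNIV (- A)" using iA by (rule bij_enumerate)
  have eB: "bij_betw (Infinite_Set.enumerate (- (u ` A))) UNIV (- (u ` A))" using iB by (rule bij_enumerate)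
  define g where "g = Infinite_Set.enumerate (- (u ` A)) \<circ> the_inv_into UNIV (Infinite_Set.enumerate (- A))"
  have gb: "bij_betw g (- A) (- (u ` A))" unfolding g_def
    using bij_betw_trans[OF bij_betw_the_inv_into[OF eA] eB] .
  define s where "s x = (if x \<in> A then u x else g x)" for x
  have s1: "bij_betw s A (u ` A)"
    using assms(2) by (simp add: bij_betw_def inj_on_def s_def)
  have s2: "bij_betw s (- A) (- (u ` A))"
    using gb by (rule bij_betw_cong[THEN iffD1, rotated]) (simp add: s_def)
  have "bij_betw s (A \<union> - A) (u ` A \<union> - (u ` A))"
    by (rule bij_betw_combine[OF s1 s2]) auto
  then have "bij s" by simp
  moreover have "\<forall>a\<in>A. s a = u a" by (simp add: s_def)
  ultimately show ?thesis by blast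
qed

locale ps =
  fixes C :: "('o,'m,'z) psc_scheme"
  assumes P: "is_parsum C"
begin

lemmas Pc = P[unfolded is_parsum_def]
lemmas p1 = Pc[THEN conjunct1]
lemmas p2 = Pc[THEN conjunct2, THEN conjunct1]
lemmas p3 = Pc[THEN conjunct2, THEN conjunct2, THEN conjunct1]
lemmas p4 = Pc[THEN conjunct2, THEN conjunct2, THEN conjunct2, THEN conjunct1]
lemmas p5 = Pc[THEN conjunct2, THEN conjunct2, THEN conjunct2, THEN conjunct2, THEN conjunct1]
lemmas p6 = Pc[THEN conjunct2, THEN conjunct2, THEN conjunct2, THEN conjunct2, THEN conjunct2, THEN conjunct1]
lemmas p7 = Pc[THEN conjunct2, THEN conjunct2, THEN conjunct2, THEN conjunct2, THEN conjunct2, THEN conjunct2, THEN conjunct1]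
lemmas p8 = Pc[THEN conjunct2, THEN conjunct2, THEN conjunct2, THEN conjunct2, THEN conjunct2, THEN conjunct2, THEN conjunct2, THEN conjunct1]
lemmas p9 = Pc[THEN conjunct2, THEN conjunct2, THEN conjunct2, THEN conjunct2, THEN conjunct2, THEN conjunct2, THEN conjunct2, THEN conjunct2, THEN conjunct1]
lemmas p10 = Pc[THEN conjunct2, THEN conjunct2, THEN conjunct2, THEN conjunct2, THEN conjunct2, THEN conjunct2, THEN conjunct2, THEN conjunct2, THEN conjunct2, THEN conjunct1]
lemmas p11 = Pc[THEN conjunct2, THEN conjunct2, THEN conjunct2, THEN conjunct2, THEN conjunct2, THEN conjunct2, THEN conjunct2, THEN conjunct2, THEN conjunct2, THEN conjunct2, THEN conjunct1]
lemmas p12 = Pc[THEN conjunct2, THEN conjunct2, THEN conjunct2, THEN conjunct2, THEN conjunct2, THEN conjunct2, THEN conjunct2, THEN conjunct2, THEN conjunct2, THEN conjunct2, THEN conjunct2, THEN conjunct1]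
lemmas p13 = Pc[THEN conjunct2, THEN conjunct2, THEN conjunct2, THEN conjunct2, THEN conjunct2, THEN conjunct2, THEN conjunct2, THEN conjunct2, THEN conjunct2, THEN conjunct2, THEN conjunct2, THEN conjunct2, THEN conjunct1]
lemmas p14 = Pc[THEN conjunct2, THEN conjunct2, THEN conjunct2, THEN conjunct2, THEN conjunct2, THEN conjunct2, THEN conjunct2, THEN conjunct2, THEN conjunct2, THEN conjunct2, THEN conjunct2, THEN conjunct2, THEN conjunct2, THEN conjunct1]
lemmas p15 = Pc[THEN conjunct2, THEN conjunct2, THEN conjunct2, THEN conjunct2, THEN conjunct2, THEN conjunct2, THEN conjunct2, THEN conjunct2, THEN conjunct2, THEN conjunct2, THEN conjunct2, THEN conjunct2, THEN conjunct2, THEN conjunct2, THEN conjunct1]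
lemmas p16 = Pc[THEN conjunct2, THEN conjunct2, THEN conjunct2, THEN conjunct2, THEN conjunct2, THEN conjunct2, THEN conjunct2, THEN conjunct2, THEN conjunct2, THEN conjunct2, THEN conjunct2, THEN conjunct2, THEN conjunct2, THEN conjunct2, THEN conjunct2, THEN conjunct1]
lemmas p17 = Pc[THEN conjunct2, THEN conjunct2, THEN conjunct2, THEN conjunct2, THEN conjunct2, THEN conjunct2, THEN conjunct2, THEN conjunct2, THEN conjunct2, THEN conjunct2, THEN conjunct2, THEN conjunct2, THEN conjunct2, THEN conjunct2, THEN conjunct2, THEN conjunct2]
lemmas Ec = p1[unfolded is_EMcat_def]
lemmas e1 = Ec[THEN conjunct1]
lemmas e2 = Ec[THEN conjunct2, THEN conjunct1]
lemmas e3 = Ec[THEN conjunct2, THEN conjunct2, THEN conjunct1]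
lemmas e4 = Ec[THEN conjunct2, THEN conjunct2, THEN conjunct2, THEN conjunct1]
lemmas e5 = Ec[THEN conjunct2, THEN conjunct2, THEN conjunct2, THEN conjunct2, THEN conjunct1]
lemmas e6 = Ec[THEN conjunct2, THEN conjunct2, THEN conjunct2, THEN conjunct2, THEN conjunct2, THEN conjunct1]
lemmas e7 = Ec[THEN conjunct2, THEN conjunct2, THEN conjunct2, THEN conjunct2, THEN conjunct2, THEN conjunct2, THEN conjunct1]
lemmas e8 = Ec[THEN conjunct2, THEN conjunct2, THEN conjunct2, THEN conjunct2, THEN conjunct2, THEN conjunct2, THEN conjunct2, THEN conjunct1]
lemmas e9 = Ec[THEN conjunct2, THEN conjunct2, THEN conjunct2, THEN conjunct2, THEN conjunct2, THEN conjunct2, THEN conjunct2, THEN conjunct2, THEN conjunct1]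
lemmas e10 = Ec[THEN conjunct2, THEN conjunct2, THEN conjunct2, THEN conjunct2, THEN conjunct2, THEN conjunct2, THEN conjunct2, THEN conjunct2, THEN conjunct2]
lemmas Cc = e1[unfolded is_cat_def]
lemmas c1 = Cc[THEN conjunct1]
lemmas c2 = Cc[THEN conjunct2, THEN conjunct1]
lemmas c3 = Cc[THEN conjunct2, THEN conjunct2, THEN conjunct1]
lemmas c4 = Cc[THEN conjunct2, THEN conjunct2, THEN conjunct2, THEN conjunct1]
lemmas c5 = Cc[THEN conjunct2, THEN conjunct2, THEN conjunct2, THEN conjunct2]

lemma cat: "is_cat C" by (rule e1)

lemma hom_iff: "f \<in> hom C X Y \<longleftrightarrow> f \<in> ar C \<and> dm C f = X \<and> cd C f = Y"
  by (simp add: hom_def)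

lemma hom_ob: "f \<in> hom C X Y \<Longrightarrow> X \<in> ob C \<and> Y \<in> ob C"
  using c1 unfolding hom_def by blast

lemma idn_hom: "X \<in> ob C \<Longrightarrow> idn C X \<in> hom C X X"
  using c2 by blast

lemma cmp_hom: "f \<in> hom C X Y \<Longrightarrow> g \<in> hom C Y Z \<Longrightarrow> cmp C g f \<in> hom C X Z"
  using c3 unfolding hom_def by blast

lemma idl: "f \<in> hom C X Y \<Longrightarrow> cmp C (idn C Y) f = f"
  using c4 unfolding hom_def by blast

lemma idr: "f \<in> hom C X Y \<Longrightarrow> cmp C f (idn C X) = f"
  using c4 unfolding hom_def by blast

lemma assoc: "f \<in> hom C X Y \<Longrightarrow> g \<in> hom C Y Z \<Longrightarrow> h \<in> hom C Z W \<Longrightarrow>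
   cmp C h (cmp C g f) = cmp C (cmp C h g) f"
  using c5 unfolding hom_def by blast

lemma act_ob: "inj u \<Longrightarrow> X \<in> ob C \<Longrightarrow> act C u X \<in> ob C"
  using e2 unfolding is_functor_def injs_def by blast

lemma act_comp: "inj u \<Longrightarrow> inj v \<Longrightarrow> X \<in> ob C \<Longrightarrow> act C (u \<circ> v) X = act C u (act C v X)"
  using e5 unfolding injs_def by blast

lemma trn_hom: "inj u \<Longrightarrow> inj v \<Longrightarrow> X \<in> ob C \<Longrightarrow> trn C v u X \<in> hom C (act C u X) (act C v X)"
  using e6 unfolding injs_def by blast

lemma trn_id: "inj u \<Longrightarrow> X \<in> ob C \<Longrightarrow> trn C u u X = idn C (act C u X)"
  using e8 unfolding injs_def by blast

lemma trn_comp: "inj u \<Longrightarrow> inj v \<Longrightarrow> inj w \<Longrightarrow> X \<in> ob C \<Longrightarrow>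
    cmp C (trn C w v X) (trn C v u X) = trn C w u X"
  using e9 unfolding injs_def by blast

lemma tame: "X \<in> ob C \<Longrightarrow> \<exists>A. finite A \<and> supported_on C X A"
  using p2 unfolding tame_def by blast

lemma zer_ob: "zer C \<in> ob C" by (rule p3)
lemma supp_zer: "supp C (zer C) = {}" by (rule p4)

lemma pls_ob: "X \<in> ob C \<Longrightarrow> Y \<in> ob C \<Longrightarrow> dsj C X Y \<Longrightarrow> pls C X Y \<in> ob C"
  using p5 by blast

lemma plsm_hom: "f \<in> hom C X Y \<Longrightarrow> g \<in> hom C X' Y' \<Longrightarrow> dsj C X X' \<Longrightarrow> dsj C Y Y' \<Longrightarrow>
   plsm C f g \<in> hom C (pls C X X') (pls C Y Y')"
  using p6 unfolding dsjm_def hom_def by blast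

lemma plsm_idn: "X \<in> ob C \<Longrightarrow> Y \<in> ob C \<Longrightarrow> dsj C X Y \<Longrightarrow> plsm C (idn C X) (idn C Y) = idn C (pls C X Y)"
  using p7 by blast

lemma interchange:
  assumes "f \<in> hom C X Y" "f' \<in> hom C Y Z" "g \<in> hom C X' Y'" "g' \<in> hom C Y' Z'"
    "dsj C X X'" "dsj C Y Y'" "dsj C Z Z'"
  shows "plsm C (cmp C f' f) (cmp C g' g) = cmp C (plsm C f' g') (plsm C f g)"
  using p8 assms unfolding hom_def dsjm_def by auto

lemma pls_zer: "X \<in> ob C \<Longrightarrow> pls C X (zer C) = X" "X \<in> ob C \<Longrightarrow> pls C (zer C) X = X"
  using p9 by blast+

lemma plsm_zer: "f \<in> ar C \<Longrightarrow> plsm C f (idn C (zer C)) = f" "f \<in> ar C \<Longrightarrow> plsm C (idn C (zer C)) f = f"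
  using p10 by blast+

lemma pls_assoc: "X \<in> ob C \<Longrightarrow> Y \<in> ob C \<Longrightarrow> Z \<in> ob C \<Longrightarrow> dsj C X Y \<Longrightarrow> dsj C X Z \<Longrightarrow> dsj C Y Z \<Longrightarrow>
        pls C (pls C X Y) Z = pls C X (pls C Y Z)"
  using p11 by blast

lemma plsm_assoc: "f \<in> hom C X Y \<Longrightarrow> g \<in> hom C X' Y' \<Longrightarrow> h \<in> hom C X'' Y'' \<Longrightarrow>
   dsj C X X' \<Longrightarrow> dsj C Y Y' \<Longrightarrow> dsj C X X'' \<Longrightarrow> dsj C Y Y'' \<Longrightarrow> dsj C X' X'' \<Longrightarrow> dsj C Y' Y'' \<Longrightarrow>
        plsm C (plsm C f g) h = plsm C f (plsm C g h)"
  using p12 unfolding hom_def dsjm_def by blast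

lemma pls_comm: "X \<in> ob C \<Longrightarrow> Y \<in> ob C \<Longrightarrow> dsj C X Y \<Longrightarrow> pls C X Y = pls C Y X"
  using p13 by blast

lemma plsm_comm: "f \<in> hom C X Y \<Longrightarrow> g \<in> hom C X' Y' \<Longrightarrow> dsj C X X' \<Longrightarrow> dsj C Y Y' \<Longrightarrow>
        plsm C f g = plsm C g f"
  using p14 unfolding hom_def dsjm_def by blast

lemma act_pls: "inj u \<Longrightarrow> X \<in> ob C \<Longrightarrow> Y \<in> ob C \<Longrightarrow> dsj C X Y \<Longrightarrow>
        act C u (pls C X Y) = pls C (act C u X) (act C u Y)"
  using p15 unfolding injs_def by blast

lemma dsj_sym: "dsj C X Y \<Longrightarrow> dsj C Y X" by (auto simp: dsj_def)

subsection \<open>Supports\<close>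

lemma supp_le: "finite A \<Longrightarrow> supported_on C X A \<Longrightarrow> supp C X \<subseteq> A"
  unfolding supp_def by blast

lemma act_agree:
  assumes X: "X \<in> ob C" and A: "finite A" "supported_on C X A" and u: "inj u" and w: "inj w"
    and ag: "\<forall>a\<in>A. u a = w a"
  shows "act C u X = act C w X"
proof -
  have key: "act C v X = act C s X" if v: "inj v" and s: "bij s" and vs: "\<forall>a\<in>A. s a = v a" for v s
  proof -
    define v' where "v' = inv s \<circ> v"
    have iv: "inj v'" unfolding v'_def using v s by (simp add: inj_compose bij_imp_bij_inv bij_is_inj)
    have fx0: "\<forall>a\<in>A. v' a = a" unfolding v'_def using vs s
      by (metis bij_inv_eq_iff comp_apply)
    have sv: "s \<circ> v' = v" unfolding v'_def using s by (simp add: fun_eq_iff bij_is_surj surj_f_inv_f)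
    have "act C v X = act C s (act C v' X)" using act_comp[of s v' X] sv s iv X by (simp add: bij_is_inj)
    also have "act C v' X = X" using A(2) iv fx0 unfolding supported_on_def injs_def by blast
    finally show ?thesis .
  qed
  obtain s where s: "bij s" "\<forall>a\<in>A. s a = u a" using bij_extend[OF A(1), of u] u by (meson inj_on_subset subset_UNIV)
  have "act C u X = act C s X" using key[OF u s(1) s(2)] .
  moreover have "act C w X = act C s X" using key[OF w s(1)] s(2) ag by simp
  ultimately show ?thesis by simp
qed

lemma act_supported:
  assumes X: "X \<in> ob C" and A: "finite A" "supported_on C X A" and u: "inj u"
  shows "supported_on C (act C u X) (u ` A)"
  unfolding supported_on_def injs_def
proof (intro ballI impI)
  fix v assume v: "v \<in> {u. inj u}" and fx: "\<forall>a\<in>u ` A. v a = a"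
  have "act C v (act C u X) = act C (v \<circ> u) X" using act_comp[of v u X] v u X by simp
  also have "\<dots> = act C u X" using act_agree[OF X A, of "v \<circ> u" u] v u fx by (simp add: inj_compose)
  finally show "act C v (act C u X) = act C u X" .
qed

definition sw :: "'o \<Rightarrow> nat set \<Rightarrow> bool" where
  "sw X S \<longleftrightarrow> X \<in> ob C \<and> (X = zer C \<or> (\<exists>A. finite A \<and> A \<subseteq> S \<and> supported_on C X A))"

lemma sw_ob: "sw X S \<Longrightarrow> X \<in> ob C" by (simp add: sw_def)

lemma sw_zer: "sw (zer C) S" by (simp add: sw_def zer_ob)

lemma sw_mono: "sw X S \<Longrightarrow> S \<subseteq> T \<Longrightarrow> sw X T" unfolding sw_def by blast

lemma sw_supp: "sw X S \<Longrightarrow> supp C X \<subseteq> S"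
proof -
  assume a: "sw X S"
  show ?thesis
  proof (cases "X = zer C")
    case True then show ?thesis by (simp add: supp_zer)
  next
    case False
    then obtain A where "finite A" "A \<subseteq> S" "supported_on C X A" using a unfolding sw_def by blast
    then show ?thesis using supp_le by blast
  qed
qed

lemma sw_dsj: "sw X S \<Longrightarrow> sw Y T \<Longrightarrow> S \<inter> T = {} \<Longrightarrow> dsj C X Y"
  unfolding dsj_def using sw_supp by blast

lemma sw_act: "inj u \<Longrightarrow> X \<in> ob C \<Longrightarrow> sw (act C u X) (range u)"
proof -
  assume u: "inj u" and X: "X \<in> ob C"
  obtain A where A: "finite A" "supported_on C X A" using tame[OF X] by blast
  have "supported_on C (act C u X) (u ` A)" using act_supported[OF X A u] .
  moreover have "finite (u ` A)" "u ` A \<subseteq> range u" using A by auto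
  ultimately show ?thesis unfolding sw_def using act_ob[OF u X] by blast
qed

lemma sw_pls:
  assumes "sw X S" "sw Y T" "S \<inter> T = {}"
  shows "sw (pls C X Y) (S \<union> T)"
proof -
  have d: "dsj C X Y" using sw_dsj assms by blast
  have ob: "X \<in> ob C" "Y \<in> ob C" using assms sw_ob by auto
  show ?thesis
  proof (cases "X = zer C")
    case True then show ?thesis using assms(2) ob pls_zer sw_mono by auto
  next
    case F1: False
    show ?thesis
    proof (cases "Y = zer C")
      case True then show ?thesis using assms(1) ob pls_zer sw_mono by auto
    next
      case False
      obtain A where A: "finite A" "A \<subseteq> S" "supported_on C X A" using assms(1) F1 unfolding sw_def by blast
      obtain B where B: "finite B" "B \<subseteq> T" "supported_on C Y B" using assms(2) False unfolding sw_def by blast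
      have "supported_on C (pls C X Y) (A \<union> B)"
        unfolding supported_on_def
      proof (intro ballI impI)
        fix u assume u: "u \<in> injs" "\<forall>a\<in>A \<union> B. u a = a"
        then have "act C u X = X" "act C u Y = Y" using A(3) B(3) unfolding supported_on_def by auto
        then show "act C u (pls C X Y) = pls C X Y" using act_pls[of u X Y] u d ob by (simp add: injs_def)
      qed
      then show ?thesis unfolding sw_def using pls_ob[OF ob d] A B by blast
    qed
  qed
qed

end

section \<open>Injections of m x omega\<close>

definition rng :: "(nat \<Rightarrow> nat \<Rightarrow> nat) \<Rightarrow> nat set \<Rightarrow> nat set" where
  "rng \<phi> S = (\<Union>i\<in>S. range (\<phi> i))"

lemma imm_rng: "imm m \<phi> = rng \<phi> {..<m}"
  unfolding imm_def rng_def by (auto simp: image_iff)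

lemma injm_iff: "injm m \<phi> \<longleftrightarrow> (\<forall>i<m. inj (\<phi> i)) \<and> (\<forall>i<m. \<forall>j<m. i \<noteq> j \<longrightarrow> range (\<phi> i) \<inter> range (\<phi> j) = {})"
proof
  assume a: "injm m \<phi>"
  have I: "(i, x) = (j, y)" if "i < m" "j < m" "\<phi> i x = \<phi> j y" for i x j y
    using a[unfolded injm_def] by (rule inj_onD) (use that in auto)
  show "(\<forall>i<m. inj (\<phi> i)) \<and> (\<forall>i<m. \<forall>j<m. i \<noteq> j \<longrightarrow> range (\<phi> i) \<inter> range (\<phi> j) = {})"
  proof (intro conjI allI impI)
    fix i assume "i < m"
    then show "inj (\<phi> i)" using I by (intro injI) simp
  next
    fix i j assume "i < m" "j < m" "i \<noteq> j"
    then show "range (\<phi> i) \<inter> range (\<phi> j) = {}" using I by (metis (no_types, lifting) disjoint_iff prod.inject rangeE)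
  qed
next
  assume a: "(\<forall>i<m. inj (\<phi> i)) \<and> (\<forall>i<m. \<forall>j<m. i \<noteq> j \<longrightarrow> range (\<phi> i) \<inter> range (\<phi> j) = {})"
  show "injm m \<phi>" unfolding injm_def
  proof (rule inj_onI)
    fix p q assume pq: "p \<in> {..<m} \<times> UNIV" "q \<in> {..<m} \<times> UNIV"
      "(case p of (i, x) \<Rightarrow> \<phi> i x) = (case q of (i, x) \<Rightarrow> \<phi> i x)"
    obtain i x j y where p: "p = (i, x)" and q: "q = (j, y)" by (cases p, cases q)
    have ij: "i < m" "j < m" using pq p q by auto
    have e: "\<phi> i x = \<phi> j y" using pq p q by simp
    show "p = q"
    proof (cases "i = j")
      case True then show ?thesis using a ij e p q by (auto dest: injD)
    next
      case False
      then have "range (\<phi> i) \<inter> range (\<phi> j) = {}" using a ij by blast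
      then show ?thesis using e by (metis disjoint_iff rangeI)
    qed
  qed
qed

lemma injm_inj: "injm m \<phi> \<Longrightarrow> i < m \<Longrightarrow> inj (\<phi> i)"
  by (simp add: injm_iff)

lemma injm_rng_disj: "injm m \<phi> \<Longrightarrow> S \<subseteq> {..<m} \<Longrightarrow> T \<subseteq> {..<m} \<Longrightarrow> S \<inter> T = {} \<Longrightarrow>
    rng \<phi> S \<inter> rng \<phi> T = {}"
  unfolding injm_iff rng_def by blast

lemma injm_cong: "(\<And>i. i < m \<Longrightarrow> \<phi> i = \<phi>' i) \<Longrightarrow> injm m \<phi> = injm m \<phi>'"
  by (simp add: injm_iff)

lemma rng_cong: "(\<And>i. i \<in> S \<Longrightarrow> \<phi> i = \<phi>' i) \<Longrightarrow> rng \<phi> S = rng \<phi>' S"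
  by (simp add: rng_def)

lemma injm_mono: "injm m \<phi> \<Longrightarrow> k \<le> m \<Longrightarrow> injm k \<phi>"
  by (simp add: injm_iff)

lemma injm_shift: "injm m \<phi> \<Longrightarrow> k + n \<le> m \<Longrightarrow> injm n (\<lambda>i. \<phi> (i + k))"
  unfolding injm_iff by auto

lemma rng_shift: "rng (\<lambda>i. \<phi> (i + k)) S = rng \<phi> ((\<lambda>i. i + k) ` S)"
  unfolding rng_def by auto

lemma shift_lessThan: "(\<lambda>i::nat. i + k) ` {..<n} = {k..<k+n}"
proof (rule set_eqI, rule iffI)
  fix x assume "x \<in> {k..<k+n}"
  then have "x - k < n" "x = (x - k) + k" by auto
  then show "x \<in> (\<lambda>i. i + k) ` {..<n}" by blast
qed auto

lemma imm_shift: "imm n (\<lambda>i. \<phi> (i + k)) = rng \<phi> {k..<k+n}"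
  by (simp add: imm_rng rng_shift shift_lessThan)

lemma Suc_shift_eq: "(\<lambda>i. \<phi> (Suc i)) = (\<lambda>i. \<phi> (i + 1))" by simp

definition psum' :: "nat \<Rightarrow> (nat \<Rightarrow> nat \<Rightarrow> nat) \<Rightarrow> (nat \<Rightarrow> nat \<Rightarrow> nat) \<Rightarrow> nat \<Rightarrow> nat \<Rightarrow> nat" where
  "psum' = psum"

lemma psum_lt: "i < m \<Longrightarrow> psum m \<phi> \<theta> i = \<phi> i" by (simp add: psum_def fun_eq_iff)
lemma psum_shift: "(\<lambda>i. psum m \<phi> \<theta> (i + m)) = \<theta>" by (simp add: psum_def fun_eq_iff)
lemma psum_0: "psum 0 \<phi> \<theta> = \<theta>" by (simp add: psum_def fun_eq_iff)

lemma injm_psum: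
  assumes "injm m \<phi>" "injm n \<theta>" "imm m \<phi> \<inter> imm n \<theta> = {}"
  shows "injm (m + n) (psum m \<phi> \<theta>)"
  unfolding injm_iff
proof (intro conjI allI impI)
  fix i assume i: "i < m + n"
  show "inj (psum m \<phi> \<theta> i)"
    using assms(1,2) i by (cases "i < m") (auto simp: psum_def injm_iff)
next
  fix i j assume i: "i < m + n" and j: "j < m + n" and ij: "i \<noteq> j"
  have r1: "range (\<phi> i) \<subseteq> imm m \<phi>" if "i < m" for i using that by (auto simp: imm_rng rng_def)
  have r2: "range (\<theta> i) \<subseteq> imm n \<theta>" if "i < n" for i using that by (auto simp: imm_rng rng_def)
  show "range (psum m \<phi> \<theta> i) \<inter> range (psum m \<phi> \<theta> j) = {}"
  proof (cases "i < m"; cases "j < m")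
    assume "i < m" "j < m" then show ?thesis using assms(1) ij by (simp add: psum_def injm_iff)
  next
    assume a: "i < m" "\<not> j < m"
    then have "j - m < n" using j by auto
    then show ?thesis using a r1[of i] r2[of "j - m"] assms(3) by (auto simp: psum_def)
  next
    assume a: "\<not> i < m" "j < m"
    then have "i - m < n" using i by auto
    then show ?thesis using a r1[of j] r2[of "i - m"] assms(3) by (auto simp: psum_def)
  next
    assume a: "\<not> i < m" "\<not> j < m"
    then have "i - m < n" "j - m < n" "i - m \<noteq> j - m" using i j ij by auto
    then show ?thesis using a assms(2) by (simp add: psum_def injm_iff)
  qed
qed

lemma imm_psum: "imm (m + n) (psum m \<phi> \<theta>) = imm m \<phi> \<union> imm n \<theta>"
proof -
  have "imm (m + n) (psum m \<phi> \<theta>) = rng (psum m \<phi> \<theta>) ({..<m} \<union> {m..<m+n})"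
    by (simp add: imm_rng ivl_disj_un(8))
  also have "\<dots> = rng (psum m \<phi> \<theta>) {..<m} \<union> rng (psum m \<phi> \<theta>) {m..<m+n}"
    by (simp add: rng_def)
  also have "rng (psum m \<phi> \<theta>) {..<m} = imm m \<phi>"
    by (simp add: imm_rng rng_def psum_def)
  also have "rng (psum m \<phi> \<theta>) {m..<m+n} = imm n \<theta>"
    using imm_shift[of n "psum m \<phi> \<theta>" m] by (simp add: psum_shift)
  finally show ?thesis .
qed

lemma phibar_psum: "phibar m n \<phi> = psum n (\<lambda>i. \<phi> (i + m)) \<phi>"
  by (simp add: phibar_def psum_def fun_eq_iff)

lemma push_Nil: "push C \<phi> [] = zer C" by (simp add: push_def)
lemma pushm_Nil: "pushm C \<phi>' \<phi> [] = idn C (zer C)" by (simp add: pushm_def)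

lemma upt_0_Suc: "[0..<Suc n] = 0 # map Suc [0..<n]"
  by (simp add: upt_conv_Cons map_Suc_upt del: upt_Suc)

lemma push_Cons: "push C \<phi> (X # Xs) = pls C (act C (\<phi> 0) X) (push C (\<lambda>i. \<phi> (Suc i)) Xs)"
  unfolding push_def by (simp add: upt_0_Suc foldr_map comp_def del: upt_Suc)

lemma pushm_Cons: "pushm C \<phi>' \<phi> (X # Xs) =
   plsm C (trn C (\<phi>' 0) (\<phi> 0) X) (pushm C (\<lambda>i. \<phi>' (Suc i)) (\<lambda>i. \<phi> (Suc i)) Xs)"
  unfolding pushm_def by (simp add: upt_0_Suc foldr_map comp_def del: upt_Suc)

lemma push_cong: "(\<And>i. i < length Xs \<Longrightarrow> \<phi> i = \<phi>' i) \<Longrightarrow> push C \<phi> Xs = push C \<phi>' Xs"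
  unfolding push_def by (rule foldr_cong) auto

lemma pushm_cong: "(\<And>i. i < length Xs \<Longrightarrow> \<phi> i = \<phi>2 i) \<Longrightarrow> (\<And>i. i < length Xs \<Longrightarrow> \<psi> i = \<psi>2 i) \<Longrightarrow>
   pushm C \<psi> \<phi> Xs = pushm C \<psi>2 \<phi>2 Xs"
  unfolding pushm_def by (rule foldr_cong) auto

lemma imm_Suc: "imm (Suc n) \<phi> = range (\<phi> 0) \<union> imm n (\<lambda>i. \<phi> (Suc i))"
  unfolding imm_rng rng_def by (auto simp: lessThan_Suc_eq_insert_0)

lemma injm_Suc: "injm (Suc n) \<phi> \<Longrightarrow> inj (\<phi> 0) \<and> injm n (\<lambda>i. \<phi> (Suc i)) \<and> range (\<phi> 0) \<inter> imm n (\<lambda>i. \<phi> (Suc i)) = {}"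
proof -
  assume a: "injm (Suc n) \<phi>"
  have "range (\<phi> 0) \<inter> range (\<phi> (Suc i)) = {}" if "i < n" for i
    using a that unfolding injm_iff by (metis Suc_less_eq nat.distinct(1) zero_less_Suc)
  then have "range (\<phi> 0) \<inter> imm n (\<lambda>i. \<phi> (Suc i)) = {}" unfolding imm_rng rng_def by blast
  then show ?thesis using a unfolding injm_iff by auto
qed

context ps begin

lemma push_sw: "set Xs \<subseteq> ob C \<Longrightarrow> injm (length Xs) \<phi> \<Longrightarrow> sw (push C \<phi> Xs) (imm (length Xs) \<phi>)"
proof (induction Xs arbitrary: \<phi>)
  case Nil
  then show ?case by (simp add: push_Nil sw_zer)
next
  case (Cons X Xs)
  have i: "inj (\<phi> 0)" "injm (length Xs) (\<lambda>i. \<phi> (Suc i))" "range (\<phi> 0) \<inter> imm (length Xs) (\<lambda>i. \<phi> (Suc i)) = {}"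
    using injm_Suc[of "length Xs" \<phi>] Cons.prems by auto
  have a: "sw (act C (\<phi> 0) X) (range (\<phi> 0))" using sw_act i Cons.prems by auto
  have b: "sw (push C (\<lambda>i. \<phi> (Suc i)) Xs) (imm (length Xs) (\<lambda>i. \<phi> (Suc i)))"
    using Cons.IH i Cons.prems by auto
  show ?case using sw_pls[OF a b i(3)] by (simp add: push_Cons imm_Suc)
qed

lemma push_ob: "set Xs \<subseteq> ob C \<Longrightarrow> injm (length Xs) \<phi> \<Longrightarrow> push C \<phi> Xs \<in> ob C"
  using push_sw sw_ob by blast

lemma cons_dsj: "set (X # Xs) \<subseteq> ob C \<Longrightarrow> injm (Suc (length Xs)) \<phi> \<Longrightarrow>
   dsj C (act C (\<phi> 0) X) (push C (\<lambda>i. \<phi> (Suc i)) Xs)"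
proof -
  assume a: "set (X # Xs) \<subseteq> ob C" "injm (Suc (length Xs)) \<phi>"
  have i: "inj (\<phi> 0)" "injm (length Xs) (\<lambda>i. \<phi> (Suc i))" "range (\<phi> 0) \<inter> imm (length Xs) (\<lambda>i. \<phi> (Suc i)) = {}"
    using injm_Suc[of "length Xs" \<phi>] a by auto
  have x: "sw (act C (\<phi> 0) X) (range (\<phi> 0))" using sw_act i a by auto
  have y: "sw (push C (\<lambda>i. \<phi> (Suc i)) Xs) (imm (length Xs) (\<lambda>i. \<phi> (Suc i)))"
    using push_sw i a by auto
  show ?thesis using sw_dsj[OF x y i(3)] .
qed

lemma pushm_hom: "set Xs \<subseteq> ob C \<Longrightarrow> injm (length Xs) \<phi> \<Longrightarrow> injm (length Xs) \<phi>' \<Longrightarrow>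
    pushm C \<phi>' \<phi> Xs \<in> hom C (push C \<phi> Xs) (push C \<phi>' Xs)"
proof (induction Xs arbitrary: \<phi> \<phi>')
  case Nil
  then show ?case by (simp add: push_Nil pushm_Nil idn_hom zer_ob)
next
  case (Cons X Xs)
  have i: "inj (\<phi> 0)" "injm (length Xs) (\<lambda>i. \<phi> (Suc i))"
    using injm_Suc[of "length Xs" \<phi>] Cons.prems by auto
  have i': "inj (\<phi>' 0)" "injm (length Xs) (\<lambda>i. \<phi>' (Suc i))"
    using injm_Suc[of "length Xs" \<phi>'] Cons.prems by auto
  have t: "trn C (\<phi>' 0) (\<phi> 0) X \<in> hom C (act C (\<phi> 0) X) (act C (\<phi>' 0) X)"
    using trn_hom i i' Cons.prems by auto
  have r: "pushm C (\<lambda>i. \<phi>' (Suc i)) (\<lambda>i. \<phi> (Suc i)) Xs \<in>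
     hom C (push C (\<lambda>i. \<phi> (Suc i)) Xs) (push C (\<lambda>i. \<phi>' (Suc i)) Xs)"
    using Cons.IH i i' Cons.prems by auto
  have d: "dsj C (act C (\<phi> 0) X) (push C (\<lambda>i. \<phi> (Suc i)) Xs)"
    "dsj C (act C (\<phi>' 0) X) (push C (\<lambda>i. \<phi>' (Suc i)) Xs)"
    using cons_dsj Cons.prems by auto
  show ?case using plsm_hom[OF t r d] by (simp add: push_Cons pushm_Cons)
qed

lemma pushm_id: "set Xs \<subseteq> ob C \<Longrightarrow> injm (length Xs) \<phi> \<Longrightarrow> pushm C \<phi> \<phi> Xs = idn C (push C \<phi> Xs)"
proof (induction Xs arbitrary: \<phi>)
  case Nil
  then show ?case by (simp add: push_Nil pushm_Nil)
next
  case (Cons X Xs)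
  have i: "inj (\<phi> 0)" "injm (length Xs) (\<lambda>i. \<phi> (Suc i))"
    using injm_Suc[of "length Xs" \<phi>] Cons.prems by auto
  have d: "dsj C (act C (\<phi> 0) X) (push C (\<lambda>i. \<phi> (Suc i)) Xs)"
    using cons_dsj Cons.prems by auto
  have o: "act C (\<phi> 0) X \<in> ob C" "push C (\<lambda>i. \<phi> (Suc i)) Xs \<in> ob C"
    using act_ob push_ob i Cons.prems by auto
  show ?case using Cons i by (simp add: push_Cons pushm_Cons trn_id plsm_idn[OF o d])
qed

lemma pushm_comp: "set Xs \<subseteq> ob C \<Longrightarrow> injm (length Xs) \<phi> \<Longrightarrow> injm (length Xs) \<phi>' \<Longrightarrow> injm (length Xs) \<phi>'' \<Longrightarrow>
   cmp C (pushm C \<phi>'' \<phi>' Xs) (pushm C \<phi>' \<phi> Xs) = pushm C \<phi>'' \<phi> Xs"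
proof (induction Xs arbitrary: \<phi> \<phi>' \<phi>'')
  case Nil
  then show ?case by (simp add: pushm_Nil idl[OF idn_hom[OF zer_ob]])
next
  case (Cons X Xs)
  have i: "inj (\<phi> 0)" "injm (length Xs) (\<lambda>i. \<phi> (Suc i))"
    using injm_Suc[of "length Xs" \<phi>] Cons.prems by auto
  have i': "inj (\<phi>' 0)" "injm (length Xs) (\<lambda>i. \<phi>' (Suc i))"
    using injm_Suc[of "length Xs" \<phi>'] Cons.prems by auto
  have i'': "inj (\<phi>'' 0)" "injm (length Xs) (\<lambda>i. \<phi>'' (Suc i))"
    using injm_Suc[of "length Xs" \<phi>''] Cons.prems by auto
  have t: "trn C (\<phi>' 0) (\<phi> 0) X \<in> hom C (act C (\<phi> 0) X) (act C (\<phi>' 0) X)"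
    "trn C (\<phi>'' 0) (\<phi>' 0) X \<in> hom C (act C (\<phi>' 0) X) (act C (\<phi>'' 0) X)"
    using trn_hom i i' i'' Cons.prems by auto
  have r: "pushm C (\<lambda>i. \<phi>' (Suc i)) (\<lambda>i. \<phi> (Suc i)) Xs \<in>
     hom C (push C (\<lambda>i. \<phi> (Suc i)) Xs) (push C (\<lambda>i. \<phi>' (Suc i)) Xs)"
    "pushm C (\<lambda>i. \<phi>'' (Suc i)) (\<lambda>i. \<phi>' (Suc i)) Xs \<in>
     hom C (push C (\<lambda>i. \<phi>' (Suc i)) Xs) (push C (\<lambda>i. \<phi>'' (Suc i)) Xs)"
    using pushm_hom i i' i'' Cons.prems by auto
  have d: "dsj C (act C (\<phi> 0) X) (push C (\<lambda>i. \<phi> (Suc i)) Xs)"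
    "dsj C (act C (\<phi>' 0) X) (push C (\<lambda>i. \<phi>' (Suc i)) Xs)"
    "dsj C (act C (\<phi>'' 0) X) (push C (\<lambda>i. \<phi>'' (Suc i)) Xs)"
    using cons_dsj Cons.prems by auto
  have "cmp C (pushm C \<phi>'' \<phi>' (X # Xs)) (pushm C \<phi>' \<phi> (X # Xs)) =
    plsm C (cmp C (trn C (\<phi>'' 0) (\<phi>' 0) X) (trn C (\<phi>' 0) (\<phi> 0) X))
           (cmp C (pushm C (\<lambda>i. \<phi>'' (Suc i)) (\<lambda>i. \<phi>' (Suc i)) Xs) (pushm C (\<lambda>i. \<phi>' (Suc i)) (\<lambda>i. \<phi> (Suc i)) Xs))"
    unfolding pushm_Cons using interchange[OF t(1) t(2) r(1) r(2) d] by simp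
  also have "\<dots> = pushm C \<phi>'' \<phi> (X # Xs)"
    using Cons i i' i'' by (simp add: trn_comp pushm_Cons)
  finally show ?case .
qed

lemma push_sw_shift: "set Ys \<subseteq> ob C \<Longrightarrow> injm (k + length Ys) \<phi> \<Longrightarrow>
   sw (push C (\<lambda>i. \<phi> (i + k)) Ys) (rng \<phi> {k..<k + length Ys})"
  using push_sw[of Ys "\<lambda>i. \<phi> (i + k)"] injm_shift[of "k + length Ys" \<phi> k "length Ys"]
  by (simp add: imm_shift)

lemma act_sw_rng: "set (X # Xs) \<subseteq> ob C \<Longrightarrow> injm m \<phi> \<Longrightarrow> 0 < m \<Longrightarrow> sw (act C (\<phi> 0) X) (rng \<phi> {0})"
  using sw_act[of "\<phi> 0" X] injm_inj[of m \<phi> 0] by (simp add: rng_def)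

lemma push_append: "set Xs \<subseteq> ob C \<Longrightarrow> set Ys \<subseteq> ob C \<Longrightarrow> injm (length Xs + length Ys) \<phi> \<Longrightarrow>
   push C \<phi> (Xs @ Ys) = pls C (push C \<phi> Xs) (push C (\<lambda>i. \<phi> (i + length Xs)) Ys)"
proof (induction Xs arbitrary: \<phi>)
  case Nil
  then show ?case using push_ob[of Ys \<phi>] by (simp add: push_Nil pls_zer)
next
  case (Cons X Xs)
  let ?n = "length Xs" and ?k = "length Ys"
  have i: "injm (length Xs + length Ys) (\<lambda>i. \<phi> (Suc i))"
    using injm_Suc[of "?n + ?k" \<phi>] Cons.prems by auto
  have A: "sw (act C (\<phi> 0) X) (rng \<phi> {0})" using act_sw_rng Cons.prems by auto
  have B: "sw (push C (\<lambda>i. \<phi> (Suc i)) Xs) (rng \<phi> {1..<1 + ?n})"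
    using push_sw_shift[of Xs 1 \<phi>] Cons.prems injm_mono[of "Suc ?n + ?k" \<phi> "1 + ?n"]
    by simp
  have Cc: "sw (push C (\<lambda>i. \<phi> (i + Suc ?n)) Ys) (rng \<phi> {Suc ?n..<Suc ?n + ?k})"
    using push_sw_shift[of Ys "Suc ?n" \<phi>] Cons.prems by simp
  have inj: "injm (Suc ?n + ?k) \<phi>" using Cons.prems by simp
  have d1: "rng \<phi> {0} \<inter> rng \<phi> {1..<1 + ?n} = {}"
    by (rule injm_rng_disj[OF inj]) auto
  have d2: "rng \<phi> {0} \<inter> rng \<phi> {Suc ?n..<Suc ?n + ?k} = {}"
    by (rule injm_rng_disj[OF inj]) auto
  have d3: "rng \<phi> {1..<1 + ?n} \<inter> rng \<phi> {Suc ?n..<Suc ?n + ?k} = {}"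
    by (rule injm_rng_disj[OF inj]) auto
  have eq: "(\<lambda>i. \<phi> (Suc (i + ?n))) = (\<lambda>i. \<phi> (i + Suc ?n))" by simp
  have "push C \<phi> ((X # Xs) @ Ys) = pls C (act C (\<phi> 0) X) (push C (\<lambda>i. \<phi> (Suc i)) (Xs @ Ys))"
    by (simp add: push_Cons)
  also have "\<dots> = pls C (act C (\<phi> 0) X) (pls C (push C (\<lambda>i. \<phi> (Suc i)) Xs) (push C (\<lambda>i. \<phi> (i + Suc ?n)) Ys))"
    using Cons.IH[OF _ _ i] Cons.prems by simp
  also have "\<dots> = pls C (pls C (act C (\<phi> 0) X) (push C (\<lambda>i. \<phi> (Suc i)) Xs)) (push C (\<lambda>i. \<phi> (i + Suc ?n)) Ys)"
    using pls_assoc[OF sw_ob[OF A] sw_ob[OF B] sw_ob[OF Cc] sw_dsj[OF A B d1] sw_dsj[OF A Cc d2] sw_dsj[OF B Cc d3]]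
    by simp
  also have "\<dots> = pls C (push C \<phi> (X # Xs)) (push C (\<lambda>i. \<phi> (i + length (X # Xs))) Ys)"
    by (simp add: push_Cons)
  finally show ?case .
qed

lemma pushm_append: "set Xs \<subseteq> ob C \<Longrightarrow> set Ys \<subseteq> ob C \<Longrightarrow> injm (length Xs + length Ys) \<phi> \<Longrightarrow>
   injm (length Xs + length Ys) \<phi>' \<Longrightarrow>
   pushm C \<phi>' \<phi> (Xs @ Ys) = plsm C (pushm C \<phi>' \<phi> Xs) (pushm C (\<lambda>i. \<phi>' (i + length Xs)) (\<lambda>i. \<phi> (i + length Xs)) Ys)"
proof (induction Xs arbitrary: \<phi> \<phi>')
  case Nil
  then show ?case using pushm_hom[of Ys \<phi> \<phi>'] by (simp add: pushm_Nil plsm_zer hom_def)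
next
  case (Cons X Xs)
  let ?n = "length Xs" and ?k = "length Ys"
  have i: "injm (length Xs + length Ys) (\<lambda>i. \<phi> (Suc i))" "injm (length Xs + length Ys) (\<lambda>i. \<phi>' (Suc i))"
    using injm_Suc[of "?n + ?k" \<phi>] injm_Suc[of "?n + ?k" \<phi>'] Cons.prems by auto
  have inj: "injm (Suc ?n + ?k) \<phi>" "injm (Suc ?n + ?k) \<phi>'" using Cons.prems by simp_all
  have i1: "injm ?n (\<lambda>i. \<phi> (i + 1))" "injm ?n (\<lambda>i. \<phi>' (i + 1))"
    using injm_shift[OF inj(1), of 1 ?n] injm_shift[OF inj(2), of 1 ?n] by auto
  have i2: "injm ?k (\<lambda>i. \<phi> (i + Suc ?n))" "injm ?k (\<lambda>i. \<phi>' (i + Suc ?n))"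
    using injm_shift[OF inj(1), of "Suc ?n" ?k] injm_shift[OF inj(2), of "Suc ?n" ?k] by auto
  have i0: "inj (\<phi> 0)" "inj (\<phi>' 0)" using injm_inj inj by auto
  have A: "sw (act C (\<phi> 0) X) (rng \<phi> {0})" "sw (act C (\<phi>' 0) X) (rng \<phi>' {0})"
    using act_sw_rng Cons.prems by auto
  have B: "sw (push C (\<lambda>i. \<phi> (Suc i)) Xs) (rng \<phi> {1..<1 + ?n})"
     "sw (push C (\<lambda>i. \<phi>' (Suc i)) Xs) (rng \<phi>' {1..<1 + ?n})"
    using push_sw_shift[of Xs 1 \<phi>] push_sw_shift[of Xs 1 \<phi>'] Cons.prems
      injm_mono[of "Suc ?n + ?k" \<phi> "1 + ?n"] injm_mono[of "Suc ?n + ?k" \<phi>' "1 + ?n"]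
    by simp_all
  have Cc: "sw (push C (\<lambda>i. \<phi> (i + Suc ?n)) Ys) (rng \<phi> {Suc ?n..<Suc ?n + ?k})"
    "sw (push C (\<lambda>i. \<phi>' (i + Suc ?n)) Ys) (rng \<phi>' {Suc ?n..<Suc ?n + ?k})"
    using push_sw_shift[of Ys "Suc ?n" \<phi>] push_sw_shift[of Ys "Suc ?n" \<phi>'] Cons.prems by simp_all
  have d1: "rng \<phi> {0} \<inter> rng \<phi> {1..<1 + ?n} = {}" "rng \<phi>' {0} \<inter> rng \<phi>' {1..<1 + ?n} = {}"
    by (rule injm_rng_disj[OF inj(1)]; auto) (rule injm_rng_disj[OF inj(2)]; auto)
  have d2: "rng \<phi> {0} \<inter> rng \<phi> {Suc ?n..<Suc ?n + ?k} = {}" "rng \<phi>' {0} \<inter> rng \<phi>' {Suc ?n..<Suc ?n + ?k} = {}"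
    by (rule injm_rng_disj[OF inj(1)]; auto) (rule injm_rng_disj[OF inj(2)]; auto)
  have d3: "rng \<phi> {1..<1 + ?n} \<inter> rng \<phi> {Suc ?n..<Suc ?n + ?k} = {}"
    "rng \<phi>' {1..<1 + ?n} \<inter> rng \<phi>' {Suc ?n..<Suc ?n + ?k} = {}"
    by (rule injm_rng_disj[OF inj(1)]; auto) (rule injm_rng_disj[OF inj(2)]; auto)
  have h1: "trn C (\<phi>' 0) (\<phi> 0) X \<in> hom C (act C (\<phi> 0) X) (act C (\<phi>' 0) X)"
    using trn_hom i0 Cons.prems by auto
  have h2: "pushm C (\<lambda>i. \<phi>' (Suc i)) (\<lambda>i. \<phi> (Suc i)) Xs \<in>
     hom C (push C (\<lambda>i. \<phi> (Suc i)) Xs) (push C (\<lambda>i. \<phi>' (Suc i)) Xs)"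
    using pushm_hom[of Xs "\<lambda>i. \<phi> (Suc i)" "\<lambda>i. \<phi>' (Suc i)"] i1 Cons.prems by simp
  have h3: "pushm C (\<lambda>i. \<phi>' (i + Suc ?n)) (\<lambda>i. \<phi> (i + Suc ?n)) Ys \<in>
     hom C (push C (\<lambda>i. \<phi> (i + Suc ?n)) Ys) (push C (\<lambda>i. \<phi>' (i + Suc ?n)) Ys)"
    using pushm_hom i2 Cons.prems by auto
  have eq: "\<And>\<phi>::nat \<Rightarrow> nat \<Rightarrow> nat. (\<lambda>i. \<phi> (Suc (i + ?n))) = (\<lambda>i. \<phi> (i + Suc ?n))" by simp
  have "pushm C \<phi>' \<phi> ((X # Xs) @ Ys) = plsm C (trn C (\<phi>' 0) (\<phi> 0) X) (pushm C (\<lambda>i. \<phi>' (Suc i)) (\<lambda>i. \<phi> (Suc i)) (Xs @ Ys))"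
    by (simp add: pushm_Cons)
  also have "\<dots> = plsm C (trn C (\<phi>' 0) (\<phi> 0) X) (plsm C (pushm C (\<lambda>i. \<phi>' (Suc i)) (\<lambda>i. \<phi> (Suc i)) Xs)
        (pushm C (\<lambda>i. \<phi>' (i + Suc ?n)) (\<lambda>i. \<phi> (i + Suc ?n)) Ys))"
    using Cons.IH[OF _ _ i] Cons.prems by simp
  also have "\<dots> = plsm C (plsm C (trn C (\<phi>' 0) (\<phi> 0) X) (pushm C (\<lambda>i. \<phi>' (Suc i)) (\<lambda>i. \<phi> (Suc i)) Xs))
        (pushm C (\<lambda>i. \<phi>' (i + Suc ?n)) (\<lambda>i. \<phi> (i + Suc ?n)) Ys)"
    using plsm_assoc[OF h1 h2 h3 sw_dsj[OF A(1) B(1) d1(1)] sw_dsj[OF A(2) B(2) d1(2)]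
       sw_dsj[OF A(1) Cc(1) d2(1)] sw_dsj[OF A(2) Cc(2) d2(2)]
       sw_dsj[OF B(1) Cc(1) d3(1)] sw_dsj[OF B(2) Cc(2) d3(2)]]
    by simp
  also have "\<dots> = plsm C (pushm C \<phi>' \<phi> (X # Xs)) (pushm C (\<lambda>i. \<phi>' (i + length (X # Xs))) (\<lambda>i. \<phi> (i + length (X # Xs))) Ys)"
    by (simp add: pushm_Cons)
  finally show ?case .
qed

lemma push_psum: "set Xs \<subseteq> ob C \<Longrightarrow> set Ys \<subseteq> ob C \<Longrightarrow> injm (length Xs) \<phi> \<Longrightarrow> injm (length Ys) \<theta> \<Longrightarrow>
   imm (length Xs) \<phi> \<inter> imm (length Ys) \<theta> = {} \<Longrightarrow>
   push C (psum (length Xs) \<phi> \<theta>) (Xs @ Ys) = pls C (push C \<phi> Xs) (push C \<theta> Ys)"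
  using push_append[of Xs Ys "psum (length Xs) \<phi> \<theta>"] injm_psum[of "length Xs" \<phi> "length Ys" \<theta>]
    push_cong[of Xs "psum (length Xs) \<phi> \<theta>" \<phi> C]
  by (simp add: psum_lt psum_shift)

lemma pushm_psum: "set Xs \<subseteq> ob C \<Longrightarrow> set Ys \<subseteq> ob C \<Longrightarrow> injm (length Xs) \<phi> \<Longrightarrow> injm (length Ys) \<theta> \<Longrightarrow>
   imm (length Xs) \<phi> \<inter> imm (length Ys) \<theta> = {} \<Longrightarrow>
   injm (length Xs) \<phi>' \<Longrightarrow> injm (length Ys) \<theta>' \<Longrightarrow>
   imm (length Xs) \<phi>' \<inter> imm (length Ys) \<theta>' = {} \<Longrightarrow>
   pushm C (psum (length Xs) \<phi>' \<theta>') (psum (length Xs) \<phi> \<theta>) (Xs @ Ys) = plsm C (pushm C \<phi>' \<phi> Xs) (pushm C \<theta>' \<theta> Ys)"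
  using pushm_append[of Xs Ys "psum (length Xs) \<phi> \<theta>" "psum (length Xs) \<phi>' \<theta>'"]
    injm_psum[of "length Xs" \<phi> "length Ys" \<theta>] injm_psum[of "length Xs" \<phi>' "length Ys" \<theta>']
    pushm_cong[of Xs "psum (length Xs) \<phi> \<theta>" \<phi> "psum (length Xs) \<phi>' \<theta>'" \<phi>' C]
  by (simp add: psum_lt psum_shift)

lemma push_psum_sw: "set Xs \<subseteq> ob C \<Longrightarrow> set Ys \<subseteq> ob C \<Longrightarrow> injm (length Xs) \<phi> \<Longrightarrow> injm (length Ys) \<theta> \<Longrightarrow>
   imm (length Xs) \<phi> \<inter> imm (length Ys) \<theta> = {} \<Longrightarrow>
   sw (push C (psum (length Xs) \<phi> \<theta>) (Xs @ Ys)) (imm (length Xs) \<phi> \<union> imm (length Ys) \<theta>)"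
  using push_sw[of "Xs @ Ys" "psum (length Xs) \<phi> \<theta>"] injm_psum[of "length Xs" \<phi> "length Ys" \<theta>]
  by (simp add: imm_psum)

end

context ps begin

lemma cmp_ar: "f \<in> ar C \<Longrightarrow> g \<in> ar C \<Longrightarrow> dm C g = cd C f \<Longrightarrow> cmp C g f \<in> ar C"
  using cmp_hom[of f "dm C f" "cd C f" g "cd C g"] by (simp add: hom_def)
lemma dm_cmp: "f \<in> ar C \<Longrightarrow> g \<in> ar C \<Longrightarrow> dm C g = cd C f \<Longrightarrow> dm C (cmp C g f) = dm C f"
  using cmp_hom[of f "dm C f" "cd C f" g "cd C g"] by (simp add: hom_def)
lemma cd_cmp: "f \<in> ar C \<Longrightarrow> g \<in> ar C \<Longrightarrow> dm C g = cd C f \<Longrightarrow> cd C (cmp C g f) = cd C g"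
  using cmp_hom[of f "dm C f" "cd C f" g "cd C g"] by (simp add: hom_def)
lemma assoc_r: "f \<in> ar C \<Longrightarrow> g \<in> ar C \<Longrightarrow> h \<in> ar C \<Longrightarrow> dm C g = cd C f \<Longrightarrow> dm C h = cd C g \<Longrightarrow>
    cmp C (cmp C h g) f = cmp C h (cmp C g f)"
  using assoc[of f "dm C f" "cd C f" g "cd C g" h "cd C h"] by (simp add: hom_def)
lemma idl_ar: "f \<in> ar C \<Longrightarrow> cd C f = Y \<Longrightarrow> cmp C (idn C Y) f = f"
  using idl[of f "dm C f" Y] by (simp add: hom_def)
lemma idr_ar: "f \<in> ar C \<Longrightarrow> dm C f = X \<Longrightarrow> cmp C f (idn C X) = f"
  using idr[of f X "cd C f"] by (simp add: hom_def)
lemma idn_ar: "X \<in> ob C \<Longrightarrow> idn C X \<in> ar C" "X \<in> ob C \<Longrightarrow> dm C (idn C X) = X" "X \<in> ob C \<Longrightarrow> cd C (idn C X) = X"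
  using idn_hom[of X] by (simp_all add: hom_def)

lemmas catsimps = cmp_ar dm_cmp cd_cmp assoc_r idl_ar idr_ar idn_ar

lemma pushm_ar: "set Xs \<subseteq> ob C \<Longrightarrow> injm (length Xs) \<phi> \<Longrightarrow> injm (length Xs) \<phi>' \<Longrightarrow> pushm C \<phi>' \<phi> Xs \<in> ar C"
  "set Xs \<subseteq> ob C \<Longrightarrow> injm (length Xs) \<phi> \<Longrightarrow> injm (length Xs) \<phi>' \<Longrightarrow> dm C (pushm C \<phi>' \<phi> Xs) = push C \<phi> Xs"
  "set Xs \<subseteq> ob C \<Longrightarrow> injm (length Xs) \<phi> \<Longrightarrow> injm (length Xs) \<phi>' \<Longrightarrow> cd C (pushm C \<phi>' \<phi> Xs) = push C \<phi>' Xs"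
  using pushm_hom[of Xs \<phi> \<phi>'] by (simp_all add: hom_def)

lemma pushm_comp': "set Xs \<subseteq> ob C \<Longrightarrow> injm (length Xs) \<phi> \<Longrightarrow> injm (length Xs) \<phi>' \<Longrightarrow> injm (length Xs) \<phi>'' \<Longrightarrow>
   h \<in> ar C \<Longrightarrow> cd C h = push C \<phi> Xs \<Longrightarrow>
   cmp C (pushm C \<phi>'' \<phi>' Xs) (cmp C (pushm C \<phi>' \<phi> Xs) h) = cmp C (pushm C \<phi>'' \<phi> Xs) h"
  using pushm_comp[of Xs \<phi> \<phi>' \<phi>''] by (simp add: catsimps pushm_ar flip: assoc_r)

lemma push_ob': "set Xs \<subseteq> ob C \<Longrightarrow> injm (length Xs) \<phi> \<Longrightarrow> push C \<phi> Xs \<in> ob C"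
  by (rule push_ob)

lemmas pcat = catsimps pushm_ar pushm_comp' pushm_comp pushm_id push_ob'

lemma valid_iff: "valid C Xs Ys (\<psi>, f, \<phi>) \<longleftrightarrow> injm (length Xs) \<phi> \<and> injm (length Ys) \<psi> \<and> f \<in> hom C (push C \<phi> Xs) (push C \<psi> Ys)"
  by (simp add: valid_def)

lemma srel_iff: "srel C Xs Ys (\<psi>, f, \<phi>) (\<psi>', f', \<phi>') \<longleftrightarrow> f' = cmp C (pushm C \<psi>' \<psi> Ys) (cmp C f (pushm C \<phi> \<phi>' Xs))"
  by (simp add: srel_def)

lemma srel_refl: "set Xs \<subseteq> ob C \<Longrightarrow> set Ys \<subseteq> ob C \<Longrightarrow> valid C Xs Ys t \<Longrightarrow> srel C Xs Ys t t"
  by (cases t) (auto simp: valid_iff srel_iff hom_def pcat)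

lemma srel_sym: "set Xs \<subseteq> ob C \<Longrightarrow> set Ys \<subseteq> ob C \<Longrightarrow> valid C Xs Ys t \<Longrightarrow> valid C Xs Ys t' \<Longrightarrow>
    srel C Xs Ys t t' \<Longrightarrow> srel C Xs Ys t' t"
proof -
  assume a: "set Xs \<subseteq> ob C" "set Ys \<subseteq> ob C" "valid C Xs Ys t" "valid C Xs Ys t'" "srel C Xs Ys t t'"
  obtain \<psi> f \<phi> where t: "t = (\<psi>, f, \<phi>)" by (cases t)
  obtain \<psi>' f' \<phi>' where t': "t' = (\<psi>', f', \<phi>')" by (cases t')
  have v: "injm (length Xs) \<phi>" "injm (length Ys) \<psi>" "f \<in> ar C" "dm C f = push C \<phi> Xs" "cd C f = push C \<psi> Ys"
    "injm (length Xs) \<phi>'" "injm (length Ys) \<psi>'"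
    using a(3,4) t t' by (auto simp: valid_iff hom_def)
  have e: "f' = cmp C (pushm C \<psi>' \<psi> Ys) (cmp C f (pushm C \<phi> \<phi>' Xs))" using a(5) t t' by (simp add: srel_iff)
  have "cmp C (pushm C \<psi> \<psi>' Ys) (cmp C f' (pushm C \<phi>' \<phi> Xs)) = f"
    unfolding e using a(1,2) v by (simp add: pcat)
  then show ?thesis using t t' by (simp add: srel_iff)
qed

lemma srel_trans: "set Xs \<subseteq> ob C \<Longrightarrow> set Ys \<subseteq> ob C \<Longrightarrow> valid C Xs Ys t \<Longrightarrow> valid C Xs Ys t' \<Longrightarrow> valid C Xs Ys t'' \<Longrightarrow>
    srel C Xs Ys t t' \<Longrightarrow> srel C Xs Ys t' t'' \<Longrightarrow> srel C Xs Ys t t''"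
proof -
  assume a: "set Xs \<subseteq> ob C" "set Ys \<subseteq> ob C" "valid C Xs Ys t" "valid C Xs Ys t'" "valid C Xs Ys t''"
    "srel C Xs Ys t t'" "srel C Xs Ys t' t''"
  obtain \<psi> f \<phi> where t: "t = (\<psi>, f, \<phi>)" by (cases t)
  obtain \<psi>' f' \<phi>' where t': "t' = (\<psi>', f', \<phi>')" by (cases t')
  obtain \<psi>'' f'' \<phi>'' where t'': "t'' = (\<psi>'', f'', \<phi>'')" by (cases t'')
  have v: "injm (length Xs) \<phi>" "injm (length Ys) \<psi>" "f \<in> ar C" "dm C f = push C \<phi> Xs" "cd C f = push C \<psi> Ys"
    "injm (length Xs) \<phi>'" "injm (length Ys) \<psi>'" "injm (length Xs) \<phi>''" "injm (length Ys) \<psi>''"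
    using a(3,4,5) t t' t'' by (auto simp: valid_iff hom_def)
  have e: "f' = cmp C (pushm C \<psi>' \<psi> Ys) (cmp C f (pushm C \<phi> \<phi>' Xs))" using a(6) t t' by (simp add: srel_iff)
  have e': "f'' = cmp C (pushm C \<psi>'' \<psi>' Ys) (cmp C f' (pushm C \<phi>' \<phi>'' Xs))" using a(7) t' t'' by (simp add: srel_iff)
  have "f'' = cmp C (pushm C \<psi>'' \<psi> Ys) (cmp C f (pushm C \<phi> \<phi>'' Xs))"
    unfolding e' e using a(1,2) v by (simp add: pcat)
  then show ?thesis using t t'' by (simp add: srel_iff)
qed

lemma cls_mem: "t' \<in> cls C Xs Ys t \<longleftrightarrow> valid C Xs Ys t' \<and> srel C Xs Ys t t'"
  by (simp add: cls_def)

lemma self_mem: "set Xs \<subseteq> ob C \<Longrightarrow> set Ys \<subseteq> ob C \<Longrightarrow> valid C Xs Ys t \<Longrightarrow> t \<in> cls C Xs Ys t"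
  using srel_refl by (simp add: cls_mem)

lemma cls_eq: "set Xs \<subseteq> ob C \<Longrightarrow> set Ys \<subseteq> ob C \<Longrightarrow> valid C Xs Ys t \<Longrightarrow> valid C Xs Ys t' \<Longrightarrow>
    srel C Xs Ys t t' \<Longrightarrow> cls C Xs Ys t = cls C Xs Ys t'"
proof -
  assume a: "set Xs \<subseteq> ob C" "set Ys \<subseteq> ob C" "valid C Xs Ys t" "valid C Xs Ys t'" "srel C Xs Ys t t'"
  have b: "srel C Xs Ys t' t" using srel_sym[OF a(1-4) a(5)] .
  show ?thesis
  proof (rule set_eqI)
    fix x
    show "x \<in> cls C Xs Ys t \<longleftrightarrow> x \<in> cls C Xs Ys t'"
      unfolding cls_mem using srel_trans[OF a(1,2,4,3), OF _ b] srel_trans[OF a(1,2,3,4), OF _ a(5)] by blast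
  qed
qed

lemma mem_cls_eq: "set Xs \<subseteq> ob C \<Longrightarrow> set Ys \<subseteq> ob C \<Longrightarrow> valid C Xs Ys t \<Longrightarrow> t' \<in> cls C Xs Ys t \<Longrightarrow>
    cls C Xs Ys t' = cls C Xs Ys t"
  using cls_eq[of Xs Ys t t'] by (simp add: cls_mem)

lemma cls_eq_iff: "set Xs \<subseteq> ob C \<Longrightarrow> set Ys \<subseteq> ob C \<Longrightarrow> valid C Xs Ys t \<Longrightarrow> valid C Xs Ys t' \<Longrightarrow>
    cls C Xs Ys t = cls C Xs Ys t' \<longleftrightarrow> srel C Xs Ys t t'"
  using cls_eq[of Xs Ys t t'] self_mem[of Xs Ys t'] by (auto simp: cls_mem)

lemma mem_srel: "set Xs \<subseteq> ob C \<Longrightarrow> set Ys \<subseteq> ob C \<Longrightarrow> valid C Xs Ys t0 \<Longrightarrow>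
   t \<in> cls C Xs Ys t0 \<Longrightarrow> t' \<in> cls C Xs Ys t0 \<Longrightarrow> srel C Xs Ys t t'"
proof -
  assume a: "set Xs \<subseteq> ob C" "set Ys \<subseteq> ob C" "valid C Xs Ys t0" "t \<in> cls C Xs Ys t0" "t' \<in> cls C Xs Ys t0"
  have v: "valid C Xs Ys t" "valid C Xs Ys t'" "srel C Xs Ys t0 t" "srel C Xs Ys t0 t'" using a(4,5) by (simp_all add: cls_mem)
  have "srel C Xs Ys t t0" using srel_sym[OF a(1,2,3) v(1) v(3)] .
  then show ?thesis using srel_trans[OF a(1,2) v(1) a(3) v(2)] v(4) by blast
qed

definition retg :: "'o list \<Rightarrow> 'o list \<Rightarrow> 'm triple \<Rightarrow> (nat \<Rightarrow> nat \<Rightarrow> nat) \<Rightarrow> (nat \<Rightarrow> nat \<Rightarrow> nat) \<Rightarrow> 'm triple" where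
  "retg Xs Ys t \<psi>' \<phi>' = (case t of (\<psi>, f, \<phi>) \<Rightarrow> (\<psi>', cmp C (pushm C \<psi>' \<psi> Ys) (cmp C f (pushm C \<phi> \<phi>' Xs)), \<phi>'))"

lemma retg_valid: "set Xs \<subseteq> ob C \<Longrightarrow> set Ys \<subseteq> ob C \<Longrightarrow> valid C Xs Ys t \<Longrightarrow>
    injm (length Xs) \<phi>' \<Longrightarrow> injm (length Ys) \<psi>' \<Longrightarrow> valid C Xs Ys (retg Xs Ys t \<psi>' \<phi>')"
  by (cases t) (auto simp: retg_def valid_iff hom_def pcat)

lemma retg_srel: "srel C Xs Ys t (retg Xs Ys t \<psi>' \<phi>')"
  by (cases t) (simp add: retg_def srel_iff)

lemma retg_cls: "set Xs \<subseteq> ob C \<Longrightarrow> set Ys \<subseteq> ob C \<Longrightarrow> valid C Xs Ys t \<Longrightarrow>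
    injm (length Xs) \<phi>' \<Longrightarrow> injm (length Ys) \<psi>' \<Longrightarrow> cls C Xs Ys (retg Xs Ys t \<psi>' \<phi>') = cls C Xs Ys t"
  using cls_eq[OF _ _ _ retg_valid retg_srel] by simp

lemma retg_mem: "set Xs \<subseteq> ob C \<Longrightarrow> set Ys \<subseteq> ob C \<Longrightarrow> valid C Xs Ys t \<Longrightarrow>
    injm (length Xs) \<phi>' \<Longrightarrow> injm (length Ys) \<psi>' \<Longrightarrow> retg Xs Ys t \<psi>' \<phi>' \<in> cls C Xs Ys t"
  using retg_valid retg_srel by (simp add: cls_mem)

lemma mem_retg: "t' \<in> cls C Xs Ys t \<Longrightarrow> t' = retg Xs Ys t (fst t') (snd (snd t'))"
  by (cases t; cases t') (simp add: cls_mem srel_iff retg_def)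

lemma cls_cong:
  assumes "set Xs \<subseteq> ob C" "set Ys \<subseteq> ob C" "valid C Xs Ys (\<psi>, f, \<phi>)"
    "\<And>i. i < length Ys \<Longrightarrow> \<psi> i = \<psi>' i" "\<And>i. i < length Xs \<Longrightarrow> \<phi> i = \<phi>' i"
  shows "cls C Xs Ys (\<psi>', f, \<phi>') = cls C Xs Ys (\<psi>, f, \<phi>)"
proof -
  have v: "injm (length Xs) \<phi>" "injm (length Ys) \<psi>" "f \<in> ar C" "dm C f = push C \<phi> Xs" "cd C f = push C \<psi> Ys"
    using assms(3) by (auto simp: valid_iff hom_def)
  have v': "injm (length Xs) \<phi>'" "injm (length Ys) \<psi>'"
    using injm_cong[of "length Xs" \<phi> \<phi>'] injm_cong[of "length Ys" \<psi> \<psi>'] assms(4,5) v(1,2) by simp_all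
  have pm: "pushm C \<psi>' \<psi> Ys = pushm C \<psi> \<psi> Ys" "pushm C \<phi> \<phi>' Xs = pushm C \<phi> \<phi> Xs"
    by (rule pushm_cong; simp add: assms(4,5))+
  have e: "retg Xs Ys (\<psi>, f, \<phi>) \<psi>' \<phi>' = (\<psi>', f, \<phi>')"
    unfolding retg_def using pm assms(1,2) v by (simp add: pcat)
  show ?thesis using retg_cls[OF assms(1,2,3) v'] unfolding e .
qed

subsection \<open>Arrows of Sigma\<close>

abbreviation SC where "SC \<equiv> sigma_cat C"

definition mk :: "'o list \<Rightarrow> 'o list \<Rightarrow> 'm triple \<Rightarrow> ('o, 'm) sarr" where
  "mk Xs Ys t = (Xs, Ys, cls C Xs Ys t)"

lemma SC_simps: "ob SC = lists (ob C)" "dm SC a = fst a" "cd SC a = fst (snd a)"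
  "idn SC Xs = mk Xs Xs (phi0, idn C (push C phi0 Xs), phi0)"
  by (simp_all add: sigma_cat_def mk_def)

lemma SC_ar: "a \<in> ar SC \<longleftrightarrow> (\<exists>Xs Ys t. a = mk Xs Ys t \<and> set Xs \<subseteq> ob C \<and> set Ys \<subseteq> ob C \<and> valid C Xs Ys t)"
  unfolding sigma_cat_def mk_def by (simp add: lists_eq_set; blast)

lemma mk_ar: "set Xs \<subseteq> ob C \<Longrightarrow> set Ys \<subseteq> ob C \<Longrightarrow> valid C Xs Ys t \<Longrightarrow> mk Xs Ys t \<in> ar SC"
  unfolding SC_ar by (intro exI conjI) (rule refl | assumption)+

lemma mk_hom: "set Xs \<subseteq> ob C \<Longrightarrow> set Ys \<subseteq> ob C \<Longrightarrow> valid C Xs Ys t \<Longrightarrow> mk Xs Ys t \<in> hom SC Xs Ys"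
  using mk_ar by (simp add: hom_def SC_simps mk_def)

lemma mk_fst: "fst (mk Xs Ys t) = Xs" "fst (snd (mk Xs Ys t)) = Ys" "snd (snd (mk Xs Ys t)) = cls C Xs Ys t"
  by (simp_all add: mk_def)

lemma mk_eq: "set Xs \<subseteq> ob C \<Longrightarrow> set Ys \<subseteq> ob C \<Longrightarrow> valid C Xs Ys t \<Longrightarrow> valid C Xs Ys t' \<Longrightarrow>
    srel C Xs Ys t t' \<Longrightarrow> mk Xs Ys t = mk Xs Ys t'"
  using cls_eq by (simp add: mk_def)

lemma mk_retg: "set Xs \<subseteq> ob C \<Longrightarrow> set Ys \<subseteq> ob C \<Longrightarrow> valid C Xs Ys t \<Longrightarrow>
    injm (length Xs) \<phi>' \<Longrightarrow> injm (length Ys) \<psi>' \<Longrightarrow> mk Xs Ys (retg Xs Ys t \<psi>' \<phi>') = mk Xs Ys t"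
  using retg_cls by (simp add: mk_def)

lemma mk_cong: assumes "set Xs \<subseteq> ob C" "set Ys \<subseteq> ob C" "valid C Xs Ys (\<psi>, f, \<phi>)"
    "\<And>i. i < length Ys \<Longrightarrow> \<psi> i = \<psi>' i" "\<And>i. i < length Xs \<Longrightarrow> \<phi> i = \<phi>' i"
  shows "mk Xs Ys (\<psi>', f, \<phi>') = mk Xs Ys (\<psi>, f, \<phi>)"
  unfolding mk_def using cls_cong[OF assms] by simp

lemma rep_mk: "set Xs \<subseteq> ob C \<Longrightarrow> set Ys \<subseteq> ob C \<Longrightarrow> valid C Xs Ys t \<Longrightarrow> rep (mk Xs Ys t) \<in> cls C Xs Ys t"
proof -
  assume "set Xs \<subseteq> ob C" "set Ys \<subseteq> ob C" "valid C Xs Ys t"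
  then have "t \<in> cls C Xs Ys t" by (rule self_mem)
  then show ?thesis unfolding rep_def mk_def by (auto intro: someI)
qed

lemma injm_phi0: "injm m phi0"
  unfolding injm_iff phi0_def inj_def by (auto simp: prod_encode_eq)

lemma idn_mk: "set Xs \<subseteq> ob C \<Longrightarrow> injm (length Xs) \<phi> \<Longrightarrow> idn SC Xs = mk Xs Xs (\<phi>, idn C (push C \<phi> Xs), \<phi>)"
proof -
  assume a: "set Xs \<subseteq> ob C" "injm (length Xs) \<phi>"
  have v: "valid C Xs Xs (phi0, idn C (push C phi0 Xs), phi0)"
    using a injm_phi0 by (simp add: valid_iff idn_hom push_ob)
  have "retg Xs Xs (phi0, idn C (push C phi0 Xs), phi0) \<phi> \<phi> = (\<phi>, idn C (push C \<phi> Xs), \<phi>)"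
    unfolding retg_def using a injm_phi0 by (simp add: pcat)
  then show ?thesis using mk_retg[OF a(1) a(1) v a(2) a(2)] by (simp add: SC_simps)
qed

definition tcomp :: "'o list \<Rightarrow> 'm triple \<Rightarrow> 'm triple \<Rightarrow> 'm triple" where
  "tcomp Ys s t = (case s of (\<rho>, g, \<theta>) \<Rightarrow> case t of (\<psi>, f, \<phi>) \<Rightarrow> (\<rho>, cmp C g (cmp C (pushm C \<theta> \<psi> Ys) f), \<phi>))"

lemma tcomp_valid: "set Xs \<subseteq> ob C \<Longrightarrow> set Ys \<subseteq> ob C \<Longrightarrow> set Zs \<subseteq> ob C \<Longrightarrow>
   valid C Xs Ys t \<Longrightarrow> valid C Ys Zs s \<Longrightarrow> valid C Xs Zs (tcomp Ys s t)"
  by (cases s; cases t) (auto simp: tcomp_def valid_iff hom_def pcat)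

lemma cmp_mk:
  assumes o: "set Xs \<subseteq> ob C" "set Ys \<subseteq> ob C" "set Zs \<subseteq> ob C"
    and v: "valid C Xs Ys t" "valid C Ys Zs s"
  shows "cmp SC (mk Ys Zs s) (mk Xs Ys t) = mk Xs Zs (tcomp Ys s t)"
proof -
  obtain \<psi> f \<phi> where t: "t = (\<psi>, f, \<phi>)" by (cases t)
  obtain \<rho> g \<theta> where s: "s = (\<rho>, g, \<theta>)" by (cases s)
  obtain \<psi>' f' \<phi>' where t': "rep (mk Xs Ys t) = (\<psi>', f', \<phi>')" by (cases "rep (mk Xs Ys t)")
  obtain \<rho>' g' \<theta>' where s': "rep (mk Ys Zs s) = (\<rho>', g', \<theta>')" by (cases "rep (mk Ys Zs s)")
  have mt: "(\<psi>', f', \<phi>') \<in> cls C Xs Ys t" using rep_mk[OF o(1,2) v(1)] t' by simp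
  have ms: "(\<rho>', g', \<theta>') \<in> cls C Ys Zs s" using rep_mk[OF o(2,3) v(2)] s' by simp
  have vt: "injm (length Xs) \<phi>" "injm (length Ys) \<psi>" "f \<in> ar C" "dm C f = push C \<phi> Xs" "cd C f = push C \<psi> Ys"
    using v(1) t by (auto simp: valid_iff hom_def)
  have vs: "injm (length Ys) \<theta>" "injm (length Zs) \<rho>" "g \<in> ar C" "dm C g = push C \<theta> Ys" "cd C g = push C \<rho> Zs"
    using v(2) s by (auto simp: valid_iff hom_def)
  have vt': "injm (length Xs) \<phi>'" "injm (length Ys) \<psi>'" "f' = cmp C (pushm C \<psi>' \<psi> Ys) (cmp C f (pushm C \<phi> \<phi>' Xs))"
    using mt t by (auto simp: cls_mem valid_iff srel_iff)
  have vs': "injm (length Ys) \<theta>'" "injm (length Zs) \<rho>'" "g' = cmp C (pushm C \<rho>' \<rho> Zs) (cmp C g (pushm C \<theta> \<theta>' Ys))"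
    using ms s by (auto simp: cls_mem valid_iff srel_iff)
  have v1: "valid C Xs Zs (tcomp Ys s t)" using tcomp_valid o v by blast
  have v2: "valid C Xs Zs (\<rho>', cmp C g' (cmp C (pushm C \<theta>' \<psi>' Ys) f'), \<phi>')"
    using tcomp_valid[OF o, of "(\<psi>', f', \<phi>')" "(\<rho>', g', \<theta>')"] mt ms by (simp add: cls_mem tcomp_def)
  have sr: "srel C Xs Zs (tcomp Ys s t) (\<rho>', cmp C g' (cmp C (pushm C \<theta>' \<psi>' Ys) f'), \<phi>')"
    unfolding s t tcomp_def vs'(3) vt'(3) using o vt vs vt' vs' by (simp add: pcat srel_iff)
  have "cmp SC (mk Ys Zs s) (mk Xs Ys t) = (Xs, Zs, cls C Xs Zs (\<rho>', cmp C g' (cmp C (pushm C \<theta>' \<psi>' Ys) f'), \<phi>'))"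
    unfolding sigma_cat_def by (simp add: t' s' mk_fst)
  also have "\<dots> = mk Xs Zs (tcomp Ys s t)"
    using cls_eq[OF o(1,3) v1 v2 sr] by (simp add: mk_def)
  finally show ?thesis .
qed

end

context ps begin

lemma valid_D: "valid C Xs Ys (\<psi>, f, \<phi>) \<Longrightarrow> injm (length Xs) \<phi> \<and> injm (length Ys) \<psi> \<and> f \<in> ar C \<and>
   dm C f = push C \<phi> Xs \<and> cd C f = push C \<psi> Ys"
  by (simp add: valid_iff hom_def)

lemma SC_arE:
  assumes "a \<in> ar SC"
  obtains Xs Ys \<psi> f \<phi> where "a = mk Xs Ys (\<psi>, f, \<phi>)" "set Xs \<subseteq> ob C" "set Ys \<subseteq> ob C" "valid C Xs Ys (\<psi>, f, \<phi>)"
proof -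
  obtain Xs Ys t where "a = mk Xs Ys t" "set Xs \<subseteq> ob C" "set Ys \<subseteq> ob C" "valid C Xs Ys t"
    using assms unfolding SC_ar by blast
  moreover obtain \<psi> f \<phi> where "t = (\<psi>, f, \<phi>)" by (cases t)
  ultimately show ?thesis using that by blast
qed

lemma SC_dm_mk: "dm SC (mk Xs Ys t) = Xs" "cd SC (mk Xs Ys t) = Ys"
  by (simp_all add: SC_simps mk_fst)

lemma mk_inj: "mk Xs Ys t = mk Xs' Ys' t' \<Longrightarrow> Xs = Xs' \<and> Ys = Ys'"
  by (simp add: mk_def)

lemma idn_comp_r:
  assumes o: "set Xs \<subseteq> ob C" "set Ys \<subseteq> ob C" and v: "valid C Xs Ys (\<psi>, f, \<phi>)"
  shows "cmp SC (mk Xs Ys (\<psi>, f, \<phi>)) (idn SC Xs) = mk Xs Ys (\<psi>, f, \<phi>)"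
proof -
  have d: "injm (length Xs) \<phi>" "injm (length Ys) \<psi>" "f \<in> ar C" "dm C f = push C \<phi> Xs" "cd C f = push C \<psi> Ys"
    using valid_D[OF v] by auto
  have vi: "valid C Xs Xs (\<phi>, idn C (push C \<phi> Xs), \<phi>)" using d o by (simp add: valid_iff idn_hom push_ob)
  show ?thesis
    unfolding idn_mk[OF o(1) d(1)] cmp_mk[OF o(1) o(1) o(2) vi v]
    using d o by (simp add: tcomp_def pcat)
qed

lemma idn_comp_l:
  assumes o: "set Xs \<subseteq> ob C" "set Ys \<subseteq> ob C" and v: "valid C Xs Ys (\<psi>, f, \<phi>)"
  shows "cmp SC (idn SC Ys) (mk Xs Ys (\<psi>, f, \<phi>)) = mk Xs Ys (\<psi>, f, \<phi>)"
proof -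
  have d: "injm (length Xs) \<phi>" "injm (length Ys) \<psi>" "f \<in> ar C" "dm C f = push C \<phi> Xs" "cd C f = push C \<psi> Ys"
    using valid_D[OF v] by auto
  have vi: "valid C Ys Ys (\<psi>, idn C (push C \<psi> Ys), \<psi>)" using d o by (simp add: valid_iff idn_hom push_ob)
  show ?thesis
    unfolding idn_mk[OF o(2) d(2)] cmp_mk[OF o(1) o(2) o(2) v vi]
    using d o by (simp add: tcomp_def pcat)
qed

lemma tcomp_assoc:
  assumes o: "set Xs \<subseteq> ob C" "set Ys \<subseteq> ob C" "set Zs \<subseteq> ob C" "set Ws \<subseteq> ob C"
    and v: "valid C Xs Ys t" "valid C Ys Zs s" "valid C Zs Ws u"
  shows "tcomp Zs u (tcomp Ys s t) = tcomp Ys (tcomp Zs u s) t"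
proof -
  obtain \<psi> f \<phi> where t: "t = (\<psi>, f, \<phi>)" by (cases t)
  obtain \<rho> g \<theta> where s: "s = (\<rho>, g, \<theta>)" by (cases s)
  obtain \<kappa> h \<iota> where u: "u = (\<kappa>, h, \<iota>)" by (cases u)
  show ?thesis using valid_D[of Xs Ys \<psi> f \<phi>] valid_D[of Ys Zs \<rho> g \<theta>] valid_D[of Zs Ws \<kappa> h \<iota>] v o
    unfolding t s u tcomp_def by (simp add: pcat)
qed

theorem SC_cat: "is_cat SC"
  unfolding is_cat_def
proof (intro conjI ballI impI)
  fix f assume "f \<in> ar SC"
  then show "dm SC f \<in> ob SC" "cd SC f \<in> ob SC"
    by (auto elim!: SC_arE simp: SC_simps mk_fst lists_eq_set)
next
  fix X assume X: "X \<in> ob SC"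
  then have o: "set X \<subseteq> ob C" by (simp add: SC_simps lists_eq_set)
  have "valid C X X (phi0, idn C (push C phi0 X), phi0)"
    using o injm_phi0 by (simp add: valid_iff idn_hom push_ob)
  then show "idn SC X \<in> hom SC X X" using mk_hom[OF o o] by (simp add: SC_simps)
next
  fix f g assume f: "f \<in> ar SC" and g: "g \<in> ar SC" and fg: "dm SC g = cd SC f"
  obtain Xs Ys \<psi> f' \<phi> where F: "f = mk Xs Ys (\<psi>, f', \<phi>)" "set Xs \<subseteq> ob C" "set Ys \<subseteq> ob C" "valid C Xs Ys (\<psi>, f', \<phi>)"
    using f by (rule SC_arE)
  obtain Ys' Zs \<rho> g' \<theta> where G: "g = mk Ys' Zs (\<rho>, g', \<theta>)" "set Ys' \<subseteq> ob C" "set Zs \<subseteq> ob C" "valid C Ys' Zs (\<rho>, g', \<theta>)"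
    using g by (rule SC_arE)
  have Y: "Ys' = Ys" using fg F G by (simp add: SC_dm_mk)
  show "cmp SC g f \<in> hom SC (dm SC f) (cd SC g)"
    unfolding F G Y SC_dm_mk using cmp_mk[OF F(2,3) G(3) F(4)] G(4) Y tcomp_valid[OF F(2,3) G(3) F(4)] mk_hom[OF F(2) G(3)]
    by simp
next
  fix f assume f: "f \<in> ar SC"
  obtain Xs Ys \<psi> f' \<phi> where F: "f = mk Xs Ys (\<psi>, f', \<phi>)" "set Xs \<subseteq> ob C" "set Ys \<subseteq> ob C" "valid C Xs Ys (\<psi>, f', \<phi>)"
    using f by (rule SC_arE)
  show "cmp SC f (idn SC (dm SC f)) = f" "cmp SC (idn SC (cd SC f)) f = f"
    unfolding F SC_dm_mk using idn_comp_r[OF F(2,3,4)] idn_comp_l[OF F(2,3,4)] by simp_all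
next
  fix f g h assume f: "f \<in> ar SC" and g: "g \<in> ar SC" and h: "h \<in> ar SC" and fg: "dm SC g = cd SC f"
    and gh: "dm SC h = cd SC g"
  obtain Xs Ys t where F: "f = mk Xs Ys t" "set Xs \<subseteq> ob C" "set Ys \<subseteq> ob C" "valid C Xs Ys t"
    using f unfolding SC_ar by blast
  obtain Ys' Zs s where G: "g = mk Ys' Zs s" "set Ys' \<subseteq> ob C" "set Zs \<subseteq> ob C" "valid C Ys' Zs s"
    using g unfolding SC_ar by blast
  obtain Zs' Ws u where H: "h = mk Zs' Ws u" "set Zs' \<subseteq> ob C" "set Ws \<subseteq> ob C" "valid C Zs' Ws u"
    using h unfolding SC_ar by blast
  have Y: "Ys' = Ys" using fg F G by (simp add: SC_dm_mk)
  have Z: "Zs' = Zs" using gh H G by (simp add: SC_dm_mk)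
  note v = F(4) G(4)[unfolded Y] H(4)[unfolded Z]
  show "cmp SC h (cmp SC g f) = cmp SC (cmp SC h g) f"
    unfolding F(1) G(1) H(1) Y Z
    using cmp_mk[OF F(2,3) G(3) v(1,2)] cmp_mk[OF F(2) G(3) H(3) tcomp_valid[OF F(2,3) G(3) v(1,2)] v(3)]
      cmp_mk[OF F(3) G(3) H(3) v(2,3)] cmp_mk[OF F(2,3) H(3) v(1) tcomp_valid[OF F(3) G(3) H(3) v(2,3)]]
      tcomp_assoc[OF F(2,3) G(3) H(3) v]
    by simp
qed

end

definition Ek :: "nat \<Rightarrow> nat \<Rightarrow> nat \<Rightarrow> nat" where
  "Ek k i x = 3 * prod_encode (i, x) + k"

lemma injm_Ek: "injm m (Ek k)"
proof -
  have "inj (Ek k i)" for i unfolding Ek_def inj_def by (auto simp: prod_encode_eq)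
  moreover have "range (Ek k i) \<inter> range (Ek k j) = {}" if "i \<noteq> j" for i j
    using that unfolding Ek_def by (auto simp: prod_encode_eq)
  ultimately show ?thesis unfolding injm_iff by blast
qed

lemma Ek_disj: "k \<noteq> k' \<Longrightarrow> k < 3 \<Longrightarrow> k' < 3 \<Longrightarrow> imm m (Ek k) \<inter> imm m' (Ek k') = {}"
proof -
  assume a: "k \<noteq> k'" "k < 3" "k' < 3"
  have "3 * a + k \<noteq> 3 * b + k'" for a b :: nat
  proof
    assume "3 * a + k = 3 * b + k'"
    then have "(3 * a + k) mod 3 = (3 * b + k') mod 3" by simp
    then show False using a by simp
  qed
  then show ?thesis unfolding imm_def Ek_def by auto
qed

context ps begin

definition dj :: "'o list \<Rightarrow> 'o list \<Rightarrow> 'o list \<Rightarrow> 'o list \<Rightarrow> 'm triple \<Rightarrow> 'm triple \<Rightarrow> bool" where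
  "dj Xs Ys Xs' Ys' t s = (imm (length Xs) (snd (snd t)) \<inter> imm (length Xs') (snd (snd s)) = {} \<and>
      imm (length Ys) (fst t) \<inter> imm (length Ys') (fst s) = {})"

definition ttens :: "'o list \<Rightarrow> 'o list \<Rightarrow> 'm triple \<Rightarrow> 'm triple \<Rightarrow> 'm triple" where
  "ttens Xs Ys t s = (case t of (\<psi>, f, \<phi>) \<Rightarrow> case s of (\<rho>, g, \<theta>) \<Rightarrow>
      (psum (length Ys) \<psi> \<rho>, plsm C f g, psum (length Xs) \<phi> \<theta>))"

lemma push_dsj: "set Xs \<subseteq> ob C \<Longrightarrow> set Xs' \<subseteq> ob C \<Longrightarrow> injm (length Xs) \<phi> \<Longrightarrow> injm (length Xs') \<theta> \<Longrightarrow>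
   imm (length Xs) \<phi> \<inter> imm (length Xs') \<theta> = {} \<Longrightarrow> dsj C (push C \<phi> Xs) (push C \<theta> Xs')"
  by (rule sw_dsj[OF push_sw push_sw])

lemma valid_ttens:
  assumes o: "set Xs \<subseteq> ob C" "set Ys \<subseteq> ob C" "set Xs' \<subseteq> ob C" "set Ys' \<subseteq> ob C"
    and v: "valid C Xs Ys (\<psi>, f, \<phi>)" "valid C Xs' Ys' (\<rho>, g, \<theta>)"
    and d: "dj Xs Ys Xs' Ys' (\<psi>, f, \<phi>) (\<rho>, g, \<theta>)"
  shows "valid C (Xs @ Xs') (Ys @ Ys') (ttens Xs Ys (\<psi>, f, \<phi>) (\<rho>, g, \<theta>))"
proof -
  have a: "injm (length Xs) \<phi>" "injm (length Ys) \<psi>" "f \<in> hom C (push C \<phi> Xs) (push C \<psi> Ys)"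
    "injm (length Xs') \<theta>" "injm (length Ys') \<rho>" "g \<in> hom C (push C \<theta> Xs') (push C \<rho> Ys')"
    using v by (simp_all add: valid_iff)
  have d': "imm (length Xs) \<phi> \<inter> imm (length Xs') \<theta> = {}" "imm (length Ys) \<psi> \<inter> imm (length Ys') \<rho> = {}"
    using d by (simp_all add: dj_def)
  have "plsm C f g \<in> hom C (pls C (push C \<phi> Xs) (push C \<theta> Xs')) (pls C (push C \<psi> Ys) (push C \<rho> Ys'))"
    by (rule plsm_hom[OF a(3) a(6) push_dsj[OF o(1,3) a(1,4) d'(1)] push_dsj[OF o(2,4) a(2,5) d'(2)]])
  moreover have "injm (length Xs + length Xs') (psum (length Xs) \<phi> \<theta>)"
    "injm (length Ys + length Ys') (psum (length Ys) \<psi> \<rho>)"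
    using injm_psum a d' by blast+
  moreover have "push C (psum (length Xs) \<phi> \<theta>) (Xs @ Xs') = pls C (push C \<phi> Xs) (push C \<theta> Xs')"
    "push C (psum (length Ys) \<psi> \<rho>) (Ys @ Ys') = pls C (push C \<psi> Ys) (push C \<rho> Ys')"
    using push_psum o a d' by blast+
  ultimately show ?thesis
    by (simp add: ttens_def valid_iff)
qed

lemma srel_ttens:
  assumes o: "set Xs \<subseteq> ob C" "set Ys \<subseteq> ob C" "set Xs' \<subseteq> ob C" "set Ys' \<subseteq> ob C"
    and v: "valid C Xs Ys (\<psi>, f, \<phi>)" "valid C Xs' Ys' (\<rho>, g, \<theta>)"
      "valid C Xs Ys (\<psi>', f', \<phi>')" "valid C Xs' Ys' (\<rho>', g', \<theta>')"
    and s: "srel C Xs Ys (\<psi>, f, \<phi>) (\<psi>', f', \<phi>')" "srel C Xs' Ys' (\<rho>, g, \<theta>) (\<rho>', g', \<theta>')"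
    and d: "dj Xs Ys Xs' Ys' (\<psi>, f, \<phi>) (\<rho>, g, \<theta>)" "dj Xs Ys Xs' Ys' (\<psi>', f', \<phi>') (\<rho>', g', \<theta>')"
  shows "srel C (Xs @ Xs') (Ys @ Ys') (ttens Xs Ys (\<psi>, f, \<phi>) (\<rho>, g, \<theta>)) (ttens Xs Ys (\<psi>', f', \<phi>') (\<rho>', g', \<theta>'))"
proof -
  have a: "injm (length Xs) \<phi>" "injm (length Ys) \<psi>" "f \<in> hom C (push C \<phi> Xs) (push C \<psi> Ys)"
    "injm (length Xs') \<theta>" "injm (length Ys') \<rho>" "g \<in> hom C (push C \<theta> Xs') (push C \<rho> Ys')"
    "injm (length Xs) \<phi>'" "injm (length Ys) \<psi>'" "injm (length Xs') \<theta>'" "injm (length Ys') \<rho>'"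
    using v by (simp_all add: valid_iff)
  have d': "imm (length Xs) \<phi> \<inter> imm (length Xs') \<theta> = {}" "imm (length Ys) \<psi> \<inter> imm (length Ys') \<rho> = {}"
    "imm (length Xs) \<phi>' \<inter> imm (length Xs') \<theta>' = {}" "imm (length Ys) \<psi>' \<inter> imm (length Ys') \<rho>' = {}"
    using d by (simp_all add: dj_def)
  have ef: "f' = cmp C (pushm C \<psi>' \<psi> Ys) (cmp C f (pushm C \<phi> \<phi>' Xs))"
    and eg: "g' = cmp C (pushm C \<rho>' \<rho> Ys') (cmp C g (pushm C \<theta> \<theta>' Xs'))"
    using s by (simp_all add: srel_iff)
  have hA: "pushm C \<psi>' \<psi> Ys \<in> hom C (push C \<psi> Ys) (push C \<psi>' Ys)" using pushm_hom o a by blast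
  have hA': "pushm C \<rho>' \<rho> Ys' \<in> hom C (push C \<rho> Ys') (push C \<rho>' Ys')" using pushm_hom o a by blast
  have hB: "pushm C \<phi> \<phi>' Xs \<in> hom C (push C \<phi>' Xs) (push C \<phi> Xs)" using pushm_hom o a by blast
  have hB': "pushm C \<theta> \<theta>' Xs' \<in> hom C (push C \<theta>' Xs') (push C \<theta> Xs')" using pushm_hom o a by blast
  have hfB: "cmp C f (pushm C \<phi> \<phi>' Xs) \<in> hom C (push C \<phi>' Xs) (push C \<psi> Ys)" using cmp_hom[OF hB a(3)] .
  have hgB: "cmp C g (pushm C \<theta> \<theta>' Xs') \<in> hom C (push C \<theta>' Xs') (push C \<rho> Ys')" using cmp_hom[OF hB' a(6)] .
  have ds: "dsj C (push C \<phi> Xs) (push C \<theta> Xs')" "dsj C (push C \<psi> Ys) (push C \<rho> Ys')"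
    "dsj C (push C \<phi>' Xs) (push C \<theta>' Xs')" "dsj C (push C \<psi>' Ys) (push C \<rho>' Ys')"
    using push_dsj o a d' by blast+
  have i1: "plsm C f' g' = cmp C (plsm C (pushm C \<psi>' \<psi> Ys) (pushm C \<rho>' \<rho> Ys'))
      (plsm C (cmp C f (pushm C \<phi> \<phi>' Xs)) (cmp C g (pushm C \<theta> \<theta>' Xs')))"
    unfolding ef eg by (rule interchange[OF hfB hA hgB hA' ds(3) ds(2) ds(4)])
  have i2: "plsm C (cmp C f (pushm C \<phi> \<phi>' Xs)) (cmp C g (pushm C \<theta> \<theta>' Xs')) =
     cmp C (plsm C f g) (plsm C (pushm C \<phi> \<phi>' Xs) (pushm C \<theta> \<theta>' Xs'))"
    by (rule interchange[OF hB a(3) hB' a(6) ds(3) ds(1) ds(2)])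
  have p1: "pushm C (psum (length Ys) \<psi>' \<rho>') (psum (length Ys) \<psi> \<rho>) (Ys @ Ys') =
      plsm C (pushm C \<psi>' \<psi> Ys) (pushm C \<rho>' \<rho> Ys')"
    by (rule pushm_psum[OF o(2,4) a(2,5) d'(2) a(8,10) d'(4)])
  have p2: "pushm C (psum (length Xs) \<phi> \<theta>) (psum (length Xs) \<phi>' \<theta>') (Xs @ Xs') =
      plsm C (pushm C \<phi> \<phi>' Xs) (pushm C \<theta> \<theta>' Xs')"
    by (rule pushm_psum[OF o(1,3) a(7,9) d'(3) a(1,4) d'(1)])
  show ?thesis
    by (simp add: ttens_def srel_iff p1 p2 i1 i2)
qed

lemma tens_of_mk: "tens_of C (mk Xs Ys t0) (mk Xs' Ys' s0) (t, s) = mk (Xs @ Xs') (Ys @ Ys') (ttens Xs Ys t s)"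
  by (cases t; cases s) (simp add: tens_of_def mk_def ttens_def)

lemma tens_reps_mk: "(t, s) \<in> tens_reps (mk Xs Ys t0) (mk Xs' Ys' s0) \<longleftrightarrow>
    t \<in> cls C Xs Ys t0 \<and> s \<in> cls C Xs' Ys' s0 \<and> dj Xs Ys Xs' Ys' t s"
  by (cases t; cases s) (simp add: tens_reps_def mk_def dj_def)

lemma retg_parts: "fst (retg Xs Ys t \<psi>' \<phi>') = \<psi>'" "snd (snd (retg Xs Ys t \<psi>' \<phi>')) = \<phi>'"
  by (cases t; simp add: retg_def)+

lemma tens_reps_ne:
  assumes o: "set Xs \<subseteq> ob C" "set Ys \<subseteq> ob C" "set Xs' \<subseteq> ob C" "set Ys' \<subseteq> ob C"
    and v: "valid C Xs Ys t0" "valid C Xs' Ys' s0"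
  shows "(retg Xs Ys t0 (Ek 0) (Ek 0), retg Xs' Ys' s0 (Ek 1) (Ek 1)) \<in> tens_reps (mk Xs Ys t0) (mk Xs' Ys' s0)"
  unfolding tens_reps_mk
  using retg_mem[OF o(1,2) v(1) injm_Ek injm_Ek] retg_mem[OF o(3,4) v(2) injm_Ek injm_Ek]
  by (simp add: dj_def retg_parts Ek_disj)

lemma tens_wd:
  assumes o: "set Xs \<subseteq> ob C" "set Ys \<subseteq> ob C" "set Xs' \<subseteq> ob C" "set Ys' \<subseteq> ob C"
    and v: "valid C Xs Ys t0" "valid C Xs' Ys' s0"
    and p: "p \<in> tens_reps (mk Xs Ys t0) (mk Xs' Ys' s0)" "p' \<in> tens_reps (mk Xs Ys t0) (mk Xs' Ys' s0)"
  shows "tens_of C (mk Xs Ys t0) (mk Xs' Ys' s0) p = tens_of C (mk Xs Ys t0) (mk Xs' Ys' s0) p'"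
proof -
  obtain \<psi> f \<phi> \<rho> g \<theta> where P: "p = ((\<psi>, f, \<phi>), (\<rho>, g, \<theta>))" by (cases p) auto
  obtain \<psi>' f' \<phi>' \<rho>' g' \<theta>' where P': "p' = ((\<psi>', f', \<phi>'), (\<rho>', g', \<theta>'))" by (cases p') auto
  have m: "(\<psi>, f, \<phi>) \<in> cls C Xs Ys t0" "(\<rho>, g, \<theta>) \<in> cls C Xs' Ys' s0" "dj Xs Ys Xs' Ys' (\<psi>, f, \<phi>) (\<rho>, g, \<theta>)"
    "(\<psi>', f', \<phi>') \<in> cls C Xs Ys t0" "(\<rho>', g', \<theta>') \<in> cls C Xs' Ys' s0" "dj Xs Ys Xs' Ys' (\<psi>', f', \<phi>') (\<rho>', g', \<theta>')"
    using p P P' by (simp_all add: tens_reps_mk)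
  have va: "valid C Xs Ys (\<psi>, f, \<phi>)" "valid C Xs' Ys' (\<rho>, g, \<theta>)" "valid C Xs Ys (\<psi>', f', \<phi>')" "valid C Xs' Ys' (\<rho>', g', \<theta>')"
    using m by (simp_all add: cls_mem)
  have sr: "srel C Xs Ys (\<psi>, f, \<phi>) (\<psi>', f', \<phi>')" "srel C Xs' Ys' (\<rho>, g, \<theta>) (\<rho>', g', \<theta>')"
    using mem_srel[OF o(1,2) v(1) m(1) m(4)] mem_srel[OF o(3,4) v(2) m(2) m(5)] .
  have oo: "set (Xs @ Xs') \<subseteq> ob C" "set (Ys @ Ys') \<subseteq> ob C" using o by auto
  show ?thesis unfolding P P' tens_of_mk
    by (rule mk_eq[OF oo valid_ttens[OF o va(1,2) m(3)] valid_ttens[OF o va(3,4) m(6)]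
         srel_ttens[OF o va sr m(3) m(6)]])
qed

lemma sigma_tens_any:
  assumes o: "set Xs \<subseteq> ob C" "set Ys \<subseteq> ob C" "set Xs' \<subseteq> ob C" "set Ys' \<subseteq> ob C"
    and v: "valid C Xs Ys t0" "valid C Xs' Ys' s0"
    and p: "p \<in> tens_reps (mk Xs Ys t0) (mk Xs' Ys' s0)"
  shows "sigma_tens C (mk Xs Ys t0) (mk Xs' Ys' s0) = tens_of C (mk Xs Ys t0) (mk Xs' Ys' s0) p"
proof -
  have "(SOME p. p \<in> tens_reps (mk Xs Ys t0) (mk Xs' Ys' s0)) \<in> tens_reps (mk Xs Ys t0) (mk Xs' Ys' s0)"
    using p by (rule someI)
  then show ?thesis unfolding sigma_tens_def using tens_wd[OF o v _ p] by blast
qed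

lemma tens_mk:
  assumes o: "set Xs \<subseteq> ob C" "set Ys \<subseteq> ob C" "set Xs' \<subseteq> ob C" "set Ys' \<subseteq> ob C"
    and v: "valid C Xs Ys t" "valid C Xs' Ys' s" and d: "dj Xs Ys Xs' Ys' t s"
  shows "sigma_tens C (mk Xs Ys t) (mk Xs' Ys' s) = mk (Xs @ Xs') (Ys @ Ys') (ttens Xs Ys t s)"
proof -
  have "(t, s) \<in> tens_reps (mk Xs Ys t) (mk Xs' Ys' s)"
    unfolding tens_reps_mk using self_mem[OF o(1,2) v(1)] self_mem[OF o(3,4) v(2)] d by simp
  then show ?thesis using sigma_tens_any[OF o v] tens_of_mk by simp
qed

end

lemma psum_assoc: "psum (m + n) (psum m \<phi> \<theta>) \<kappa> = psum m \<phi> (psum n \<theta> \<kappa>)"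
  by (auto simp: psum_def fun_eq_iff)

lemma phibar_0: "phibar m 0 \<phi> = \<phi>" by (simp add: phibar_def fun_eq_iff)

lemma phibar_psum_swap: "i < m' + m \<Longrightarrow> phibar m m' (psum m \<phi> \<theta>) i = psum m' \<theta> \<phi> i"
  by (auto simp: phibar_def psum_def fun_eq_iff)

lemma phibar_phibar: "i < m + n \<Longrightarrow> phibar n m (phibar m n \<phi>) i = \<phi> i"
  by (auto simp: phibar_def fun_eq_iff)

lemma injm_phibar: "injm (m + n) \<phi> \<Longrightarrow> injm (n + m) (phibar m n \<phi>)"
proof -
  assume a: "injm (m + n) \<phi>"
  have "injm n (\<lambda>i. \<phi> (i + m))" using injm_shift[OF a, of m n] by simp
  moreover have "injm m \<phi>" using injm_mono[OF a] by simp
  moreover have "imm n (\<lambda>i. \<phi> (i + m)) \<inter> imm m \<phi> = {}"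
    unfolding imm_shift imm_rng by (rule injm_rng_disj[OF a]) auto
  ultimately show ?thesis unfolding phibar_psum by (rule injm_psum)
qed

lemma imm_phibar: "imm (n + m) (phibar m n \<phi>) = imm (m + n) \<phi>"
proof -
  have "imm (n + m) (phibar m n \<phi>) = imm n (\<lambda>i. \<phi> (i + m)) \<union> imm m \<phi>"
    unfolding phibar_psum by (rule imm_psum)
  also have "\<dots> = rng \<phi> ({m..<m+n} \<union> {..<m})" by (simp add: imm_shift imm_rng rng_def)
  also have "{m..<m+n} \<union> {..<m} = {..<m+n}" by auto
  finally show ?thesis by (simp add: imm_rng)
qed

context ps begin

lemma push_phibar:
  assumes o: "set Xs \<subseteq> ob C" "set Ys \<subseteq> ob C" and i: "injm (length Xs + length Ys) \<phi>"
  shows "push C (phibar (length Xs) (length Ys) \<phi>) (Ys @ Xs) = push C \<phi> (Xs @ Ys)"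
proof -
  let ?m = "length Xs" and ?n = "length Ys"
  have i1: "injm ?n (\<lambda>i. \<phi> (i + ?m))" using injm_shift[OF i, of ?m ?n] by simp
  have i2: "injm ?m \<phi>" using injm_mono[OF i] by simp
  have d: "imm ?n (\<lambda>i. \<phi> (i + ?m)) \<inter> imm ?m \<phi> = {}"
    unfolding imm_shift imm_rng by (rule injm_rng_disj[OF i]) auto
  have "push C (phibar ?m ?n \<phi>) (Ys @ Xs) = pls C (push C (\<lambda>i. \<phi> (i + ?m)) Ys) (push C \<phi> Xs)"
    unfolding phibar_psum by (rule push_psum[OF o(2,1) i1 i2 d])
  also have "\<dots> = pls C (push C \<phi> Xs) (push C (\<lambda>i. \<phi> (i + ?m)) Ys)"
    by (rule pls_comm[OF push_ob[OF o(2) i1] push_ob[OF o(1) i2] push_dsj[OF o(2,1) i1 i2 d]])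
  also have "\<dots> = push C \<phi> (Xs @ Ys)" using push_append[OF o i] by simp
  finally show ?thesis .
qed

lemma pushm_phibar:
  assumes o: "set Xs \<subseteq> ob C" "set Ys \<subseteq> ob C" and i: "injm (length Xs + length Ys) \<phi>"
    and i': "injm (length Xs + length Ys) \<phi>'"
  shows "pushm C (phibar (length Xs) (length Ys) \<phi>') (phibar (length Xs) (length Ys) \<phi>) (Ys @ Xs) = pushm C \<phi>' \<phi> (Xs @ Ys)"
proof -
  let ?m = "length Xs" and ?n = "length Ys"
  have i1: "injm ?n (\<lambda>i. \<phi> (i + ?m))" using injm_shift[OF i, of ?m ?n] by simp
  have i2: "injm ?m \<phi>" using injm_mono[OF i] by simp
  have d: "imm ?n (\<lambda>i. \<phi> (i + ?m)) \<inter> imm ?m \<phi> = {}"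
    unfolding imm_shift imm_rng by (rule injm_rng_disj[OF i]) auto
  have i1': "injm ?n (\<lambda>i. \<phi>' (i + ?m))" using injm_shift[OF i', of ?m ?n] by simp
  have i2': "injm ?m \<phi>'" using injm_mono[OF i'] by simp
  have d': "imm ?n (\<lambda>i. \<phi>' (i + ?m)) \<inter> imm ?m \<phi>' = {}"
    unfolding imm_shift imm_rng by (rule injm_rng_disj[OF i']) auto
  have "pushm C (phibar ?m ?n \<phi>') (phibar ?m ?n \<phi>) (Ys @ Xs) =
      plsm C (pushm C (\<lambda>i. \<phi>' (i + ?m)) (\<lambda>i. \<phi> (i + ?m)) Ys) (pushm C \<phi>' \<phi> Xs)"
    unfolding phibar_psum by (rule pushm_psum[OF o(2,1) i1 i2 d i1' i2' d'])
  also have "\<dots> = plsm C (pushm C \<phi>' \<phi> Xs) (pushm C (\<lambda>i. \<phi>' (i + ?m)) (\<lambda>i. \<phi> (i + ?m)) Ys)"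
    by (rule plsm_comm[OF pushm_hom[OF o(2) i1 i1'] pushm_hom[OF o(1) i2 i2']
          push_dsj[OF o(2,1) i1 i2 d] push_dsj[OF o(2,1) i1' i2' d']])
  also have "\<dots> = pushm C \<phi>' \<phi> (Xs @ Ys)" using pushm_append[OF o i i'] by simp
  finally show ?thesis .
qed

lemma tau_valid:
  assumes o: "set Xs \<subseteq> ob C" "set Ys \<subseteq> ob C" and i: "injm (length Xs + length Ys) \<phi>"
  shows "valid C (Xs @ Ys) (Ys @ Xs) (phibar (length Xs) (length Ys) \<phi>, idn C (push C \<phi> (Xs @ Ys)), \<phi>)"
  using i injm_phibar[OF i] push_phibar[OF o i] push_ob[of "Xs @ Ys" \<phi>] o
  by (simp add: valid_iff idn_hom add.commute)

lemma tau_of_mk: "tau_of C Xs Ys \<phi> = mk (Xs @ Ys) (Ys @ Xs) (phibar (length Xs) (length Ys) \<phi>, idn C (push C \<phi> (Xs @ Ys)), \<phi>)"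
  by (simp add: tau_of_def mk_def)

lemma tau_wd:
  assumes o: "set Xs \<subseteq> ob C" "set Ys \<subseteq> ob C" and i: "injm (length Xs + length Ys) \<phi>"
    and i': "injm (length Xs + length Ys) \<phi>'"
  shows "tau_of C Xs Ys \<phi> = tau_of C Xs Ys \<phi>'"
proof -
  have oo: "set (Xs @ Ys) \<subseteq> ob C" "set (Ys @ Xs) \<subseteq> ob C" using o by auto
  have ii: "injm (length (Xs @ Ys)) \<phi>" "injm (length (Xs @ Ys)) \<phi>'" using i i' by simp_all
  have "srel C (Xs @ Ys) (Ys @ Xs) (phibar (length Xs) (length Ys) \<phi>, idn C (push C \<phi> (Xs @ Ys)), \<phi>)
      (phibar (length Xs) (length Ys) \<phi>', idn C (push C \<phi>' (Xs @ Ys)), \<phi>')"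
    unfolding srel_iff pushm_phibar[OF o i i'] using oo ii by (simp add: pcat)
  then show ?thesis unfolding tau_of_mk by (rule mk_eq[OF oo tau_valid[OF o i] tau_valid[OF o i']])
qed

lemma mk_rerep:
  assumes o: "set Xs \<subseteq> ob C" "set Ys \<subseteq> ob C" and v: "valid C Xs Ys t"
    and i: "injm (length Xs) \<phi>'" "injm (length Ys) \<psi>'"
  obtains f' where "mk Xs Ys t = mk Xs Ys (\<psi>', f', \<phi>')" "valid C Xs Ys (\<psi>', f', \<phi>')"
proof -
  obtain a b c where r: "retg Xs Ys t \<psi>' \<phi>' = (a, b, c)" by (cases "retg Xs Ys t \<psi>' \<phi>'")
  have ac: "a = \<psi>'" "c = \<phi>'" using retg_parts[of Xs Ys t \<psi>' \<phi>'] r by simp_all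
  have "mk Xs Ys t = mk Xs Ys (\<psi>', b, \<phi>')" "valid C Xs Ys (\<psi>', b, \<phi>')"
    using mk_retg[OF o v i] retg_valid[OF o v i] r ac by simp_all
  then show ?thesis by (rule that)
qed

lemma SC_ar_rep:
  assumes "a \<in> ar SC" "\<And>n. injm n \<phi>'" "\<And>n. injm n \<psi>'"
  obtains Xs Ys f where "a = mk Xs Ys (\<psi>', f, \<phi>')" "set Xs \<subseteq> ob C" "set Ys \<subseteq> ob C" "valid C Xs Ys (\<psi>', f, \<phi>')"
proof -
  obtain Xs Ys t where A: "a = mk Xs Ys t" "set Xs \<subseteq> ob C" "set Ys \<subseteq> ob C" "valid C Xs Ys t"
    using assms(1) unfolding SC_ar by blast
  obtain f where "mk Xs Ys t = mk Xs Ys (\<psi>', f, \<phi>')" "valid C Xs Ys (\<psi>', f, \<phi>')"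
    using mk_rerep[OF A(2,3,4) assms(2) assms(3)] .
  then show ?thesis using that A by auto
qed

lemma dj_E: "k \<noteq> k' \<Longrightarrow> k < 3 \<Longrightarrow> k' < 3 \<Longrightarrow> dj Xs Ys Xs' Ys' (Ek k, f, Ek k) (Ek k', g, Ek k')"
  by (simp add: dj_def Ek_disj)

lemma tens_E:
  assumes o: "set Xs \<subseteq> ob C" "set Ys \<subseteq> ob C" "set Xs' \<subseteq> ob C" "set Ys' \<subseteq> ob C"
    and v: "valid C Xs Ys (Ek k, f, Ek k)" "valid C Xs' Ys' (Ek k', g, Ek k')" and k: "k \<noteq> k'" "k < 3" "k' < 3"
  shows "sigma_tens C (mk Xs Ys (Ek k, f, Ek k)) (mk Xs' Ys' (Ek k', g, Ek k')) =
     mk (Xs @ Xs') (Ys @ Ys') (psum (length Ys) (Ek k) (Ek k'), plsm C f g, psum (length Xs) (Ek k) (Ek k'))"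
  using tens_mk[OF o v dj_E[OF k]] by (simp add: ttens_def)

lemma tens_E_valid:
  assumes o: "set Xs \<subseteq> ob C" "set Ys \<subseteq> ob C" "set Xs' \<subseteq> ob C" "set Ys' \<subseteq> ob C"
    and v: "valid C Xs Ys (Ek k, f, Ek k)" "valid C Xs' Ys' (Ek k', g, Ek k')" and k: "k \<noteq> k'" "k < 3" "k' < 3"
  shows "valid C (Xs @ Xs') (Ys @ Ys') (psum (length Ys) (Ek k) (Ek k'), plsm C f g, psum (length Xs) (Ek k) (Ek k'))"
  using valid_ttens[OF o v dj_E[OF k]] by (simp add: ttens_def)

subsection \<open>Permutative structure: basic axioms\<close>

lemma P_tens_hom: "f \<in> ar SC \<Longrightarrow> g \<in> ar SC \<Longrightarrow>
   sigma_tens C f g \<in> hom SC (dm SC f @ dm SC g) (cd SC f @ cd SC g)"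
proof -
  assume f: "f \<in> ar SC" and g: "g \<in> ar SC"
  obtain Xs Ys a where F: "f = mk Xs Ys (Ek 0, a, Ek 0)" "set Xs \<subseteq> ob C" "set Ys \<subseteq> ob C" "valid C Xs Ys (Ek 0, a, Ek 0)"
    using SC_ar_rep[OF f injm_Ek injm_Ek] .
  obtain Xs' Ys' b where G: "g = mk Xs' Ys' (Ek 1, b, Ek 1)" "set Xs' \<subseteq> ob C" "set Ys' \<subseteq> ob C" "valid C Xs' Ys' (Ek 1, b, Ek 1)"
    using SC_ar_rep[OF g injm_Ek injm_Ek] .
  have o: "set (Xs @ Xs') \<subseteq> ob C" "set (Ys @ Ys') \<subseteq> ob C" using F G by auto
  have eq: "sigma_tens C f g = mk (Xs @ Xs') (Ys @ Ys') (psum (length Ys) (Ek 0) (Ek 1), plsm C a b, psum (length Xs) (Ek 0) (Ek 1))"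
    unfolding F(1) G(1) by (rule tens_E[OF F(2,3) G(2,3) F(4) G(4)]) simp_all
  have v: "valid C (Xs @ Xs') (Ys @ Ys') (psum (length Ys) (Ek 0) (Ek 1), plsm C a b, psum (length Xs) (Ek 0) (Ek 1))"
    by (rule tens_E_valid[OF F(2,3) G(2,3) F(4) G(4)]) simp_all
  show ?thesis unfolding eq unfolding F(1) G(1) SC_dm_mk by (rule mk_hom[OF o v])
qed

lemma idn_E: "set Xs \<subseteq> ob C \<Longrightarrow> idn SC Xs = mk Xs Xs (Ek k, idn C (push C (Ek k) Xs), Ek k)"
  by (rule idn_mk[OF _ injm_Ek])

lemma idn_E_valid: "set Xs \<subseteq> ob C \<Longrightarrow> valid C Xs Xs (Ek k, idn C (push C (Ek k) Xs), Ek k)"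
  using injm_Ek by (simp add: valid_iff idn_hom push_ob)

lemma P_tens_idn: "set Xs \<subseteq> ob C \<Longrightarrow> set Ys \<subseteq> ob C \<Longrightarrow> sigma_tens C (idn SC Xs) (idn SC Ys) = idn SC (Xs @ Ys)"
proof -
  assume o: "set Xs \<subseteq> ob C" "set Ys \<subseteq> ob C"
  let ?p = "psum (length Xs) (Ek 0) (Ek 1)"
  have ip: "injm (length (Xs @ Ys)) ?p" using injm_psum[OF injm_Ek injm_Ek Ek_disj, of 0 1] by simp
  have d: "dsj C (push C (Ek 0) Xs) (push C (Ek 1) Ys)" using push_dsj[OF o injm_Ek injm_Ek Ek_disj] by simp
  have pp: "push C ?p (Xs @ Ys) = pls C (push C (Ek 0) Xs) (push C (Ek 1) Ys)"
    using push_psum[OF o injm_Ek injm_Ek Ek_disj] by simp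
  have "sigma_tens C (idn SC Xs) (idn SC Ys) = mk (Xs @ Ys) (Xs @ Ys) (?p, plsm C (idn C (push C (Ek 0) Xs)) (idn C (push C (Ek 1) Ys)), ?p)"
    unfolding idn_E[OF o(1), of 0] idn_E[OF o(2), of 1]
    by (rule tens_E[OF o(1) o(1) o(2) o(2) idn_E_valid[OF o(1)] idn_E_valid[OF o(2)]]) simp_all
  also have "plsm C (idn C (push C (Ek 0) Xs)) (idn C (push C (Ek 1) Ys)) = idn C (push C ?p (Xs @ Ys))"
    unfolding pp using plsm_idn[OF push_ob[OF o(1) injm_Ek] push_ob[OF o(2) injm_Ek] d] .
  also have "mk (Xs @ Ys) (Xs @ Ys) (?p, idn C (push C ?p (Xs @ Ys)), ?p) = idn SC (Xs @ Ys)"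
    using idn_mk[of "Xs @ Ys" ?p] o ip by simp
  finally show ?thesis .
qed

lemma P_interchange:
  assumes f: "f \<in> ar SC" and g: "g \<in> ar SC" and f': "f' \<in> ar SC" and g': "g' \<in> ar SC"
    and ff: "dm SC f' = cd SC f" and gg: "dm SC g' = cd SC g"
  shows "sigma_tens C (cmp SC f' f) (cmp SC g' g) = cmp SC (sigma_tens C f' g') (sigma_tens C f g)"
proof -
  obtain Xs Ys a where F: "f = mk Xs Ys (Ek 0, a, Ek 0)" "set Xs \<subseteq> ob C" "set Ys \<subseteq> ob C" "valid C Xs Ys (Ek 0, a, Ek 0)"
    using SC_ar_rep[OF f injm_Ek injm_Ek] .
  obtain Xs' Ys' b where G: "g = mk Xs' Ys' (Ek 1, b, Ek 1)" "set Xs' \<subseteq> ob C" "set Ys' \<subseteq> ob C" "valid C Xs' Ys' (Ek 1, b, Ek 1)"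
    using SC_ar_rep[OF g injm_Ek injm_Ek] .
  obtain Ys1 Zs a' where F': "f' = mk Ys1 Zs (Ek 0, a', Ek 0)" "set Ys1 \<subseteq> ob C" "set Zs \<subseteq> ob C" "valid C Ys1 Zs (Ek 0, a', Ek 0)"
    using SC_ar_rep[OF f' injm_Ek injm_Ek] .
  obtain Ys1' Zs' b' where G': "g' = mk Ys1' Zs' (Ek 1, b', Ek 1)" "set Ys1' \<subseteq> ob C" "set Zs' \<subseteq> ob C" "valid C Ys1' Zs' (Ek 1, b', Ek 1)"
    using SC_ar_rep[OF g' injm_Ek injm_Ek] .
  have Y: "Ys1 = Ys" "Ys1' = Ys'" using ff gg F(1) G(1) F'(1) G'(1) by (simp_all add: SC_dm_mk)
  note F' = F'[unfolded Y] and G' = G'[unfolded Y]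
  have va: "a \<in> hom C (push C (Ek 0) Xs) (push C (Ek 0) Ys)" "a' \<in> hom C (push C (Ek 0) Ys) (push C (Ek 0) Zs)"
    "b \<in> hom C (push C (Ek 1) Xs') (push C (Ek 1) Ys')" "b' \<in> hom C (push C (Ek 1) Ys') (push C (Ek 1) Zs')"
    using F(4) G(4) F'(4) G'(4) by (simp_all add: valid_iff)
  have ca: "cmp SC f' f = mk Xs Zs (Ek 0, cmp C a' a, Ek 0)"
    unfolding F(1) F'(1) cmp_mk[OF F(2,3) F'(3) F(4) F'(4)] tcomp_def
    using F(3) va injm_Ek by (simp add: pushm_id idl hom_def)
  have cb: "cmp SC g' g = mk Xs' Zs' (Ek 1, cmp C b' b, Ek 1)"
    unfolding G(1) G'(1) cmp_mk[OF G(2,3) G'(3) G(4) G'(4)] tcomp_def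
    using G(3) va injm_Ek by (simp add: pushm_id idl hom_def)
  have vca: "valid C Xs Zs (Ek 0, cmp C a' a, Ek 0)" using va injm_Ek by (simp add: valid_iff cmp_hom)
  have vcb: "valid C Xs' Zs' (Ek 1, cmp C b' b, Ek 1)" using va injm_Ek by (simp add: valid_iff cmp_hom)
  have ds: "dsj C (push C (Ek 0) Xs) (push C (Ek 1) Xs')" "dsj C (push C (Ek 0) Ys) (push C (Ek 1) Ys')"
    "dsj C (push C (Ek 0) Zs) (push C (Ek 1) Zs')"
    using push_dsj[OF _ _ injm_Ek injm_Ek Ek_disj] F G F' G' by simp_all
  have l: "sigma_tens C (cmp SC f' f) (cmp SC g' g) =
     mk (Xs @ Xs') (Zs @ Zs') (psum (length Zs) (Ek 0) (Ek 1), plsm C (cmp C a' a) (cmp C b' b), psum (length Xs) (Ek 0) (Ek 1))"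
    unfolding ca cb by (rule tens_E[OF F(2) F'(3) G(2) G'(3) vca vcb]) simp_all
  have t1: "sigma_tens C f g = mk (Xs @ Xs') (Ys @ Ys') (psum (length Ys) (Ek 0) (Ek 1), plsm C a b, psum (length Xs) (Ek 0) (Ek 1))"
    unfolding F(1) G(1) by (rule tens_E[OF F(2,3) G(2,3) F(4) G(4)]) simp_all
  have t2: "sigma_tens C f' g' = mk (Ys @ Ys') (Zs @ Zs') (psum (length Zs) (Ek 0) (Ek 1), plsm C a' b', psum (length Ys) (Ek 0) (Ek 1))"
    unfolding F'(1) G'(1) by (rule tens_E[OF F'(2,3) G'(2,3) F'(4) G'(4)]) simp_all
  have v1: "valid C (Xs @ Xs') (Ys @ Ys') (psum (length Ys) (Ek 0) (Ek 1), plsm C a b, psum (length Xs) (Ek 0) (Ek 1))"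
    by (rule tens_E_valid[OF F(2,3) G(2,3) F(4) G(4)]) simp_all
  have v2: "valid C (Ys @ Ys') (Zs @ Zs') (psum (length Zs) (Ek 0) (Ek 1), plsm C a' b', psum (length Ys) (Ek 0) (Ek 1))"
    by (rule tens_E_valid[OF F'(2,3) G'(2,3) F'(4) G'(4)]) simp_all
  have oo: "set (Xs @ Xs') \<subseteq> ob C" "set (Ys @ Ys') \<subseteq> ob C" "set (Zs @ Zs') \<subseteq> ob C" using F G F' G' by auto
  have ip: "injm (length (Ys @ Ys')) (psum (length Ys) (Ek 0) (Ek 1))"
    using injm_psum[OF injm_Ek injm_Ek Ek_disj, of 0 1] by simp
  have r: "cmp SC (sigma_tens C f' g') (sigma_tens C f g) =
     mk (Xs @ Xs') (Zs @ Zs') (psum (length Zs) (Ek 0) (Ek 1), cmp C (plsm C a' b') (plsm C a b), psum (length Xs) (Ek 0) (Ek 1))"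
    unfolding t1 t2 cmp_mk[OF oo v1 v2] tcomp_def using v1 oo ip
    by (simp add: pushm_id idl valid_iff hom_def)
  show ?thesis unfolding l r using interchange[OF va(1,2,3,4) ds] by simp
qed

lemma P_unit:
  assumes f: "f \<in> ar SC"
  shows "sigma_tens C (idn SC []) f = f" "sigma_tens C f (idn SC []) = f"
proof -
  obtain Xs Ys a where F: "f = mk Xs Ys (Ek 0, a, Ek 0)" "set Xs \<subseteq> ob C" "set Ys \<subseteq> ob C" "valid C Xs Ys (Ek 0, a, Ek 0)"
    using SC_ar_rep[OF f injm_Ek injm_Ek] .
  have a: "a \<in> ar C" using F(4) by (simp add: valid_iff hom_def)
  have e: "set [] \<subseteq> ob C" by simp
  have i1: "idn SC [] = mk [] [] (Ek 1, idn C (zer C), Ek 1)" using idn_E[OF e, of 1] by (simp add: push_Nil)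
  have vi: "valid C [] [] (Ek 1, idn C (zer C), Ek 1)" using idn_E_valid[OF e, of 1] by (simp add: push_Nil)
  show "sigma_tens C (idn SC []) f = f"
    unfolding i1 F(1) using tens_E[OF e e F(2,3) vi F(4), of ] a
    by (simp add: psum_0 plsm_zer)
  have "sigma_tens C f (idn SC []) = mk Xs Ys (psum (length Ys) (Ek 0) (Ek 1), a, psum (length Xs) (Ek 0) (Ek 1))"
    unfolding i1 F(1) using tens_E[OF F(2,3) e e F(4) vi] a by (simp add: plsm_zer)
  also have "\<dots> = mk Xs Ys (Ek 0, a, Ek 0)"
    by (rule mk_cong[OF F(2,3,4)]) (simp_all add: psum_lt)
  finally show "sigma_tens C f (idn SC []) = f" using F(1) by simp
qed

lemma P_assoc:
  assumes f: "f \<in> ar SC" and g: "g \<in> ar SC" and h: "h \<in> ar SC"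
  shows "sigma_tens C (sigma_tens C f g) h = sigma_tens C f (sigma_tens C g h)"
proof -
  obtain Xs Ys a where F: "f = mk Xs Ys (Ek 0, a, Ek 0)" "set Xs \<subseteq> ob C" "set Ys \<subseteq> ob C" "valid C Xs Ys (Ek 0, a, Ek 0)"
    using SC_ar_rep[OF f injm_Ek injm_Ek] .
  obtain Xs' Ys' b where G: "g = mk Xs' Ys' (Ek 1, b, Ek 1)" "set Xs' \<subseteq> ob C" "set Ys' \<subseteq> ob C" "valid C Xs' Ys' (Ek 1, b, Ek 1)"
    using SC_ar_rep[OF g injm_Ek injm_Ek] .
  obtain Xs'' Ys'' c where H: "h = mk Xs'' Ys'' (Ek 2, c, Ek 2)" "set Xs'' \<subseteq> ob C" "set Ys'' \<subseteq> ob C" "valid C Xs'' Ys'' (Ek 2, c, Ek 2)"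
    using SC_ar_rep[OF h injm_Ek injm_Ek] .
  have va: "a \<in> hom C (push C (Ek 0) Xs) (push C (Ek 0) Ys)" "b \<in> hom C (push C (Ek 1) Xs') (push C (Ek 1) Ys')"
    "c \<in> hom C (push C (Ek 2) Xs'') (push C (Ek 2) Ys'')"
    using F(4) G(4) H(4) by (simp_all add: valid_iff)
  have fg: "sigma_tens C f g = mk (Xs @ Xs') (Ys @ Ys') (psum (length Ys) (Ek 0) (Ek 1), plsm C a b, psum (length Xs) (Ek 0) (Ek 1))"
    unfolding F(1) G(1) by (rule tens_E[OF F(2,3) G(2,3) F(4) G(4)]) simp_all
  have vfg: "valid C (Xs @ Xs') (Ys @ Ys') (psum (length Ys) (Ek 0) (Ek 1), plsm C a b, psum (length Xs) (Ek 0) (Ek 1))"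
    by (rule tens_E_valid[OF F(2,3) G(2,3) F(4) G(4)]) simp_all
  have gh: "sigma_tens C g h = mk (Xs' @ Xs'') (Ys' @ Ys'') (psum (length Ys') (Ek 1) (Ek 2), plsm C b c, psum (length Xs') (Ek 1) (Ek 2))"
    unfolding G(1) H(1) by (rule tens_E[OF G(2,3) H(2,3) G(4) H(4)]) simp_all
  have vgh: "valid C (Xs' @ Xs'') (Ys' @ Ys'') (psum (length Ys') (Ek 1) (Ek 2), plsm C b c, psum (length Xs') (Ek 1) (Ek 2))"
    by (rule tens_E_valid[OF G(2,3) H(2,3) G(4) H(4)]) simp_all
  have d1: "dj (Xs @ Xs') (Ys @ Ys') Xs'' Ys'' (psum (length Ys) (Ek 0) (Ek 1), plsm C a b, psum (length Xs) (Ek 0) (Ek 1)) (Ek 2, c, Ek 2)"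
    by (simp add: dj_def imm_psum Int_Un_distrib2 Ek_disj)
  have d2: "dj Xs Ys (Xs' @ Xs'') (Ys' @ Ys'') (Ek 0, a, Ek 0) (psum (length Ys') (Ek 1) (Ek 2), plsm C b c, psum (length Xs') (Ek 1) (Ek 2))"
    by (simp add: dj_def imm_psum Int_Un_distrib Ek_disj)
  have o2: "set (Xs @ Xs') \<subseteq> ob C" "set (Ys @ Ys') \<subseteq> ob C" "set (Xs' @ Xs'') \<subseteq> ob C" "set (Ys' @ Ys'') \<subseteq> ob C"
    using F G H by auto
  have dd: "dsj C (push C (Ek 0) Xs) (push C (Ek 1) Xs')" "dsj C (push C (Ek 0) Ys) (push C (Ek 1) Ys')"
    "dsj C (push C (Ek 0) Xs) (push C (Ek 2) Xs'')" "dsj C (push C (Ek 0) Ys) (push C (Ek 2) Ys'')"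
    "dsj C (push C (Ek 1) Xs') (push C (Ek 2) Xs'')" "dsj C (push C (Ek 1) Ys') (push C (Ek 2) Ys'')"
    using push_dsj[OF _ _ injm_Ek injm_Ek Ek_disj] F G H by simp_all
  have "sigma_tens C (sigma_tens C f g) h = mk ((Xs @ Xs') @ Xs'') ((Ys @ Ys') @ Ys'')
      (psum (length Ys + length Ys') (psum (length Ys) (Ek 0) (Ek 1)) (Ek 2), plsm C (plsm C a b) c,
       psum (length Xs + length Xs') (psum (length Xs) (Ek 0) (Ek 1)) (Ek 2))"
    unfolding fg H(1) using tens_mk[OF o2(1,2) H(2,3) vfg H(4) d1] by (simp add: ttens_def)
  also have "\<dots> = mk (Xs @ (Xs' @ Xs'')) (Ys @ (Ys' @ Ys''))
      (psum (length Ys) (Ek 0) (psum (length Ys') (Ek 1) (Ek 2)), plsm C a (plsm C b c),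
       psum (length Xs) (Ek 0) (psum (length Xs') (Ek 1) (Ek 2)))"
    using plsm_assoc[OF va dd] by (simp add: psum_assoc)
  also have "\<dots> = sigma_tens C f (sigma_tens C g h)"
    unfolding gh F(1) using tens_mk[OF F(2,3) o2(3,4) F(4) vgh d2] by (simp add: ttens_def)
  finally show ?thesis .
qed

lemma P_tau_hom: "set Xs \<subseteq> ob C \<Longrightarrow> set Ys \<subseteq> ob C \<Longrightarrow> sigma_tau C Xs Ys \<in> hom SC (Xs @ Ys) (Ys @ Xs)"
  unfolding sigma_tau_def tau_of_mk
  by (rule mk_hom) (auto intro: tau_valid injm_phi0)

lemma P_tau_unit: "set Xs \<subseteq> ob C \<Longrightarrow> sigma_tau C Xs [] = idn SC Xs"
  unfolding sigma_tau_def tau_of_mk by (simp add: phibar_0 SC_simps)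

end

lemma psum_shift_self: "psum k \<phi> (\<lambda>i. \<phi> (i + k)) = \<phi>"
  by (auto simp: psum_def fun_eq_iff)

lemma hex_e2: "psum b (\<lambda>i. \<phi> (i + a)) (psum a \<phi> (\<lambda>i. \<phi> (i + (a + b)))) =
    psum (b + a) (phibar a b \<phi>) (\<lambda>i. \<phi> (i + (a + b)))"
  by (auto simp: psum_def phibar_def fun_eq_iff)

lemma hex_h2: "i < b + c + a \<Longrightarrow>
   psum b (\<lambda>i. \<phi> (i + a)) (phibar a c (psum a \<phi> (\<lambda>i. \<phi> (i + (a + b))))) i = phibar a (b + c) \<phi> i"
  by (auto simp: psum_def phibar_def fun_eq_iff)

context ps begin

lemma P_nat:
  assumes f: "f \<in> ar SC" and g: "g \<in> ar SC"
  shows "cmp SC (sigma_tau C (cd SC f) (cd SC g)) (sigma_tens C f g) =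
         cmp SC (sigma_tens C g f) (sigma_tau C (dm SC f) (dm SC g))"
proof -
  obtain Xs Ys a where F: "f = mk Xs Ys (Ek 0, a, Ek 0)" "set Xs \<subseteq> ob C" "set Ys \<subseteq> ob C" "valid C Xs Ys (Ek 0, a, Ek 0)"
    using SC_ar_rep[OF f injm_Ek injm_Ek] .
  obtain Xs' Ys' b where G: "g = mk Xs' Ys' (Ek 1, b, Ek 1)" "set Xs' \<subseteq> ob C" "set Ys' \<subseteq> ob C" "valid C Xs' Ys' (Ek 1, b, Ek 1)"
    using SC_ar_rep[OF g injm_Ek injm_Ek] .
  let ?m = "length Xs" and ?m' = "length Xs'" and ?n = "length Ys" and ?n' = "length Ys'"
  let ?pY = "psum ?n (Ek 0) (Ek 1)" and ?pX = "psum ?m (Ek 0) (Ek 1)"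
  let ?qY = "psum ?n' (Ek 1) (Ek 0)" and ?qX = "psum ?m' (Ek 1) (Ek 0)"
  have va: "a \<in> hom C (push C (Ek 0) Xs) (push C (Ek 0) Ys)" "b \<in> hom C (push C (Ek 1) Xs') (push C (Ek 1) Ys')"
    using F(4) G(4) by (simp_all add: valid_iff)
  have oo: "set (Xs @ Xs') \<subseteq> ob C" "set (Ys @ Ys') \<subseteq> ob C" "set (Xs' @ Xs) \<subseteq> ob C" "set (Ys' @ Ys) \<subseteq> ob C"
    using F G by auto
  have fg: "sigma_tens C f g = mk (Xs @ Xs') (Ys @ Ys') (?pY, plsm C a b, ?pX)"
    unfolding F(1) G(1) by (rule tens_E[OF F(2,3) G(2,3) F(4) G(4)]) simp_all
  have vfg: "valid C (Xs @ Xs') (Ys @ Ys') (?pY, plsm C a b, ?pX)"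
    by (rule tens_E_valid[OF F(2,3) G(2,3) F(4) G(4)]) simp_all
  have gf: "sigma_tens C g f = mk (Xs' @ Xs) (Ys' @ Ys) (?qY, plsm C b a, ?qX)"
    unfolding F(1) G(1) by (rule tens_E[OF G(2,3) F(2,3) G(4) F(4)]) simp_all
  have vgf: "valid C (Xs' @ Xs) (Ys' @ Ys) (?qY, plsm C b a, ?qX)"
    by (rule tens_E_valid[OF G(2,3) F(2,3) G(4) F(4)]) simp_all
  have iY: "injm (?n + ?n') ?pY" using injm_psum[OF injm_Ek injm_Ek Ek_disj, of 0 1] by simp
  have iX: "injm (?m + ?m') ?pX" using injm_psum[OF injm_Ek injm_Ek Ek_disj, of 0 1] by simp
  have iqX: "injm (?m' + ?m) ?qX" using injm_psum[OF injm_Ek injm_Ek Ek_disj, of 1 0] by simp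
  have SY: "sigma_tau C Ys Ys' = tau_of C Ys Ys' ?pY"
    unfolding sigma_tau_def by (rule tau_wd[OF F(3) G(3) injm_phi0 iY])
  have SX: "sigma_tau C Xs Xs' = tau_of C Xs Xs' ?pX"
    unfolding sigma_tau_def by (rule tau_wd[OF F(2) G(2) injm_phi0 iX])
  note vSY = tau_valid[OF F(3) G(3) iY] and vSX = tau_valid[OF F(2) G(2) iX]
  have hab: "plsm C a b \<in> hom C (push C ?pX (Xs @ Xs')) (push C ?pY (Ys @ Ys'))"
    using vfg by (simp add: valid_iff)
  have hba: "plsm C b a \<in> hom C (push C ?qX (Xs' @ Xs)) (push C ?qY (Ys' @ Ys))"
    using vgf by (simp add: valid_iff)
  have d1: "dsj C (push C (Ek 1) Xs') (push C (Ek 0) Xs)" using push_dsj[OF G(2) F(2) injm_Ek injm_Ek Ek_disj] by simp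
  have d2: "dsj C (push C (Ek 1) Ys') (push C (Ek 0) Ys)" using push_dsj[OF G(3) F(3) injm_Ek injm_Ek Ek_disj] by simp
  have comm: "plsm C b a = plsm C a b" by (rule plsm_comm[OF va(2) va(1) d1 d2])
  have tL: "tcomp (Ys @ Ys') (phibar ?n ?n' ?pY, idn C (push C ?pY (Ys @ Ys')), ?pY) (?pY, plsm C a b, ?pX)
      = (phibar ?n ?n' ?pY, plsm C a b, ?pX)"
    unfolding tcomp_def using hab oo iY by (simp add: pcat hom_def)
  have pQ: "push C ?qX (Xs' @ Xs) = push C ?pX (Xs @ Xs')"
  proof -
    have "push C ?qX (Xs' @ Xs) = push C (phibar ?m ?m' ?pX) (Xs' @ Xs)"
      by (rule push_cong) (simp add: phibar_psum_swap)
    also have "\<dots> = push C ?pX (Xs @ Xs')" by (rule push_phibar[OF F(2) G(2) iX])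
    finally show ?thesis .
  qed
  have pmx: "pushm C ?qX (phibar ?m ?m' ?pX) (Xs' @ Xs) = idn C (push C ?pX (Xs @ Xs'))"
  proof -
    have "pushm C ?qX (phibar ?m ?m' ?pX) (Xs' @ Xs) = pushm C ?qX ?qX (Xs' @ Xs)"
      by (rule pushm_cong) (simp_all add: phibar_psum_swap)
    also have "\<dots> = idn C (push C ?qX (Xs' @ Xs))" using pushm_id[OF oo(3)] iqX by simp
    finally show ?thesis using pQ by simp
  qed
  have tR: "tcomp (Xs' @ Xs) (?qY, plsm C b a, ?qX) (phibar ?m ?m' ?pX, idn C (push C ?pX (Xs @ Xs')), ?pX)
      = (?qY, plsm C a b, ?pX)"
    unfolding tcomp_def using pmx hba pQ oo iX comm push_ob[OF oo(1)] by (simp add: pcat hom_def)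
  have vR: "valid C (Xs @ Xs') (Ys' @ Ys) (?qY, plsm C a b, ?pX)"
    using tcomp_valid[OF oo(1) oo(3) oo(4) vSX[unfolded tau_of_mk] vgf] tR by simp
  have L: "cmp SC (sigma_tau C (cd SC f) (cd SC g)) (sigma_tens C f g) = mk (Xs @ Xs') (Ys' @ Ys) (phibar ?n ?n' ?pY, plsm C a b, ?pX)"
    unfolding F(1) G(1) SC_dm_mk fg[unfolded F(1) G(1)] SY tau_of_mk cmp_mk[OF oo(1,2,4) vfg vSY] tL ..
  have R: "cmp SC (sigma_tens C g f) (sigma_tau C (dm SC f) (dm SC g)) = mk (Xs @ Xs') (Ys' @ Ys) (?qY, plsm C a b, ?pX)"
    unfolding F(1) G(1) SC_dm_mk gf[unfolded F(1) G(1)] SX tau_of_mk cmp_mk[OF oo(1,3,4) vSX vgf] tR ..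
  have "mk (Xs @ Xs') (Ys' @ Ys) (phibar ?n ?n' ?pY, plsm C a b, ?pX) = mk (Xs @ Xs') (Ys' @ Ys) (?qY, plsm C a b, ?pX)"
    by (rule mk_cong[OF oo(1,4) vR]) (simp_all add: phibar_psum_swap)
  then show ?thesis unfolding L R .
qed

lemma P_invol:
  assumes o: "set X \<subseteq> ob C" "set Y \<subseteq> ob C"
  shows "cmp SC (sigma_tau C Y X) (sigma_tau C X Y) = idn SC (X @ Y)"
proof -
  let ?m = "length X" and ?n = "length Y"
  let ?b = "phibar ?m ?n phi0"
  have ib: "injm (?n + ?m) ?b" using injm_phibar[OF injm_phi0] .
  have oo: "set (X @ Y) \<subseteq> ob C" "set (Y @ X) \<subseteq> ob C" using o by auto
  have S2: "sigma_tau C Y X = tau_of C Y X ?b"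
    unfolding sigma_tau_def by (rule tau_wd[OF o(2,1) injm_phi0 ib])
  note v1 = tau_valid[OF o injm_phi0] and v2 = tau_valid[OF o(2,1) ib]
  have pe: "push C ?b (Y @ X) = push C phi0 (X @ Y)" by (rule push_phibar[OF o injm_phi0])
  have ii: "injm (length (Y @ X)) ?b" using ib by simp
  have t: "tcomp (Y @ X) (phibar ?n ?m ?b, idn C (push C ?b (Y @ X)), ?b) (?b, idn C (push C phi0 (X @ Y)), phi0)
     = (phibar ?n ?m ?b, idn C (push C phi0 (X @ Y)), phi0)"
    unfolding tcomp_def using pe pushm_id[OF oo(2) ii] push_ob[OF oo(1) injm_phi0]
    by (simp add: pcat)
  have v3: "valid C (X @ Y) (X @ Y) (phi0, idn C (push C phi0 (X @ Y)), phi0)"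
    using injm_phi0 push_ob[OF oo(1) injm_phi0] by (simp add: valid_iff idn_hom)
  have "cmp SC (sigma_tau C Y X) (sigma_tau C X Y) = mk (X @ Y) (X @ Y) (phibar ?n ?m ?b, idn C (push C phi0 (X @ Y)), phi0)"
    unfolding S2 unfolding sigma_tau_def tau_of_mk cmp_mk[OF oo(1,2,1) v1 v2] t ..
  also have "\<dots> = mk (X @ Y) (X @ Y) (phi0, idn C (push C phi0 (X @ Y)), phi0)"
    by (rule mk_cong[OF oo(1,1) v3]) (simp_all add: phibar_phibar)
  also have "\<dots> = idn SC (X @ Y)" by (simp add: SC_simps)
  finally show ?thesis .
qed


lemma rng_phi0_disj: "S \<inter> T = {} \<Longrightarrow> rng phi0 S \<inter> rng phi0 T = {}"
  unfolding rng_def phi0_def by (auto simp: prod_encode_eq)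

lemma P_hex:
  assumes o: "set X \<subseteq> ob C" "set Y \<subseteq> ob C" "set Z \<subseteq> ob C"
  shows "sigma_tau C X (Y @ Z) =
    cmp SC (sigma_tens C (idn SC Y) (sigma_tau C X Z)) (sigma_tens C (sigma_tau C X Y) (idn SC Z))"
proof -
  let ?a = "length X" and ?b = "length Y" and ?c = "length Z"
  let ?p2 = "\<lambda>i. phi0 (i + (?a + ?b))"
  let ?p3 = "\<lambda>i. phi0 (i + ?a)"
  let ?p4 = "psum ?a phi0 ?p2"
  let ?chi = "psum (?b + ?a) (phibar ?a ?b phi0) ?p2"
  let ?P = "push C phi0 (X @ Y @ Z)"
  have i0: "\<And>m. injm m phi0" by (rule injm_phi0)
  have i2: "injm ?c ?p2" using injm_shift[OF injm_phi0[of "?a + ?b + ?c"], of "?a + ?b" ?c] by simp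
  have i3: "injm ?b ?p3" using injm_shift[OF injm_phi0[of "?a + ?b"], of ?a ?b] by simp
  have m0: "imm ?a phi0 = rng phi0 {..<?a}" "imm (?a + ?b) phi0 = rng phi0 {..<?a + ?b}" by (simp_all add: imm_rng)
  have m2: "imm ?c ?p2 = rng phi0 {?a + ?b..<?a + ?b + ?c}" by (simp add: imm_shift)
  have m3: "imm ?b ?p3 = rng phi0 {?a..<?a + ?b}" by (simp add: imm_shift)
  have d02: "imm ?a phi0 \<inter> imm ?c ?p2 = {}" unfolding m0 m2 by (rule rng_phi0_disj) auto
  have i4: "injm (?a + ?c) ?p4" by (rule injm_psum[OF i0 i2 d02])
  have m4: "imm (?a + ?c) ?p4 = imm ?a phi0 \<union> imm ?c ?p2" by (rule imm_psum)
  have oXY: "set (X @ Y) \<subseteq> ob C" "set (Y @ X) \<subseteq> ob C" "set (X @ Z) \<subseteq> ob C" "set (Z @ X) \<subseteq> ob C"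
    "set (X @ Y @ Z) \<subseteq> ob C" "set (Y @ X @ Z) \<subseteq> ob C" "set (Y @ Z @ X) \<subseteq> ob C" "set (Y @ Z) \<subseteq> ob C"
    using o by auto
  have SXY: "sigma_tau C X Y = mk (X @ Y) (Y @ X) (phibar ?a ?b phi0, idn C (push C phi0 (X @ Y)), phi0)"
    by (simp add: sigma_tau_def tau_of_mk)
  note vSXY = tau_valid[OF o(1,2) i0]
  have idZ: "idn SC Z = mk Z Z (?p2, idn C (push C ?p2 Z), ?p2)" by (rule idn_mk[OF o(3) i2])
  have vidZ: "valid C Z Z (?p2, idn C (push C ?p2 Z), ?p2)" using i2 o(3) by (simp add: valid_iff idn_hom push_ob)
  have dj1: "dj (X @ Y) (Y @ X) Z Z (phibar ?a ?b phi0, idn C (push C phi0 (X @ Y)), phi0) (?p2, idn C (push C ?p2 Z), ?p2)"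
  proof -
    have "imm (?a + ?b) phi0 \<inter> imm ?c ?p2 = {}" unfolding m0 m2 by (rule rng_phi0_disj) auto
    then show ?thesis using imm_phibar[of ?b ?a phi0] by (simp add: dj_def add.commute)
  qed
  have T1: "sigma_tens C (sigma_tau C X Y) (idn SC Z) = mk (X @ Y @ Z) (Y @ X @ Z)
      (?chi, plsm C (idn C (push C phi0 (X @ Y))) (idn C (push C ?p2 Z)), psum (?a + ?b) phi0 ?p2)"
    unfolding SXY idZ using tens_mk[OF oXY(1,2) o(3) o(3) vSXY vidZ dj1] by (simp add: ttens_def add.commute)
  have vT1: "valid C (X @ Y @ Z) (Y @ X @ Z)
      (?chi, plsm C (idn C (push C phi0 (X @ Y))) (idn C (push C ?p2 Z)), psum (?a + ?b) phi0 ?p2)"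
    using valid_ttens[OF oXY(1,2) o(3) o(3) vSXY vidZ dj1] by (simp add: ttens_def add.commute)
  have dd1: "dsj C (push C phi0 (X @ Y)) (push C ?p2 Z)"
    using push_dsj[OF oXY(1) o(3) _ i2, of phi0] dj1 i0 by (simp add: dj_def)
  have F1: "plsm C (idn C (push C phi0 (X @ Y))) (idn C (push C ?p2 Z)) = idn C ?P"
  proof -
    have "plsm C (idn C (push C phi0 (X @ Y))) (idn C (push C ?p2 Z)) = idn C (pls C (push C phi0 (X @ Y)) (push C ?p2 Z))"
      by (rule plsm_idn[OF push_ob[OF oXY(1) i0] push_ob[OF o(3) i2] dd1])
    also have "pls C (push C phi0 (X @ Y)) (push C ?p2 Z) = push C (psum (?a + ?b) phi0 ?p2) ((X @ Y) @ Z)"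
      using push_psum[OF oXY(1) o(3) _ i2, of phi0] dj1 i0 by (simp add: dj_def)
    also have "\<dots> = ?P" by (simp add: psum_shift_self)
    finally show ?thesis .
  qed
  have T1': "sigma_tens C (sigma_tau C X Y) (idn SC Z) = mk (X @ Y @ Z) (Y @ X @ Z) (?chi, idn C ?P, phi0)"
    using T1 F1 by (simp add: psum_shift_self)
  have vT1': "valid C (X @ Y @ Z) (Y @ X @ Z) (?chi, idn C ?P, phi0)"
    using vT1 F1 by (simp add: psum_shift_self)
  have pchi: "push C ?chi (Y @ X @ Z) = ?P"
    using vT1' push_ob[OF oXY(5) i0] idn_ar[of ?P] by (simp add: valid_iff hom_def)
  have idY: "idn SC Y = mk Y Y (?p3, idn C (push C ?p3 Y), ?p3)" by (rule idn_mk[OF o(2) i3])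
  have vidY: "valid C Y Y (?p3, idn C (push C ?p3 Y), ?p3)" using i3 o(2) by (simp add: valid_iff idn_hom push_ob)
  have SXZ: "sigma_tau C X Z = mk (X @ Z) (Z @ X) (phibar ?a ?c ?p4, idn C (push C ?p4 (X @ Z)), ?p4)"
    unfolding sigma_tau_def unfolding tau_wd[OF o(1,3) i0 i4] unfolding tau_of_mk ..
  note vSXZ = tau_valid[OF o(1,3) i4]
  have dj2: "dj Y Y (X @ Z) (Z @ X) (?p3, idn C (push C ?p3 Y), ?p3) (phibar ?a ?c ?p4, idn C (push C ?p4 (X @ Z)), ?p4)"
  proof -
    have "imm ?b ?p3 \<inter> imm (?a + ?c) ?p4 = {}" unfolding m4 m3 m0 m2 Int_Un_distrib
      by (intro Un_empty[THEN iffD2] conjI; rule rng_phi0_disj; auto)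
    then show ?thesis using imm_phibar[of ?c ?a ?p4] by (simp add: dj_def add.commute)
  qed
  have T2: "sigma_tens C (idn SC Y) (sigma_tau C X Z) = mk (Y @ X @ Z) (Y @ Z @ X)
      (psum ?b ?p3 (phibar ?a ?c ?p4), plsm C (idn C (push C ?p3 Y)) (idn C (push C ?p4 (X @ Z))), psum ?b ?p3 ?p4)"
    unfolding SXZ idY using tens_mk[OF o(2) o(2) oXY(3,4) vidY vSXZ dj2] by (simp add: ttens_def)
  have vT2: "valid C (Y @ X @ Z) (Y @ Z @ X)
      (psum ?b ?p3 (phibar ?a ?c ?p4), plsm C (idn C (push C ?p3 Y)) (idn C (push C ?p4 (X @ Z))), psum ?b ?p3 ?p4)"
    using valid_ttens[OF o(2) o(2) oXY(3,4) vidY vSXZ dj2] by (simp add: ttens_def)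
  have dd2: "dsj C (push C ?p3 Y) (push C ?p4 (X @ Z))"
    using push_dsj[OF o(2) oXY(3) i3 _, of ?p4] dj2 i4 by (simp add: dj_def)
  have e2: "psum ?b ?p3 ?p4 = ?chi" by (rule hex_e2)
  have F2: "plsm C (idn C (push C ?p3 Y)) (idn C (push C ?p4 (X @ Z))) = idn C ?P"
  proof -
    have "plsm C (idn C (push C ?p3 Y)) (idn C (push C ?p4 (X @ Z))) = idn C (pls C (push C ?p3 Y) (push C ?p4 (X @ Z)))"
      by (rule plsm_idn[OF push_ob[OF o(2) i3] push_ob[OF oXY(3)] dd2]) (use i4 in simp)
    also have "pls C (push C ?p3 Y) (push C ?p4 (X @ Z)) = push C (psum ?b ?p3 ?p4) (Y @ X @ Z)"
      using push_psum[OF o(2) oXY(3) i3 _, of ?p4] dj2 i4 by (simp add: dj_def)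
    also have "\<dots> = ?P" unfolding e2 by (rule pchi)
    finally show ?thesis .
  qed
  have T2': "sigma_tens C (idn SC Y) (sigma_tau C X Z) = mk (Y @ X @ Z) (Y @ Z @ X) (psum ?b ?p3 (phibar ?a ?c ?p4), idn C ?P, ?chi)"
    using T2 F2 e2 by simp
  have vT2': "valid C (Y @ X @ Z) (Y @ Z @ X) (psum ?b ?p3 (phibar ?a ?c ?p4), idn C ?P, ?chi)"
    using vT2 F2 e2 by simp
  have ichi: "injm (length (Y @ X @ Z)) ?chi" using vT1' by (simp add: valid_iff)
  have t: "tcomp (Y @ X @ Z) (psum ?b ?p3 (phibar ?a ?c ?p4), idn C ?P, ?chi) (?chi, idn C ?P, phi0)
      = (psum ?b ?p3 (phibar ?a ?c ?p4), idn C ?P, phi0)"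
    unfolding tcomp_def using pushm_id[OF oXY(6) ichi] pchi push_ob[OF oXY(5) i0] by (simp add: pcat)
  have R: "cmp SC (sigma_tens C (idn SC Y) (sigma_tau C X Z)) (sigma_tens C (sigma_tau C X Y) (idn SC Z)) =
     mk (X @ Y @ Z) (Y @ Z @ X) (psum ?b ?p3 (phibar ?a ?c ?p4), idn C ?P, phi0)"
    unfolding T1' T2' cmp_mk[OF oXY(5,6,7) vT1' vT2'] t ..
  have L: "sigma_tau C X (Y @ Z) = mk (X @ Y @ Z) (Y @ Z @ X) (phibar ?a (?b + ?c) phi0, idn C ?P, phi0)"
    by (simp add: sigma_tau_def tau_of_mk)
  have vL: "valid C (X @ Y @ Z) (Y @ Z @ X) (phibar ?a (?b + ?c) phi0, idn C ?P, phi0)"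
    using tau_valid[OF o(1) oXY(8) i0] by simp
  show ?thesis unfolding L R
    by (rule mk_cong[OF oXY(5,7) vL, symmetric]) (simp_all add: hex_h2)
qed

end

context ps begin

lemma ob_SC: "X \<in> ob SC \<longleftrightarrow> set X \<subseteq> ob C" by (simp add: SC_simps lists_eq_set)

theorem SC_perm: "is_permutative SC (@) (sigma_tens C) [] (sigma_tau C)"
proof -
  have l1: "is_cat SC" by (rule SC_cat)
  have l2: "\<forall>X\<in>ob SC. \<forall>Y\<in>ob SC. X @ Y \<in> ob SC" by (simp add: ob_SC)
  have l3: "\<forall>f\<in>ar SC. \<forall>g\<in>ar SC. sigma_tens C f g \<in> hom SC (dm SC f @ dm SC g) (cd SC f @ cd SC g)"
    using P_tens_hom by blast
  have l4: "\<forall>X\<in>ob SC. \<forall>Y\<in>ob SC. sigma_tens C (idn SC X) (idn SC Y) = idn SC (X @ Y)"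
    using P_tens_idn by (simp add: ob_SC)
  have l5: "\<forall>f\<in>ar SC. \<forall>g\<in>ar SC. \<forall>f'\<in>ar SC. \<forall>g'\<in>ar SC. dm SC f' = cd SC f \<longrightarrow> dm SC g' = cd SC g \<longrightarrow>
        sigma_tens C (cmp SC f' f) (cmp SC g' g) = cmp SC (sigma_tens C f' g') (sigma_tens C f g)"
    using P_interchange by blast
  have l6: "[] \<in> ob SC" by (simp add: ob_SC)
  have l7: "\<forall>X\<in>ob SC. [] @ X = X \<and> X @ [] = X" by simp
  have l8: "\<forall>f\<in>ar SC. sigma_tens C (idn SC []) f = f \<and> sigma_tens C f (idn SC []) = f"
    using P_unit by blast
  have l9: "\<forall>X\<in>ob SC. \<forall>Y\<in>ob SC. \<forall>Z\<in>ob SC. (X @ Y) @ Z = X @ (Y @ Z)" by simp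
  have l10: "\<forall>f\<in>ar SC. \<forall>g\<in>ar SC. \<forall>h\<in>ar SC. sigma_tens C (sigma_tens C f g) h = sigma_tens C f (sigma_tens C g h)"
    using P_assoc by blast
  have l11: "\<forall>X\<in>ob SC. \<forall>Y\<in>ob SC. sigma_tau C X Y \<in> hom SC (X @ Y) (Y @ X)"
    using P_tau_hom by (simp add: ob_SC)
  have l12: "\<forall>f\<in>ar SC. \<forall>g\<in>ar SC.
        cmp SC (sigma_tau C (cd SC f) (cd SC g)) (sigma_tens C f g) = cmp SC (sigma_tens C g f) (sigma_tau C (dm SC f) (dm SC g))"
    using P_nat by blast
  have l13: "\<forall>X\<in>ob SC. \<forall>Y\<in>ob SC. cmp SC (sigma_tau C Y X) (sigma_tau C X Y) = idn SC (X @ Y)"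
    using P_invol by (simp add: ob_SC)
  have l14: "\<forall>X\<in>ob SC. \<forall>Y\<in>ob SC. \<forall>Z\<in>ob SC.
        sigma_tau C X (Y @ Z) = cmp SC (sigma_tens C (idn SC Y) (sigma_tau C X Z)) (sigma_tens C (sigma_tau C X Y) (idn SC Z))"
    using P_hex by (simp add: ob_SC)
  have l15: "\<forall>X\<in>ob SC. sigma_tau C X [] = idn SC X"
    using P_tau_unit by (simp add: ob_SC)
  show ?thesis unfolding is_permutative_def
    apply (insert l1 l2 l3 l4 l5 l6 l7 l8 l9 l10 l11 l12 l13 l14 l15)
    apply (intro conjI)
    apply assumption+
    done
qed

theorem part1:
  "(\<forall>a\<in>ar SC. \<forall>b\<in>ar SC.
         tens_reps a b \<noteq> {} \<and> (\<forall>p\<in>tens_reps a b. tens_of C a b p = sigma_tens C a b)) \<and>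
   (\<forall>Xs\<in>lists (ob C). \<forall>Ys\<in>lists (ob C). \<forall>\<phi>. injm (length Xs + length Ys) \<phi> \<longrightarrow>
         tau_of C Xs Ys \<phi> = sigma_tau C Xs Ys) \<and>
   is_permutative SC (@) (sigma_tens C) [] (sigma_tau C)"
proof (intro conjI ballI allI impI)
  fix a b assume a: "a \<in> ar SC" and b: "b \<in> ar SC"
  obtain Xs Ys t where A: "a = mk Xs Ys t" "set Xs \<subseteq> ob C" "set Ys \<subseteq> ob C" "valid C Xs Ys t"
    using a unfolding SC_ar by blast
  obtain Xs' Ys' s where B: "b = mk Xs' Ys' s" "set Xs' \<subseteq> ob C" "set Ys' \<subseteq> ob C" "valid C Xs' Ys' s"
    using b unfolding SC_ar by blast
  show "tens_reps a b \<noteq> {}" unfolding A(1) B(1) using tens_reps_ne[OF A(2,3) B(2,3) A(4) B(4)] by blast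
  fix p assume "p \<in> tens_reps a b"
  then show "tens_of C a b p = sigma_tens C a b"
    unfolding A(1) B(1) using sigma_tens_any[OF A(2,3) B(2,3) A(4) B(4)] by simp
next
  fix Xs Ys \<phi> assume "Xs \<in> lists (ob C)" "Ys \<in> lists (ob C)" "injm (length Xs + length Ys) \<phi>"
  then show "tau_of C Xs Ys \<phi> = sigma_tau C Xs Ys"
    unfolding sigma_tau_def using tau_wd[of Xs Ys \<phi> phi0] injm_phi0 by (simp add: lists_eq_set)
next
  show "is_permutative SC (@) (sigma_tens C) [] (sigma_tau C)" by (rule SC_perm)
qed

lemma part3a: "a \<in> ar SC \<Longrightarrow> sigma_fun C id id a = a"
proof -
  assume a: "a \<in> ar SC"
  obtain Xs Ys t where A: "a = mk Xs Ys t" "set Xs \<subseteq> ob C" "set Ys \<subseteq> ob C" "valid C Xs Ys t"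
    using a unfolding SC_ar by blast
  obtain \<psi> f \<phi> where r: "rep a = (\<psi>, f, \<phi>)" by (cases "rep a")
  have m: "(\<psi>, f, \<phi>) \<in> cls C Xs Ys t" using rep_mk[OF A(2,3,4)] r A(1) by simp
  have "sigma_fun C id id a = (Xs, Ys, cls C Xs Ys (\<psi>, f, \<phi>))"
    unfolding sigma_fun_def r using A(1) by (simp add: mk_fst)
  also have "\<dots> = a" using mem_cls_eq[OF A(2,3,4) m] A(1) by (simp add: mk_def)
  finally show ?thesis .
qed

end

locale psm = C: ps C + D: ps D
  for C :: "('o,'m,'z) psc_scheme" and D :: "('p,'n,'y) psc_scheme" +
  fixes Fo :: "'o \<Rightarrow> 'p" and Fm :: "'m \<Rightarrow> 'n"
  assumes M: "is_psmor C D Fo Fm"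
begin

lemmas Mc = M[unfolded is_psmor_def]
lemmas m1 = Mc[THEN conjunct1]
lemmas m2 = Mc[THEN conjunct2, THEN conjunct1]
lemmas m4 = Mc[THEN conjunct2, THEN conjunct2, THEN conjunct2, THEN conjunct1]
lemmas m5 = Mc[THEN conjunct2, THEN conjunct2, THEN conjunct2, THEN conjunct2, THEN conjunct1]
lemmas m6 = Mc[THEN conjunct2, THEN conjunct2, THEN conjunct2, THEN conjunct2, THEN conjunct2, THEN conjunct1]
lemmas m7 = Mc[THEN conjunct2, THEN conjunct2, THEN conjunct2, THEN conjunct2, THEN conjunct2, THEN conjunct2]
lemmas Fc = m1[unfolded is_functor_def]
lemmas f1 = Fc[THEN conjunct1]
lemmas f2 = Fc[THEN conjunct2, THEN conjunct1]
lemmas f3 = Fc[THEN conjunct2, THEN conjunct2, THEN conjunct1]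
lemmas f4 = Fc[THEN conjunct2, THEN conjunct2, THEN conjunct2]

lemma F_ob: "X \<in> ob C \<Longrightarrow> Fo X \<in> ob D" using f1 by blast
lemma F_hom: "f \<in> hom C X Y \<Longrightarrow> Fm f \<in> hom D (Fo X) (Fo Y)" using f2 unfolding hom_def by blast
lemma F_ar: "f \<in> ar C \<Longrightarrow> Fm f \<in> ar D" "f \<in> ar C \<Longrightarrow> dm D (Fm f) = Fo (dm C f)" "f \<in> ar C \<Longrightarrow> cd D (Fm f) = Fo (cd C f)"
  using f2 unfolding hom_def by blast+
lemma F_idn: "X \<in> ob C \<Longrightarrow> Fm (idn C X) = idn D (Fo X)" using f3 by blast
lemma F_cmp: "f \<in> ar C \<Longrightarrow> g \<in> ar C \<Longrightarrow> dm C g = cd C f \<Longrightarrow> Fm (cmp C g f) = cmp D (Fm g) (Fm f)"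
  using f4 by blast
lemma F_act: "inj u \<Longrightarrow> X \<in> ob C \<Longrightarrow> Fo (act C u X) = act D u (Fo X)"
  using Mc[THEN conjunct2, THEN conjunct1] unfolding injs_def by blast
lemma F_trn: "inj u \<Longrightarrow> inj v \<Longrightarrow> X \<in> ob C \<Longrightarrow> Fm (trn C v u X) = trn D v u (Fo X)"
  using Mc[THEN conjunct2, THEN conjunct2, THEN conjunct2, THEN conjunct1] unfolding injs_def by blast
lemma F_zer: "Fo (zer C) = zer D"
  by (rule Mc[THEN conjunct2, THEN conjunct2, THEN conjunct2, THEN conjunct2, THEN conjunct1])
lemma F_pls: "X \<in> ob C \<Longrightarrow> Y \<in> ob C \<Longrightarrow> dsj C X Y \<Longrightarrow> Fo (pls C X Y) = pls D (Fo X) (Fo Y)"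
  using m6 by blast
lemma F_plsm: "f \<in> hom C X Y \<Longrightarrow> g \<in> hom C X' Y' \<Longrightarrow> dsj C X X' \<Longrightarrow> dsj C Y Y' \<Longrightarrow>
   Fm (plsm C f g) = plsm D (Fm f) (Fm g)"
  using m7 unfolding hom_def dsjm_def by blast

end

context psm begin

lemma map_ob: "set Xs \<subseteq> ob C \<Longrightarrow> set (map Fo Xs) \<subseteq> ob D" using F_ob by auto

lemma F_push: "set Xs \<subseteq> ob C \<Longrightarrow> injm (length Xs) \<phi> \<Longrightarrow> Fo (push C \<phi> Xs) = push D \<phi> (map Fo Xs)"
proof (induction Xs arbitrary: \<phi>)
  case Nil
  then show ?case by (simp add: push_Nil F_zer)
next
  case (Cons X Xs)
  have i: "inj (\<phi> 0)" "injm (length Xs) (\<lambda>i. \<phi> (Suc i))"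
    using injm_Suc[of "length Xs" \<phi>] Cons.prems by auto
  have d: "dsj C (act C (\<phi> 0) X) (push C (\<lambda>i. \<phi> (Suc i)) Xs)" using C.cons_dsj Cons.prems by auto
  have o: "act C (\<phi> 0) X \<in> ob C" "push C (\<lambda>i. \<phi> (Suc i)) Xs \<in> ob C"
    using C.act_ob C.push_ob i Cons.prems by auto
  show ?case using Cons.IH[of "\<lambda>i. \<phi> (Suc i)"] i Cons.prems
    by (simp add: push_Cons F_pls[OF o d] F_act)
qed

lemma F_pushm: "set Xs \<subseteq> ob C \<Longrightarrow> injm (length Xs) \<phi> \<Longrightarrow> injm (length Xs) \<phi>' \<Longrightarrow>
   Fm (pushm C \<phi>' \<phi> Xs) = pushm D \<phi>' \<phi> (map Fo Xs)"
proof (induction Xs arbitrary: \<phi> \<phi>')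
  case Nil
  then show ?case by (simp add: pushm_Nil F_zer F_idn C.zer_ob)
next
  case (Cons X Xs)
  have i: "inj (\<phi> 0)" "injm (length Xs) (\<lambda>i. \<phi> (Suc i))"
    using injm_Suc[of "length Xs" \<phi>] Cons.prems by auto
  have i': "inj (\<phi>' 0)" "injm (length Xs) (\<lambda>i. \<phi>' (Suc i))"
    using injm_Suc[of "length Xs" \<phi>'] Cons.prems by auto
  have t: "trn C (\<phi>' 0) (\<phi> 0) X \<in> hom C (act C (\<phi> 0) X) (act C (\<phi>' 0) X)"
    using C.trn_hom i i' Cons.prems by auto
  have r: "pushm C (\<lambda>i. \<phi>' (Suc i)) (\<lambda>i. \<phi> (Suc i)) Xs \<in>
     hom C (push C (\<lambda>i. \<phi> (Suc i)) Xs) (push C (\<lambda>i. \<phi>' (Suc i)) Xs)"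
    using C.pushm_hom i i' Cons.prems by auto
  have d: "dsj C (act C (\<phi> 0) X) (push C (\<lambda>i. \<phi> (Suc i)) Xs)"
    "dsj C (act C (\<phi>' 0) X) (push C (\<lambda>i. \<phi>' (Suc i)) Xs)"
    using C.cons_dsj Cons.prems by auto
  show ?case using Cons.IH[of "\<lambda>i. \<phi> (Suc i)" "\<lambda>i. \<phi>' (Suc i)"] i i' Cons.prems
    by (simp add: pushm_Cons F_plsm[OF t r d] F_trn)
qed

definition Fmap :: "'m triple \<Rightarrow> 'n triple" where
  "Fmap t = (case t of (\<psi>, f, \<phi>) \<Rightarrow> (\<psi>, Fm f, \<phi>))"

lemma Fmap_simp: "Fmap (\<psi>, f, \<phi>) = (\<psi>, Fm f, \<phi>)" by (simp add: Fmap_def)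

lemma valid_map: "set Xs \<subseteq> ob C \<Longrightarrow> set Ys \<subseteq> ob C \<Longrightarrow> valid C Xs Ys t \<Longrightarrow>
    valid D (map Fo Xs) (map Fo Ys) (Fmap t)"
  by (cases t) (auto simp: C.valid_iff D.valid_iff Fmap_def F_push[symmetric] F_hom)

lemma srel_map: "set Xs \<subseteq> ob C \<Longrightarrow> set Ys \<subseteq> ob C \<Longrightarrow> valid C Xs Ys t \<Longrightarrow> valid C Xs Ys t' \<Longrightarrow>
    srel C Xs Ys t t' \<Longrightarrow> srel D (map Fo Xs) (map Fo Ys) (Fmap t) (Fmap t')"
proof -
  assume o: "set Xs \<subseteq> ob C" "set Ys \<subseteq> ob C" and v: "valid C Xs Ys t" "valid C Xs Ys t'" and s: "srel C Xs Ys t t'"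
  obtain \<psi> f \<phi> where t: "t = (\<psi>, f, \<phi>)" by (cases t)
  obtain \<psi>' f' \<phi>' where t': "t' = (\<psi>', f', \<phi>')" by (cases t')
  have a: "injm (length Xs) \<phi>" "injm (length Ys) \<psi>" "f \<in> ar C" "dm C f = push C \<phi> Xs" "cd C f = push C \<psi> Ys"
    "injm (length Xs) \<phi>'" "injm (length Ys) \<psi>'"
    using v t t' by (auto simp: C.valid_iff hom_def)
  have e: "f' = cmp C (pushm C \<psi>' \<psi> Ys) (cmp C f (pushm C \<phi> \<phi>' Xs))" using s t t' by (simp add: C.srel_iff)
  have "Fm f' = cmp D (pushm D \<psi>' \<psi> (map Fo Ys)) (cmp D (Fm f) (pushm D \<phi> \<phi>' (map Fo Xs)))"
    unfolding e using a o
    by (simp add: F_cmp C.pcat F_pushm)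
  then show ?thesis using t t' by (simp add: D.srel_iff Fmap_def)
qed

lemma sigma_fun_rep: "a \<in> ar C.SC \<Longrightarrow>
   sigma_fun D Fo Fm a = D.mk (map Fo (fst a)) (map Fo (fst (snd a))) (Fmap (rep a))"
  by (cases "rep a") (simp add: sigma_fun_def D.mk_def Fmap_def)

lemma sigma_fun_mk: "set Xs \<subseteq> ob C \<Longrightarrow> set Ys \<subseteq> ob C \<Longrightarrow> valid C Xs Ys t \<Longrightarrow>
   sigma_fun D Fo Fm (C.mk Xs Ys t) = D.mk (map Fo Xs) (map Fo Ys) (Fmap t)"
proof -
  assume o: "set Xs \<subseteq> ob C" "set Ys \<subseteq> ob C" and v: "valid C Xs Ys t"
  have m: "rep (C.mk Xs Ys t) \<in> cls C Xs Ys t" by (rule C.rep_mk[OF o v])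
  then have vr: "valid C Xs Ys (rep (C.mk Xs Ys t))" "srel C Xs Ys t (rep (C.mk Xs Ys t))" by (simp_all add: C.cls_mem)
  have "sigma_fun D Fo Fm (C.mk Xs Ys t) = D.mk (map Fo Xs) (map Fo Ys) (Fmap (rep (C.mk Xs Ys t)))"
    using sigma_fun_rep[OF C.mk_ar[OF o v]] by (simp add: C.mk_fst)
  also have "\<dots> = D.mk (map Fo Xs) (map Fo Ys) (Fmap t)"
    by (rule D.mk_eq[OF map_ob[OF o(1)] map_ob[OF o(2)] valid_map[OF o vr(1)] valid_map[OF o v]
        D.srel_sym[OF map_ob[OF o(1)] map_ob[OF o(2)] valid_map[OF o v] valid_map[OF o vr(1)] srel_map[OF o v vr(1) vr(2)]]])
  finally show ?thesis .
qed

lemma part2a: "a \<in> ar C.SC \<Longrightarrow> t \<in> snd (snd a) \<Longrightarrow> (case t of (\<psi>, f, \<phi>) \<Rightarrow>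
         cls D (map Fo (fst a)) (map Fo (fst (snd a))) (\<psi>, Fm f, \<phi>) = snd (snd (sigma_fun D Fo Fm a)))"
proof -
  assume a: "a \<in> ar C.SC" and t: "t \<in> snd (snd a)"
  obtain Xs Ys t0 where A: "a = C.mk Xs Ys t0" "set Xs \<subseteq> ob C" "set Ys \<subseteq> ob C" "valid C Xs Ys t0"
    using a unfolding C.SC_ar by blast
  have m: "t \<in> cls C Xs Ys t0" using t A(1) by (simp add: C.mk_fst)
  have vt: "valid C Xs Ys t" using m by (simp add: C.cls_mem)
  have "a = C.mk Xs Ys t" using C.mem_cls_eq[OF A(2,3,4) m] A(1) by (simp add: C.mk_def)
  then have "sigma_fun D Fo Fm a = D.mk (map Fo Xs) (map Fo Ys) (Fmap t)" using sigma_fun_mk[OF A(2,3) vt] by simp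
  then show ?thesis using A(1) by (cases t) (simp add: D.mk_fst C.mk_fst Fmap_def)
qed

end


context psm begin

lemma Fmap_tcomp:
  assumes o: "set Xs \<subseteq> ob C" "set Ys \<subseteq> ob C" "set Zs \<subseteq> ob C"
    and v: "valid C Xs Ys t" "valid C Ys Zs s"
  shows "Fmap (C.tcomp Ys s t) = D.tcomp (map Fo Ys) (Fmap s) (Fmap t)"
proof -
  obtain \<psi> f \<phi> where t: "t = (\<psi>, f, \<phi>)" by (cases t)
  obtain \<rho> g \<theta> where s: "s = (\<rho>, g, \<theta>)" by (cases s)
  have a: "injm (length Xs) \<phi>" "injm (length Ys) \<psi>" "f \<in> ar C" "dm C f = push C \<phi> Xs" "cd C f = push C \<psi> Ys"
    "injm (length Ys) \<theta>" "injm (length Zs) \<rho>" "g \<in> ar C" "dm C g = push C \<theta> Ys" "cd C g = push C \<rho> Zs"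
    using v t s by (auto simp: C.valid_iff hom_def)
  show ?thesis unfolding t s C.tcomp_def D.tcomp_def Fmap_def using a o
    by (simp add: F_cmp C.pcat F_pushm)
qed

lemma SF_functor: "is_functor C.SC D.SC (map Fo) (sigma_fun D Fo Fm)"
  unfolding is_functor_def
proof (intro conjI ballI impI)
  fix X assume "X \<in> ob C.SC"
  then show "map Fo X \<in> ob D.SC" using map_ob by (simp add: C.ob_SC D.ob_SC)
next
  fix f assume f: "f \<in> ar C.SC"
  obtain Xs Ys t where A: "f = C.mk Xs Ys t" "set Xs \<subseteq> ob C" "set Ys \<subseteq> ob C" "valid C Xs Ys t"
    using f unfolding C.SC_ar by blast
  show "sigma_fun D Fo Fm f \<in> hom D.SC (map Fo (dm C.SC f)) (map Fo (cd C.SC f))"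
    unfolding A(1) sigma_fun_mk[OF A(2,3,4)] C.SC_dm_mk
    by (rule D.mk_hom[OF map_ob[OF A(2)] map_ob[OF A(3)] valid_map[OF A(2,3,4)]])
next
  fix X assume "X \<in> ob C.SC"
  then have o: "set X \<subseteq> ob C" by (simp add: C.ob_SC)
  have v: "valid C X X (phi0, idn C (push C phi0 X), phi0)"
    using o C.injm_phi0 by (simp add: C.valid_iff C.idn_hom C.push_ob)
  show "sigma_fun D Fo Fm (idn C.SC X) = idn D.SC (map Fo X)"
    unfolding C.SC_simps(4) sigma_fun_mk[OF o o v] D.SC_simps(4)
    using o C.injm_phi0 by (simp add: Fmap_def F_idn C.push_ob F_push)
next
  fix f g assume f: "f \<in> ar C.SC" and g: "g \<in> ar C.SC" and fg: "dm C.SC g = cd C.SC f"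
  obtain Xs Ys t where F: "f = C.mk Xs Ys t" "set Xs \<subseteq> ob C" "set Ys \<subseteq> ob C" "valid C Xs Ys t"
    using f unfolding C.SC_ar by blast
  obtain Ys' Zs s where G: "g = C.mk Ys' Zs s" "set Ys' \<subseteq> ob C" "set Zs \<subseteq> ob C" "valid C Ys' Zs s"
    using g unfolding C.SC_ar by blast
  have Y: "Ys' = Ys" using fg F G by (simp add: C.SC_dm_mk)
  note G = G[unfolded Y]
  show "sigma_fun D Fo Fm (cmp C.SC g f) = cmp D.SC (sigma_fun D Fo Fm g) (sigma_fun D Fo Fm f)"
    unfolding F(1) G(1) C.cmp_mk[OF F(2,3) G(3) F(4) G(4)]
      sigma_fun_mk[OF F(2) G(3) C.tcomp_valid[OF F(2,3) G(3) F(4) G(4)]]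
      sigma_fun_mk[OF F(2,3,4)] sigma_fun_mk[OF G(2,3,4)]
      D.cmp_mk[OF map_ob[OF F(2)] map_ob[OF F(3)] map_ob[OF G(3)] valid_map[OF F(2,3,4)] valid_map[OF G(2,3,4)]]
      Fmap_tcomp[OF F(2,3) G(3) F(4) G(4)] ..
qed

lemma SF_tens: "f \<in> ar C.SC \<Longrightarrow> g \<in> ar C.SC \<Longrightarrow>
   sigma_fun D Fo Fm (sigma_tens C f g) = sigma_tens D (sigma_fun D Fo Fm f) (sigma_fun D Fo Fm g)"
proof -
  assume f: "f \<in> ar C.SC" and g: "g \<in> ar C.SC"
  obtain Xs Ys a where F: "f = C.mk Xs Ys (Ek 0, a, Ek 0)" "set Xs \<subseteq> ob C" "set Ys \<subseteq> ob C" "valid C Xs Ys (Ek 0, a, Ek 0)"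
    using C.SC_ar_rep[OF f injm_Ek injm_Ek] .
  obtain Xs' Ys' b where G: "g = C.mk Xs' Ys' (Ek 1, b, Ek 1)" "set Xs' \<subseteq> ob C" "set Ys' \<subseteq> ob C" "valid C Xs' Ys' (Ek 1, b, Ek 1)"
    using C.SC_ar_rep[OF g injm_Ek injm_Ek] .
  have va: "a \<in> hom C (push C (Ek 0) Xs) (push C (Ek 0) Ys)" "b \<in> hom C (push C (Ek 1) Xs') (push C (Ek 1) Ys')"
    using F(4) G(4) by (simp_all add: C.valid_iff)
  have d1: "dsj C (push C (Ek 0) Xs) (push C (Ek 1) Xs')" using C.push_dsj[OF F(2) G(2) injm_Ek injm_Ek Ek_disj] by simp
  have d2: "dsj C (push C (Ek 0) Ys) (push C (Ek 1) Ys')" using C.push_dsj[OF F(3) G(3) injm_Ek injm_Ek Ek_disj] by simp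
  have oo: "set (Xs @ Xs') \<subseteq> ob C" "set (Ys @ Ys') \<subseteq> ob C" using F G by auto
  have t: "sigma_tens C f g = C.mk (Xs @ Xs') (Ys @ Ys') (psum (length Ys) (Ek 0) (Ek 1), plsm C a b, psum (length Xs) (Ek 0) (Ek 1))"
    unfolding F(1) G(1) by (rule C.tens_E[OF F(2,3) G(2,3) F(4) G(4)]) simp_all
  have vt: "valid C (Xs @ Xs') (Ys @ Ys') (psum (length Ys) (Ek 0) (Ek 1), plsm C a b, psum (length Xs) (Ek 0) (Ek 1))"
    by (rule C.tens_E_valid[OF F(2,3) G(2,3) F(4) G(4)]) simp_all
  have vF: "valid D (map Fo Xs) (map Fo Ys) (Ek 0, Fm a, Ek 0)" using valid_map[OF F(2,3,4)] by (simp add: Fmap_def)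
  have vG: "valid D (map Fo Xs') (map Fo Ys') (Ek 1, Fm b, Ek 1)" using valid_map[OF G(2,3,4)] by (simp add: Fmap_def)
  have "sigma_tens D (sigma_fun D Fo Fm f) (sigma_fun D Fo Fm g) =
      sigma_tens D (D.mk (map Fo Xs) (map Fo Ys) (Ek 0, Fm a, Ek 0)) (D.mk (map Fo Xs') (map Fo Ys') (Ek 1, Fm b, Ek 1))"
    unfolding F(1) G(1) sigma_fun_mk[OF F(2,3,4)] sigma_fun_mk[OF G(2,3,4)] by (simp add: Fmap_def)
  also have "\<dots> = D.mk (map Fo Xs @ map Fo Xs') (map Fo Ys @ map Fo Ys')
      (psum (length (map Fo Ys)) (Ek 0) (Ek 1), plsm D (Fm a) (Fm b), psum (length (map Fo Xs)) (Ek 0) (Ek 1))"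
    by (rule D.tens_E[OF map_ob[OF F(2)] map_ob[OF F(3)] map_ob[OF G(2)] map_ob[OF G(3)] vF vG]) simp_all
  also have "\<dots> = sigma_fun D Fo Fm (sigma_tens C f g)"
    unfolding t sigma_fun_mk[OF oo vt] using F_plsm[OF va d1 d2] by (simp add: Fmap_def)
  finally show ?thesis by simp
qed

lemma SF_tau: "set X \<subseteq> ob C \<Longrightarrow> set Y \<subseteq> ob C \<Longrightarrow>
   sigma_fun D Fo Fm (sigma_tau C X Y) = sigma_tau D (map Fo X) (map Fo Y)"
proof -
  assume o: "set X \<subseteq> ob C" "set Y \<subseteq> ob C"
  have oo: "set (X @ Y) \<subseteq> ob C" "set (Y @ X) \<subseteq> ob C" using o by auto
  show ?thesis
    unfolding sigma_tau_def C.tau_of_mk D.tau_of_mk sigma_fun_mk[OF oo C.tau_valid[OF o C.injm_phi0]]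
    using oo C.injm_phi0 by (simp add: Fmap_def F_idn C.push_ob F_push)
qed

theorem part2: "is_strict_sym_monoidal
        C.SC (@) (sigma_tens C) [] (sigma_tau C)
        D.SC (@) (sigma_tens D) [] (sigma_tau D)
        (map Fo) (sigma_fun D Fo Fm)"
  unfolding is_strict_sym_monoidal_def
  using SF_functor SF_tens SF_tau by (simp add: C.ob_SC)

end

lemma part3b:
  assumes "psm C D Fo Fm" "psm D E Go Gm" "a \<in> ar (sigma_cat C)"
  shows "sigma_fun E (Go \<circ> Fo) (Gm \<circ> Fm) a = sigma_fun E Go Gm (sigma_fun D Fo Fm a)"
proof -
  interpret F: psm C D Fo Fm by (rule assms(1))
  interpret G: psm D E Go Gm by (rule assms(2))
  obtain Xs Ys t where A: "a = F.C.mk Xs Ys t" "set Xs \<subseteq> ob C" "set Ys \<subseteq> ob C" "valid C Xs Ys t"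
    using assms(3) unfolding F.C.SC_ar by blast
  obtain \<psi> f \<phi> where r: "rep a = (\<psi>, f, \<phi>)" by (cases "rep a")
  have m: "(\<psi>, f, \<phi>) \<in> cls C Xs Ys t" using F.C.rep_mk[OF A(2,3,4)] r A(1) by simp
  have vr: "valid C Xs Ys (\<psi>, f, \<phi>)" using m by (simp add: F.C.cls_mem)
  have vD: "valid D (map Fo Xs) (map Fo Ys) (\<psi>, Fm f, \<phi>)" using F.valid_map[OF A(2,3) vr] by (simp add: F.Fmap_def)
  have "sigma_fun D Fo Fm a = ps.mk D (map Fo Xs) (map Fo Ys) (\<psi>, Fm f, \<phi>)"
    unfolding sigma_fun_def r unfolding A(1) by (simp add: F.C.mk_fst F.D.mk_def)
  then have "sigma_fun E Go Gm (sigma_fun D Fo Fm a) = ps.mk E (map Go (map Fo Xs)) (map Go (map Fo Ys)) (\<psi>, Gm (Fm f), \<phi>)"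
    using G.sigma_fun_mk[OF F.map_ob[OF A(2)] F.map_ob[OF A(3)] vD] by (simp add: G.Fmap_def)
  moreover have "sigma_fun E (Go \<circ> Fo) (Gm \<circ> Fm) a = ps.mk E (map (Go \<circ> Fo) Xs) (map (Go \<circ> Fo) Ys) (\<psi>, Gm (Fm f), \<phi>)"
    unfolding sigma_fun_def r unfolding A(1) by (simp add: F.C.mk_fst G.D.mk_def)
  ultimately show ?thesis by simp
qed

theorem proposition2p7:
  fixes C :: "('o,'m) psc" and D :: "('p,'n) psc" and E :: "('q,'l) psc"
    and Fo :: "'o \<Rightarrow> 'p" and Fm :: "'m \<Rightarrow> 'n"
    and Go :: "'p \<Rightarrow> 'q" and Gm :: "'n \<Rightarrow> 'l"
  shows
   \<comment> \<open>(1) tensor and symmetry are well-defined and make Sigma(C) permutative with unit []\<close>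
   "(is_parsum C \<longrightarrow>
      (\<forall>a\<in>ar (sigma_cat C). \<forall>b\<in>ar (sigma_cat C).
         tens_reps a b \<noteq> {} \<and> (\<forall>p\<in>tens_reps a b. tens_of C a b p = sigma_tens C a b)) \<and>
      (\<forall>Xs\<in>lists (ob C). \<forall>Ys\<in>lists (ob C). \<forall>\<phi>. injm (length Xs + length Ys) \<phi> \<longrightarrow>
         tau_of C Xs Ys \<phi> = sigma_tau C Xs Ys) \<and>
      is_permutative (sigma_cat C) (@) (sigma_tens C) [] (sigma_tau C))
    \<and>
    \<comment> \<open>(2) Sigma(F) is well-defined and strict symmetric monoidal\<close>
    (is_parsum C \<and> is_parsum D \<and> is_psmor C D Fo Fm \<longrightarrow>
      (\<forall>a\<in>ar (sigma_cat C). \<forall>t\<in>snd (snd a). case t of (\<psi>, f, \<phi>) \<Rightarrow>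
         cls D (map Fo (fst a)) (map Fo (fst (snd a))) (\<psi>, Fm f, \<phi>) = snd (snd (sigma_fun D Fo Fm a))) \<and>
      is_strict_sym_monoidal
        (sigma_cat C) (@) (sigma_tens C) [] (sigma_tau C)
        (sigma_cat D) (@) (sigma_tens D) [] (sigma_tau D)
        (map Fo) (sigma_fun D Fo Fm))
    \<and>
    \<comment> \<open>(3) functoriality of Sigma : ParSumCat \<rightarrow> PermCat\<close>
    (is_parsum C \<longrightarrow>
      (\<forall>Xs\<in>ob (sigma_cat C). map id Xs = Xs) \<and>
      (\<forall>a\<in>ar (sigma_cat C). sigma_fun C id id a = a))
    \<and>
    (is_parsum C \<and> is_parsum D \<and> is_parsum E \<and> is_psmor C D Fo Fm \<and> is_psmor D E Go Gm \<longrightarrow>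
      (\<forall>Xs\<in>ob (sigma_cat C). map (Go \<circ> Fo) Xs = map Go (map Fo Xs)) \<and>
      (\<forall>a\<in>ar (sigma_cat C).
         sigma_fun E (Go \<circ> Fo) (Gm \<circ> Fm) a = sigma_fun E Go Gm (sigma_fun D Fo Fm a)))"
proof (intro conjI)
  show "is_parsum C \<longrightarrow>
      (\<forall>a\<in>ar (sigma_cat C). \<forall>b\<in>ar (sigma_cat C).
         tens_reps a b \<noteq> {} \<and> (\<forall>p\<in>tens_reps a b. tens_of C a b p = sigma_tens C a b)) \<and>
      (\<forall>Xs\<in>lists (ob C). \<forall>Ys\<in>lists (ob C). \<forall>\<phi>. injm (length Xs + length Ys) \<phi> \<longrightarrow>
         tau_of C Xs Ys \<phi> = sigma_tau C Xs Ys) \<and>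
      is_permutative (sigma_cat C) (@) (sigma_tens C) [] (sigma_tau C)"
    by (intro impI) (rule ps.part1[OF ps.intro])
next
  show "is_parsum C \<and> is_parsum D \<and> is_psmor C D Fo Fm \<longrightarrow>
      (\<forall>a\<in>ar (sigma_cat C). \<forall>t\<in>snd (snd a). case t of (\<psi>, f, \<phi>) \<Rightarrow>
         cls D (map Fo (fst a)) (map Fo (fst (snd a))) (\<psi>, Fm f, \<phi>) = snd (snd (sigma_fun D Fo Fm a))) \<and>
      is_strict_sym_monoidal
        (sigma_cat C) (@) (sigma_tens C) [] (sigma_tau C)
        (sigma_cat D) (@) (sigma_tens D) [] (sigma_tau D)
        (map Fo) (sigma_fun D Fo Fm)"
  proof (intro impI)
    assume h: "is_parsum C \<and> is_parsum D \<and> is_psmor C D Fo Fm"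
    have pm: "psm C D Fo Fm"
      using h by (intro psm.intro ps.intro psm_axioms.intro) simp_all
    show "(\<forall>a\<in>ar (sigma_cat C). \<forall>t\<in>snd (snd a). case t of (\<psi>, f, \<phi>) \<Rightarrow>
         cls D (map Fo (fst a)) (map Fo (fst (snd a))) (\<psi>, Fm f, \<phi>) = snd (snd (sigma_fun D Fo Fm a))) \<and>
      is_strict_sym_monoidal
        (sigma_cat C) (@) (sigma_tens C) [] (sigma_tau C)
        (sigma_cat D) (@) (sigma_tens D) [] (sigma_tau D)
        (map Fo) (sigma_fun D Fo Fm)"
    proof (intro conjI ballI)
      fix a t assume "a \<in> ar (sigma_cat C)" "t \<in> snd (snd a)"
      then show "case t of (\<psi>, f, \<phi>) \<Rightarrow>
         cls D (map Fo (fst a)) (map Fo (fst (snd a))) (\<psi>, Fm f, \<phi>) = snd (snd (sigma_fun D Fo Fm a))"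
        by (rule psm.part2a[OF pm])
    next
      show "is_strict_sym_monoidal
        (sigma_cat C) (@) (sigma_tens C) [] (sigma_tau C)
        (sigma_cat D) (@) (sigma_tens D) [] (sigma_tau D)
        (map Fo) (sigma_fun D Fo Fm)" by (rule psm.part2[OF pm])
    qed
  qed
next
  show "is_parsum C \<longrightarrow>
      (\<forall>Xs\<in>ob (sigma_cat C). map id Xs = Xs) \<and>
      (\<forall>a\<in>ar (sigma_cat C). sigma_fun C id id a = a)"
  proof (intro impI conjI ballI)
    fix Xs show "map id Xs = Xs" by simp
  next
    fix a assume "is_parsum C" "a \<in> ar (sigma_cat C)"
    then show "sigma_fun C id id a = a" by (rule ps.part3a[OF ps.intro])
  qed
next
  show "is_parsum C \<and> is_parsum D \<and> is_parsum E \<and> is_psmor C D Fo Fm \<and> is_psmor D E Go Gm \<longrightarrow>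
      (\<forall>Xs\<in>ob (sigma_cat C). map (Go \<circ> Fo) Xs = map Go (map Fo Xs)) \<and>
      (\<forall>a\<in>ar (sigma_cat C).
         sigma_fun E (Go \<circ> Fo) (Gm \<circ> Fm) a = sigma_fun E Go Gm (sigma_fun D Fo Fm a))"
  proof (intro impI conjI ballI)
    fix Xs show "map (Go \<circ> Fo) Xs = map Go (map Fo Xs)" by simp
  next
    fix a assume h: "is_parsum C \<and> is_parsum D \<and> is_parsum E \<and> is_psmor C D Fo Fm \<and> is_psmor D E Go Gm"
      and a: "a \<in> ar (sigma_cat C)"
    have pm1: "psm C D Fo Fm"
      using h by (intro psm.intro ps.intro psm_axioms.intro) simp_all
    have pm2: "psm D E Go Gm"
      using h by (intro psm.intro ps.intro psm_axioms.intro) simp_all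
    show "sigma_fun E (Go \<circ> Fo) (Gm \<circ> Fm) a = sigma_fun E Go Gm (sigma_fun D Fo Fm a)"
      by (rule part3b[OF pm1 pm2 a])
  qed
qed

end
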